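(* Let $\mathcal{H}$ be an $n$-dimensional complex Hilbert space and let $\mathcal{G}=\{U_1,\dots,U_m\}$ be a finite group of $m$ unitary matrices on $\mathcal{H}$ with $U_1=I$. Let $\rho=\phi\phi^*$ be a density operator on $\mathcal{H}$ (with $\phi$ a factor matrix), and let $\rho_i=U_i\rho U_i^*$, $i=1,\dots,m$, be a geometrically uniform (GU) state set with equal prior probabilities $1/m$, whose eigenvectors collectively span $\mathcal{H}$. Let $\phi_i=U_i\phi$ and let $\Phi$ be the matrix with block columns $\phi_1,\dots,\phi_m$. Then the least-squares measurement (LSM) is given by the operators $\Sigma_i=\mu_i\mu_i^*$ with $\mu_i=U_i\mu$, where $\mu=(\Phi\Phi^* )^{-1/2}\phi$. Moreover: (1) the LSM operators are GU with generating group $\mathcal{G}$, i.e. $\Sigma_i=U_i\Sigma_1U_i^*$ for all $i$; (2) the probability of correctly detecting each state using the LSM is the same, i.e. $\operatorname{tr}(\rho_i\Sigma_i)$ does not depend on $i$; (3) if $\mu^*\phi=\phi^*(\Phi\Phi^* )^{-1/2}\phi=\alpha I$ for some constant $\alpha$, then the LSM minimizes the probability of a detection error; in particular, if $\phi$ is a vector (so that every $\rho_i$ has rank one), the LSM minimizes the probability of a detection error. Finally, for an arbitrary generator $\phi$, there is an optimal measurement (one minimizing the probability of a detection error) which is GU with generating group $\mathcal{G}$: namely $\Pi_i=U_i\Pi U_i^*$, where $\Pi$ is a Hermitian operator maximizing $\operatorname{tr}(\rho\Pi)$ subject to $\Pi\ge 0$ and $\sum_{i=1}^m U_i\Pi 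U_i^*=I$.
   Context: A density operator is a positive semidefinite Hermitian operator of trace one; a factor of $\rho$ is any matrix $\phi$ with $\rho=\phi\phi^*$. A measurement is a collection of positive semidefinite Hermitian operators $\Pi_1,\dots,\Pi_m$ on $\mathcal{H}$ with $\sum_i\Pi_i=I$; with equal priors the probability of correct detection is $P_d=\frac1m\sum_i\operatorname{tr}(\rho_i\Pi_i)$, and the probability of a detection error is $1-P_d$. For general factors $\phi_i$ of $\rho_i$ and priors $p_i$, the least-squares measurement consists of $\Sigma_i=\mu_i\mu_i^*$ with $\mu_i=(\Psi\Psi^* )^{-1/2}\psi_i$, $\psi_i=\sqrt{p_i}\phi_i$, $\Psi$ the matrix of block columns $\psi_i$; the operators $\Sigma_i$ do not depend on the choice of factors. $(\cdot)^{-1/2}$ denotes the inverse of the positive Hermitian square root. $I$ in $\alpha I$ is the identity of size equal to the number of columns of $\phi$. *)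

theory Defs
  imports "Jordan_Normal_Form.Schur_Decomposition" "Jordan_Normal_Form.VS_Connect"
begin

definition trace_mat :: "complex mat \<Rightarrow> complex" where
  "trace_mat A = (\<Sum>i<dim_row A. A $$ (i,i))"

definition hermitian_mat :: "complex mat \<Rightarrow> bool" where
  "hermitian_mat A \<longleftrightarrow> square_mat A \<and> mat_adjoint A = A"

definition psd_mat :: "complex mat \<Rightarrow> bool" where
  "psd_mat A \<longleftrightarrow> hermitian_mat A \<and>
     (\<forall>v \<in> carrier_vec (dim_row A). 0 \<le> Re (conjugate v \<bullet> (A *\<^sub>v v)))"

definition unitary_mat :: "nat \<Rightarrow> complex mat \<Rightarrow> bool" where
  "unitary_mat n U \<longleftrightarrow> U \<in> carrier_mat n n \<and> mat_adjoint U * U = 1\<^sub>m n"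

definition mat_inv :: "complex mat \<Rightarrow> complex mat" where
  "mat_inv A = (THE B. B \<in> carrier_mat (dim_row A) (dim_row A) \<and>
                      A * B = 1\<^sub>m (dim_row A) \<and> B * A = 1\<^sub>m (dim_row A))"

definition psd_sqrt :: "complex mat \<Rightarrow> complex mat" where
  "psd_sqrt A = (THE B. B \<in> carrier_mat (dim_row A) (dim_row A) \<and> psd_mat B \<and> B * B = A)"

definition inv_sqrt :: "complex mat \<Rightarrow> complex mat" where
  "inv_sqrt A = mat_inv (psd_sqrt A)"

text \<open>the matrix whose block columns are the given n-row matrices (in order)\<close>
definition block_cols :: "nat \<Rightarrow> complex mat list \<Rightarrow> complex mat" where
  "block_cols n As = foldr (\<lambda>A B. four_block_mat A B (0\<^sub>m 0 (dim_col A)) (0\<^sub>m 0 (dim_col B)))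
                        As (0\<^sub>m n 0)"

definition msum :: "nat \<Rightarrow> complex mat list \<Rightarrow> complex mat" where
  "msum n Ms = foldr (+) Ms (0\<^sub>m n n)"

definition is_measurement :: "nat \<Rightarrow> complex mat list \<Rightarrow> bool" where
  "is_measurement n Ps \<longleftrightarrow> (\<forall>P \<in> set Ps. P \<in> carrier_mat n n \<and> psd_mat P) \<and> msum n Ps = 1\<^sub>m n"

definition detect_prob :: "real list \<Rightarrow> complex mat list \<Rightarrow> complex mat list \<Rightarrow> real" where
  "detect_prob ps rhos Ps = (\<Sum>i<length rhos. ps ! i * Re (trace_mat (rhos ! i * Ps ! i)))"

definition equal_priors :: "nat \<Rightarrow> real list" where
  "equal_priors m = replicate m (1 / real m)"

definition optimal_measurement :: "nat \<Rightarrow> real list \<Rightarrow> complex mat list \<Rightarrow> complex mat list \<Rightarrow> bool" where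
  "optimal_measurement n ps rhos Ps \<longleftrightarrow>
     length Ps = length rhos \<and> is_measurement n Ps \<and>
     (\<forall>Qs. length Qs = length rhos \<and> is_measurement n Qs \<longrightarrow>
           detect_prob ps rhos Qs \<le> detect_prob ps rhos Ps)"

definition lsm :: "nat \<Rightarrow> real list \<Rightarrow> complex mat list \<Rightarrow> complex mat list" where
  "lsm n ps phis =
     (let psis = map2 (\<lambda>p phi. complex_of_real (sqrt p) \<cdot>\<^sub>m phi) ps phis;
          Psi = block_cols n psis;
          S = inv_sqrt (Psi * mat_adjoint Psi)
      in map (\<lambda>psi. (S * psi) * mat_adjoint (S * psi)) psis)"

definition vspan :: "nat \<Rightarrow> complex vec set \<Rightarrow> complex vec set" where
  "vspan n S = LinearCombinations.module.span class_ring (module_vec TYPE(complex) n) S"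

definition eigvecs_nz :: "nat \<Rightarrow> complex mat \<Rightarrow> complex vec set" where
  "eigvecs_nz n A = {v \<in> carrier_vec n. v \<noteq> 0\<^sub>v n \<and> (\<exists>l. l \<noteq> 0 \<and> A *\<^sub>v v = l \<cdot>\<^sub>v v)}"

definition GU_feasible :: "nat \<Rightarrow> complex mat list \<Rightarrow> complex mat \<Rightarrow> bool" where
  "GU_feasible n Us P \<longleftrightarrow> P \<in> carrier_mat n n \<and> hermitian_mat P \<and> psd_mat P \<and>
      msum n (map (\<lambda>U. U * P * mat_adjoint U) Us) = 1\<^sub>m n"

definition GU_maximizer :: "nat \<Rightarrow> complex mat list \<Rightarrow> complex mat \<Rightarrow> complex mat \<Rightarrow> bool" where
  "GU_maximizer n Us rho P \<longleftrightarrow> GU_feasible n Us P \<and>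
      (\<forall>Q. GU_feasible n Us Q \<longrightarrow> Re (trace_mat (rho * Q)) \<le> Re (trace_mat (rho * P)))"

end

theory Submission
  imports Defs "HOL-Analysis.Function_Topology" "HOL-Analysis.Elementary_Metric_Spaces"
begin

lemma adj_dims[simp]: "dim_row (mat_adjoint A) = dim_col A" "dim_col (mat_adjoint A) = dim_row A"
  unfolding mat_adjoint_def by auto

lemma adj_index[simp]: "i < dim_col A \<Longrightarrow> j < dim_row A \<Longrightarrow> mat_adjoint A $$ (i,j) = cnj (A $$ (j,i))"
  unfolding mat_adjoint_def by (simp add: mat_of_rows_index)

lemma adj_carrier[simp]: "A \<in> carrier_mat a b \<Longrightarrow> mat_adjoint A \<in> carrier_mat b a"
  using carrier_matD[of A a b] by (intro carrier_matI) simp_all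

lemma adj_adj[simp]: "mat_adjoint (mat_adjoint A) = (A :: complex mat)"
  by (rule eq_matI, auto)

lemma adj_mult: assumes "A \<in> carrier_mat a b" "B \<in> carrier_mat b c"
  shows "mat_adjoint (A * B) = mat_adjoint B * mat_adjoint (A :: complex mat)"
  by (rule eq_matI, insert assms, auto simp: scalar_prod_def sum_conjugate[symmetric] ac_simps
     intro!: sum.cong)

lemma adj_one[simp]: "mat_adjoint (1\<^sub>m n) = (1\<^sub>m n :: complex mat)"
  by (rule eq_matI, auto)

lemma adj_zero[simp]: "mat_adjoint (0\<^sub>m a b) = (0\<^sub>m b a :: complex mat)"
  by (rule eq_matI, auto)

lemma adj_smult[simp]: "mat_adjoint (c \<cdot>\<^sub>m A) = cnj c \<cdot>\<^sub>m mat_adjoint (A :: complex mat)"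
  by (rule eq_matI, auto)

lemma adj_add: "A \<in> carrier_mat a b \<Longrightarrow> B \<in> carrier_mat a b \<Longrightarrow>
  mat_adjoint (A + B) = mat_adjoint A + mat_adjoint (B :: complex mat)"
  by (rule eq_matI, auto)

lemma adj_minus: "A \<in> carrier_mat a b \<Longrightarrow> B \<in> carrier_mat a b \<Longrightarrow>
  mat_adjoint (A - B) = mat_adjoint A - mat_adjoint (B :: complex mat)"
  by (rule eq_matI, auto)

lemma cnj_sum: "cnj (sum f A) = sum (\<lambda>x. cnj (f x)) A"
  by (induct A rule: infinite_finite_induct) auto

lemma sprod_adj: assumes A: "A \<in> carrier_mat a b" and x: "x \<in> carrier_vec a" and y: "y \<in> carrier_vec b"
  shows "conjugate x \<bullet> (A *\<^sub>v y) = conjugate (mat_adjoint A *\<^sub>v x) \<bullet> (y :: complex vec)"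
proof -
  have "conjugate x \<bullet> (A *\<^sub>v y) = (\<Sum>i<a. cnj (x $ i) * (\<Sum>k<b. A $$ (i,k) * y $ k))"
    using A x y by (auto simp: scalar_prod_def lessThan_atLeast0 intro!: sum.cong)
  also have "\<dots> = (\<Sum>k<b. (\<Sum>i<a. cnj (x $ i) * A $$ (i,k)) * y $ k)"
    by (simp add: sum_distrib_left sum_distrib_right ac_simps sum.swap[of _ "{..<a}"])
  also have "\<dots> = conjugate (mat_adjoint A *\<^sub>v x) \<bullet> y"
    using A x y by (auto simp: scalar_prod_def lessThan_atLeast0 cnj_sum ac_simps intro!: sum.cong)
  finally show ?thesis .
qed

lemma trace_mat_alt: "A \<in> carrier_mat n n \<Longrightarrow> trace_mat A = (\<Sum>i<n. A $$ (i,i))"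
  unfolding trace_mat_def by auto

lemma trace_comm: assumes "A \<in> carrier_mat a b" "B \<in> carrier_mat b a"
  shows "trace_mat (A * B) = trace_mat (B * (A :: complex mat))"
proof -
  have "trace_mat (A * B) = (\<Sum>i<a. \<Sum>k<b. A $$ (i,k) * B $$ (k,i))"
    using assms unfolding trace_mat_def by (auto simp: scalar_prod_def lessThan_atLeast0 intro!: sum.cong)
  also have "\<dots> = (\<Sum>k<b. \<Sum>i<a. B $$ (k,i) * A $$ (i,k))"
    by (subst sum.swap, simp add: ac_simps)
  also have "\<dots> = trace_mat (B * A)"
    using assms unfolding trace_mat_def by (auto simp: scalar_prod_def lessThan_atLeast0 intro!: sum.cong)
  finally show ?thesis .
qed

lemma trace_add: "A \<in> carrier_mat n n \<Longrightarrow> B \<in> carrier_mat n n \<Longrightarrow> trace_mat (A + B) = trace_mat A + trace_mat B"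
  unfolding trace_mat_def by (auto simp: sum.distrib)

lemma trace_smult: "A \<in> carrier_mat n n \<Longrightarrow> trace_mat (c \<cdot>\<^sub>m A) = c * trace_mat A"
  unfolding trace_mat_def by (auto simp: sum_distrib_left)

lemma trace_adj: "A \<in> carrier_mat n n \<Longrightarrow> trace_mat (mat_adjoint A) = cnj (trace_mat A)"
  unfolding trace_mat_def by (auto simp: cnj_sum)

lemma trace_one: "trace_mat (1\<^sub>m n) = of_nat n"
  unfolding trace_mat_def by auto

definition smat :: "nat \<Rightarrow> ('i \<Rightarrow> complex mat) \<Rightarrow> 'i set \<Rightarrow> complex mat" where
  "smat n F K = mat n n (\<lambda>(i,j). \<Sum>k\<in>K. F k $$ (i,j))"

lemma smat_carrier[simp]: "smat n F K \<in> carrier_mat n n"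
  and smat_dims[simp]: "dim_row (smat n F K) = n" "dim_col (smat n F K) = n"
  unfolding smat_def by auto

lemma smat_index[simp]: "i < n \<Longrightarrow> j < n \<Longrightarrow> smat n F K $$ (i,j) = (\<Sum>k\<in>K. F k $$ (i,j))"
  unfolding smat_def by auto

lemma msum_smat: "(\<forall>M\<in>set Ms. M \<in> carrier_mat n n) \<Longrightarrow> msum n Ms = smat n (\<lambda>k. Ms ! k) {..<length Ms}"
proof (induct Ms)
  case Nil
  then show ?case by (auto simp: msum_def intro!: eq_matI)
next
  case (Cons M Ms)
  then have IH: "msum n Ms = smat n (\<lambda>k. Ms ! k) {..<length Ms}" by auto
  have "msum n (M # Ms) = M + msum n Ms" unfolding msum_def by simp
  also have "\<dots> = smat n (\<lambda>k. (M # Ms) ! k) {..<length (M # Ms)}"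
    unfolding IH using Cons(2) by (intro eq_matI, auto simp del: sum.lessThan_Suc simp: sum.lessThan_Suc_shift)
  finally show ?case .
qed

lemma smat_mult_left: assumes A: "A \<in> carrier_mat n n" and F: "\<And>k. k \<in> K \<Longrightarrow> F k \<in> carrier_mat n n"
  and K: "finite K"
  shows "A * smat n F K = smat n (\<lambda>k. A * F k) K"
proof (rule eq_matI)
  have Fd[simp]: "k \<in> K \<Longrightarrow> dim_row (F k) = n" "k \<in> K \<Longrightarrow> dim_col (F k) = n" for k using F[of k] by auto
  fix i j assume ij: "i < dim_row (smat n (\<lambda>k. A * F k) K)" "j < dim_col (smat n (\<lambda>k. A * F k) K)"
  have "(A * smat n F K) $$ (i,j) = (\<Sum>l<n. A $$ (i,l) * (\<Sum>k\<in>K. F k $$ (l,j)))"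
    using A ij by (auto simp: scalar_prod_def lessThan_atLeast0 intro!: sum.cong)
  also have "\<dots> = (\<Sum>k\<in>K. \<Sum>l<n. A $$ (i,l) * F k $$ (l,j))"
    by (simp add: sum_distrib_left sum.swap[of _ K])
  also have "\<dots> = smat n (\<lambda>k. A * F k) K $$ (i,j)"
    using A ij F by (auto simp: scalar_prod_def lessThan_atLeast0 intro!: sum.cong)
  finally show "(A * smat n F K) $$ (i,j) = smat n (\<lambda>k. A * F k) K $$ (i,j)" .
qed (insert A, auto)

lemma smat_mult_right: assumes A: "A \<in> carrier_mat n n" and F: "\<And>k. k \<in> K \<Longrightarrow> F k \<in> carrier_mat n n"
  and K: "finite K"
  shows "smat n F K * A = smat n (\<lambda>k. F k * A) K"
proof (rule eq_matI)
  have Fd[simp]: "k \<in> K \<Longrightarrow> dim_row (F k) = n" "k \<in> K \<Longrightarrow> dim_col (F k) = n" for k using F[of k] by auto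
  fix i j assume ij: "i < dim_row (smat n (\<lambda>k. F k * A) K)" "j < dim_col (smat n (\<lambda>k. F k * A) K)"
  have "(smat n F K * A) $$ (i,j) = (\<Sum>l<n. (\<Sum>k\<in>K. F k $$ (i,l)) * A $$ (l,j))"
    using A ij by (auto simp: scalar_prod_def lessThan_atLeast0 intro!: sum.cong)
  also have "\<dots> = (\<Sum>k\<in>K. \<Sum>l<n. F k $$ (i,l) * A $$ (l,j))"
    by (simp add: sum_distrib_right sum.swap[of _ K])
  also have "\<dots> = smat n (\<lambda>k. F k * A) K $$ (i,j)"
    using A ij F by (auto simp: scalar_prod_def lessThan_atLeast0 intro!: sum.cong)
  finally show "(smat n F K * A) $$ (i,j) = smat n (\<lambda>k. F k * A) K $$ (i,j)" .
qed (insert A, auto)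

lemma smat_adj: assumes F: "\<And>k. k \<in> K \<Longrightarrow> F k \<in> carrier_mat n n"
  shows "mat_adjoint (smat n F K) = smat n (\<lambda>k. mat_adjoint (F k)) K"
proof -
  have Fd[simp]: "k \<in> K \<Longrightarrow> dim_row (F k) = n" "k \<in> K \<Longrightarrow> dim_col (F k) = n" for k using F[of k] by auto
  show ?thesis by (rule eq_matI, auto simp: cnj_sum intro!: sum.cong)
qed

lemma smat_trace: assumes F: "\<And>k. k \<in> K \<Longrightarrow> F k \<in> carrier_mat n n"
  shows "trace_mat (smat n F K) = (\<Sum>k\<in>K. trace_mat (F k))"
  unfolding trace_mat_def using F by (auto simp: sum.swap[of _ K] intro!: sum.cong)

lemma smat_cong: "(\<And>k. k \<in> K \<Longrightarrow> F k = G k) \<Longrightarrow> smat n F K = smat n G K"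
  unfolding smat_def by (auto intro!: eq_matI sum.cong)

lemma smat_reindex: "inj_on g K \<Longrightarrow> smat n F (g ` K) = smat n (\<lambda>k. F (g k)) K"
  unfolding smat_def by (auto intro!: eq_matI simp: sum.reindex)

lemma smat_smult: assumes F: "\<And>k. k \<in> K \<Longrightarrow> F k \<in> carrier_mat n n"
  shows "c \<cdot>\<^sub>m smat n F K = smat n (\<lambda>k. c \<cdot>\<^sub>m F k) K"
proof -
  have Fd[simp]: "k \<in> K \<Longrightarrow> dim_row (F k) = n" "k \<in> K \<Longrightarrow> dim_col (F k) = n" for k using F[of k] by auto
  show ?thesis unfolding smat_def by (auto intro!: eq_matI sum.cong simp: sum_distrib_left)
qed

lemma smat_const: assumes "A \<in> carrier_mat n n"
  shows "smat n (\<lambda>k. A) K = of_nat (card K) \<cdot>\<^sub>m A"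
  using assms unfolding smat_def by (auto intro!: eq_matI)

lemma smat_vec: assumes F: "\<And>k. k \<in> K \<Longrightarrow> F k \<in> carrier_mat n n" and v: "v \<in> carrier_vec n"
  and K: "finite K"
  shows "conjugate v \<bullet> (smat n F K *\<^sub>v v) = (\<Sum>k\<in>K. conjugate v \<bullet> (F k *\<^sub>v v))"
proof -
  have Fd[simp]: "k \<in> K \<Longrightarrow> dim_row (F k) = n" "k \<in> K \<Longrightarrow> dim_col (F k) = n" for k using F[of k] by auto
  have "conjugate v \<bullet> (smat n F K *\<^sub>v v) = (\<Sum>i<n. cnj (v $ i) * (\<Sum>j<n. (\<Sum>k\<in>K. F k $$ (i,j)) * v $ j))"
    using v by (auto simp: scalar_prod_def lessThan_atLeast0 intro!: sum.cong)
  also have "\<dots> = (\<Sum>k\<in>K. (\<Sum>i<n. cnj (v $ i) * (\<Sum>j<n. F k $$ (i,j) * v $ j)))"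
    by (simp add: sum_distrib_left sum_distrib_right sum.swap[of _ K] ac_simps)
  also have "\<dots> = (\<Sum>k\<in>K. conjugate v \<bullet> (F k *\<^sub>v v))"
    using v F by (auto simp: scalar_prod_def lessThan_atLeast0 intro!: sum.cong)
  finally show ?thesis .
qed

lemma sprod_sum: "x \<in> carrier_vec n \<Longrightarrow> y \<in> carrier_vec n \<Longrightarrow>
   conjugate x \<bullet> y = (\<Sum>i<n. cnj (x $ i) * (y :: complex vec) $ i)"
  by (auto simp: scalar_prod_def lessThan_atLeast0 intro!: sum.cong)

lemma mult_vec_sum: "A \<in> carrier_mat n m \<Longrightarrow> y \<in> carrier_vec m \<Longrightarrow> i < n \<Longrightarrow>
   (A *\<^sub>v y) $ i = (\<Sum>k<m. A $$ (i,k) * (y :: complex vec) $ k)"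
  by (auto simp: scalar_prod_def lessThan_atLeast0 intro!: sum.cong)

lemma mult_mat_sum: "A \<in> carrier_mat a b \<Longrightarrow> B \<in> carrier_mat b c \<Longrightarrow> i < a \<Longrightarrow> j < c \<Longrightarrow>
   (A * B) $$ (i,j) = (\<Sum>k<b. A $$ (i,k) * (B :: complex mat) $$ (k,j))"
  by (auto simp: scalar_prod_def lessThan_atLeast0 intro!: sum.cong)

lemma cnj_sprod: "x \<in> carrier_vec n \<Longrightarrow> y \<in> carrier_vec n \<Longrightarrow>
   cnj (conjugate x \<bullet> y) = conjugate y \<bullet> (x :: complex vec)"
  by (simp add: sprod_sum cnj_sum ac_simps)

lemma vnorm: "v \<in> carrier_vec n \<Longrightarrow> conjugate v \<bullet> v = of_real (\<Sum>i<n. (cmod ((v :: complex vec) $ i))\<^sup>2)"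
proof -
  assume v: "v \<in> carrier_vec n"
  have z: "\<And>z::complex. cnj z * z = of_real ((cmod z)^2)" by (metis complex_norm_square mult.commute)
  show ?thesis unfolding sprod_sum[OF v v] z of_real_sum ..
qed

lemma vnorm_zero: assumes v: "(v :: complex vec) \<in> carrier_vec n"
  shows "conjugate v \<bullet> v = 0 \<longleftrightarrow> v = 0\<^sub>v n"
proof
  assume h: "conjugate v \<bullet> v = 0"
  have "complex_of_real (\<Sum>i<n. (cmod (v $ i))\<^sup>2) = 0" by (metis h vnorm[OF v])
  then have "(\<Sum>i<n. (cmod (v $ i))\<^sup>2) = 0" by (simp only: of_real_eq_0_iff)
  then have "\<forall>i\<in>{..<n}. (cmod (v $ i))\<^sup>2 = 0" by (subst (asm) sum_nonneg_eq_0_iff) auto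
  then show "v = 0\<^sub>v n" using v by (intro eq_vecI) auto
qed (insert v, auto simp: scalar_prod_def)


lemma adj_mult_vec_carrier: "B \<in> carrier_mat a b \<Longrightarrow> mat_adjoint B *\<^sub>v v \<in> carrier_vec b"
  using carrier_matD[of B a b] by (intro carrier_vecI) simp

lemma mult_vec_carrier': "B \<in> carrier_mat a b \<Longrightarrow> B *\<^sub>v v \<in> carrier_vec a"
  using carrier_matD[of B a b] by (intro carrier_vecI) simp

lemma hermD: "hermitian_mat A \<Longrightarrow> mat_adjoint A = A"
  unfolding hermitian_mat_def by auto

lemma herm_carrier: "hermitian_mat A \<Longrightarrow> A \<in> carrier_mat (dim_row A) (dim_row A)"
  unfolding hermitian_mat_def by (intro carrier_matI) auto

lemma hermI: "A \<in> carrier_mat n n \<Longrightarrow> mat_adjoint A = A \<Longrightarrow> hermitian_mat A"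
  unfolding hermitian_mat_def by auto

lemma herm_entry: "hermitian_mat A \<Longrightarrow> i < dim_row A \<Longrightarrow> j < dim_row A \<Longrightarrow> A $$ (j,i) = cnj (A $$ (i,j))"
  unfolding hermitian_mat_def by (metis adj_index square_mat.simps)

lemma psd_herm: "psd_mat A \<Longrightarrow> hermitian_mat A"
  unfolding psd_mat_def by auto

lemma psdD: "psd_mat A \<Longrightarrow> A \<in> carrier_mat n n \<Longrightarrow> v \<in> carrier_vec n \<Longrightarrow> 0 \<le> Re (conjugate v \<bullet> (A *\<^sub>v v))"
  unfolding psd_mat_def by auto

lemma psdI: "A \<in> carrier_mat n n \<Longrightarrow> mat_adjoint A = A \<Longrightarrow> (\<And>v. v \<in> carrier_vec n \<Longrightarrow> 0 \<le> Re (conjugate v \<bullet> (A *\<^sub>v v))) \<Longrightarrow> psd_mat A"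
  unfolding psd_mat_def hermitian_mat_def by auto

lemma qf_real: assumes A: "A \<in> carrier_mat n n" and h: "mat_adjoint A = A" and v: "v \<in> carrier_vec n"
  shows "cnj (conjugate v \<bullet> (A *\<^sub>v v)) = conjugate v \<bullet> (A *\<^sub>v v)"
proof -
  have "conjugate v \<bullet> (A *\<^sub>v v) = conjugate (A *\<^sub>v v) \<bullet> v" using sprod_adj[OF A v v] h by simp
  also have "\<dots> = cnj (conjugate v \<bullet> (A *\<^sub>v v))" using cnj_sprod[of v n "A *\<^sub>v v"] A v by simp
  finally show ?thesis by simp
qed

lemma psd_gram: assumes B: "B \<in> carrier_mat n r" shows "psd_mat (B * mat_adjoint B)"
proof (rule psdI)
  show "B * mat_adjoint B \<in> carrier_mat n n" using B by auto
  show "mat_adjoint (B * mat_adjoint B) = B * mat_adjoint B" using B by (simp add: adj_mult[of B n r _ n])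
  fix v :: "complex vec" assume v: "v \<in> carrier_vec n"
  have "conjugate v \<bullet> (B * mat_adjoint B *\<^sub>v v) = conjugate v \<bullet> (B *\<^sub>v (mat_adjoint B *\<^sub>v v))"
    using B v by (simp add: assoc_mult_mat_vec[of _ n r _ n])
  also have "\<dots> = conjugate (mat_adjoint B *\<^sub>v v) \<bullet> (mat_adjoint B *\<^sub>v v)"
  proof -
    have c: "mat_adjoint B *\<^sub>v v \<in> carrier_vec r" using B by (rule adj_mult_vec_carrier)
    show ?thesis using sprod_adj[OF B v c] by simp
  qed
  also have "\<dots> = of_real (\<Sum>i<r. (cmod ((mat_adjoint B *\<^sub>v v) $ i))\<^sup>2)"
  proof -
    have c: "mat_adjoint B *\<^sub>v v \<in> carrier_vec r" using B by (rule adj_mult_vec_carrier)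
    show ?thesis by (rule vnorm[OF c])
  qed
  finally show "0 \<le> Re (conjugate v \<bullet> (B * mat_adjoint B *\<^sub>v v))" by (simp add: sum_nonneg)
qed

lemma psd_conj: assumes A: "psd_mat A" "A \<in> carrier_mat n n" and U: "U \<in> carrier_mat n n"
  shows "psd_mat (U * A * mat_adjoint U)"
proof (rule psdI)
  show "U * A * mat_adjoint U \<in> carrier_mat n n" using A U by auto
  have h: "mat_adjoint A = A" using A psd_herm hermD by auto
  show "mat_adjoint (U * A * mat_adjoint U) = U * A * mat_adjoint U"
    using A U h by (simp add: adj_mult[of _ n n _ n] assoc_mult_mat[of _ n n _ n _ n])
  fix v :: "complex vec" assume v: "v \<in> carrier_vec n"
  have aU: "mat_adjoint U \<in> carrier_mat n n" using U by simp
  have c: "mat_adjoint U *\<^sub>v v \<in> carrier_vec n" using U by (rule adj_mult_vec_carrier)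
  have "U * A * mat_adjoint U *\<^sub>v v = U * A *\<^sub>v (mat_adjoint U *\<^sub>v v)"
    using A U v aU by (simp add: assoc_mult_mat_vec[of _ n n _ n])
  also have "\<dots> = U *\<^sub>v (A *\<^sub>v (mat_adjoint U *\<^sub>v v))"
    using A U c by (simp add: assoc_mult_mat_vec[of _ n n _ n])
  finally have "conjugate v \<bullet> (U * A * mat_adjoint U *\<^sub>v v) = conjugate v \<bullet> (U *\<^sub>v (A *\<^sub>v (mat_adjoint U *\<^sub>v v)))"
    by simp
  also have "\<dots> = conjugate (mat_adjoint U *\<^sub>v v) \<bullet> (A *\<^sub>v (mat_adjoint U *\<^sub>v v))"
  proof -
    have c2: "A *\<^sub>v (mat_adjoint U *\<^sub>v v) \<in> carrier_vec n" using A(2) by (rule mult_vec_carrier')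
    show ?thesis using sprod_adj[OF U v c2] by simp
  qed
  finally show "0 \<le> Re (conjugate v \<bullet> (U * A * mat_adjoint U *\<^sub>v v))"
    using psdD[OF A(1) A(2) c] by simp
qed

lemma psd_smat: assumes F: "\<And>k. k \<in> K \<Longrightarrow> F k \<in> carrier_mat n n \<and> psd_mat (F k)" and K: "finite K"
  shows "psd_mat (smat n F K)"
proof (rule psdI)
  show "smat n F K \<in> carrier_mat n n" by simp
  show "mat_adjoint (smat n F K) = smat n F K"
    using F by (subst smat_adj, auto intro!: smat_cong dest: psd_herm hermD)
  fix v :: "complex vec" assume v: "v \<in> carrier_vec n"
  show "0 \<le> Re (conjugate v \<bullet> (smat n F K *\<^sub>v v))"
    using F v K by (subst smat_vec, auto simp: Re_sum intro!: sum_nonneg psdD)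
qed

lemma psd_scale: assumes A: "psd_mat A" "A \<in> carrier_mat n n" and c: "0 \<le> c"
  shows "psd_mat (complex_of_real c \<cdot>\<^sub>m A)"
proof (rule psdI)
  show "complex_of_real c \<cdot>\<^sub>m A \<in> carrier_mat n n" using A by auto
  show "mat_adjoint (complex_of_real c \<cdot>\<^sub>m A) = complex_of_real c \<cdot>\<^sub>m A"
    using hermD[OF psd_herm[OF A(1)]] by simp
  fix v :: "complex vec" assume v: "v \<in> carrier_vec n"
  have "conjugate v \<bullet> (complex_of_real c \<cdot>\<^sub>m A *\<^sub>v v) = complex_of_real c * (conjugate v \<bullet> (A *\<^sub>v v))"
  proof -
    have "complex_of_real c \<cdot>\<^sub>m A *\<^sub>v v = complex_of_real c \<cdot>\<^sub>v (A *\<^sub>v v)"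
      by (rule eq_vecI, insert A v, auto simp: scalar_prod_def sum_distrib_left ac_simps)
    then show ?thesis using A v by simp
  qed
  then show "0 \<le> Re (conjugate v \<bullet> (complex_of_real c \<cdot>\<^sub>m A *\<^sub>v v))"
    using psdD[OF A v] c by simp
qed

lemma eig_real: assumes A: "A \<in> carrier_mat n n" and h: "mat_adjoint A = A" and v: "v \<in> carrier_vec n"
  and v0: "v \<noteq> 0\<^sub>v n" and e: "A *\<^sub>v v = e \<cdot>\<^sub>v v"
  shows "cnj e = e"
proof -
  have q: "conjugate v \<bullet> (A *\<^sub>v v) = e * (conjugate v \<bullet> v)" using e v by simp
  have nz: "conjugate v \<bullet> v \<noteq> 0" using vnorm_zero[OF v] v0 by simp
  have r: "cnj (conjugate v \<bullet> v) = conjugate v \<bullet> v" using cnj_sprod[OF v v] .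
  have "cnj e * (conjugate v \<bullet> v) = e * (conjugate v \<bullet> v)"
    using qf_real[OF A h v] unfolding q by (simp add: r)
  then show ?thesis using nz by simp
qed

lemma psd_eig: assumes A: "psd_mat A" "A \<in> carrier_mat n n" and v: "v \<in> carrier_vec n"
  and v0: "v \<noteq> 0\<^sub>v n" and e: "A *\<^sub>v v = e \<cdot>\<^sub>v v"
  shows "e = complex_of_real (Re e) \<and> 0 \<le> Re e"
proof -
  have h: "mat_adjoint A = A" using A psd_herm hermD by auto
  have ce: "cnj e = e" by (rule eig_real[OF A(2) h v v0 e])
  then have er: "e = complex_of_real (Re e)" by (metis complex_cnj_cancel_iff complex_is_Real_iff Reals_cnj_iff of_real_Re)
  have q: "conjugate v \<bullet> (A *\<^sub>v v) = e * (conjugate v \<bullet> v)" using e v by simp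
  obtain s where s: "conjugate v \<bullet> v = complex_of_real s" and s0: "s > 0"
  proof -
    have "conjugate v \<bullet> v \<noteq> 0" using vnorm_zero[OF v] v0 by simp
    then show ?thesis using that[of "\<Sum>i<n. (cmod (v $ i))\<^sup>2"] vnorm[OF v]
      by (metis less_eq_real_def of_real_0 sum_nonneg zero_le_power2)
  qed
  have "0 \<le> Re (e * complex_of_real s)" using psdD[OF A v] q s by simp
  then have "0 \<le> Re e * s" by simp
  then have "0 \<le> Re e" using s0 by (simp add: zero_le_mult_iff)
  with er show ?thesis by simp
qed


definition orthonormal :: "nat \<Rightarrow> complex vec list \<Rightarrow> bool" where
  "orthonormal n vs \<longleftrightarrow> (\<forall>i<length vs. vs ! i \<in> carrier_vec n) \<and>
     (\<forall>i<length vs. \<forall>j<length vs. conjugate (vs ! i) \<bullet> (vs ! j) = (if i = j then 1 else 0))"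

definition fc :: "nat \<Rightarrow> complex vec list \<Rightarrow> (nat \<Rightarrow> complex) \<Rightarrow> complex mat" where
  "fc n vs f = mat n n (\<lambda>(a,b). \<Sum>i<length vs. f i * (vs ! i $ a) * cnj (vs ! i $ b))"

lemma fc_carrier[simp]: "fc n vs f \<in> carrier_mat n n" and fc_dims[simp]: "dim_row (fc n vs f) = n" "dim_col (fc n vs f) = n"
  unfolding fc_def by auto

lemma fc_index: "a < n \<Longrightarrow> b < n \<Longrightarrow> fc n vs f $$ (a,b) = (\<Sum>i<length vs. f i * (vs ! i $ a) * cnj (vs ! i $ b))"
  unfolding fc_def by auto

lemma orthoD: "orthonormal n vs \<Longrightarrow> i < length vs \<Longrightarrow> vs ! i \<in> carrier_vec n"
  "orthonormal n vs \<Longrightarrow> i < length vs \<Longrightarrow> j < length vs \<Longrightarrow> conjugate (vs ! i) \<bullet> (vs ! j) = (if i = j then 1 else 0)"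
  unfolding orthonormal_def by auto

lemma ortho_sum: assumes o: "orthonormal n vs" and i: "i < length vs" and j: "j < length vs"
  shows "(\<Sum>c<n. cnj (vs ! i $ c) * vs ! j $ c) = (if i = j then 1 else 0)"
  using orthoD(2)[OF o i j] sprod_sum[OF orthoD(1)[OF o i] orthoD(1)[OF o j]] by simp

lemma fc_mult: assumes o: "orthonormal n vs"
  shows "fc n vs f * fc n vs g = fc n vs (\<lambda>i. f i * g i)"
proof (rule eq_matI)
  fix a b assume ab: "a < dim_row (fc n vs (\<lambda>i. f i * g i))" "b < dim_col (fc n vs (\<lambda>i. f i * g i))"
  then have a: "a < n" and b: "b < n" by auto
  let ?k = "length vs"
  let ?x = "\<lambda>i c. vs ! i $ c"
  have "(fc n vs f * fc n vs g) $$ (a,b) = (\<Sum>c<n. fc n vs f $$ (a,c) * fc n vs g $$ (c,b))"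
    by (rule mult_mat_sum[of _ n n _ n], insert a b, auto)
  also have "\<dots> = (\<Sum>c<n. (\<Sum>i<?k. f i * ?x i a * cnj (?x i c)) * (\<Sum>j<?k. g j * ?x j c * cnj (?x j b)))"
    using a b by (intro sum.cong, auto simp: fc_index)
  also have "\<dots> = (\<Sum>c<n. \<Sum>i<?k. \<Sum>j<?k. (f i * g j * ?x i a * cnj (?x j b)) * (cnj (?x i c) * ?x j c))"
    by (simp add: sum_product ac_simps)
  also have "\<dots> = (\<Sum>i<?k. \<Sum>j<?k. \<Sum>c<n. (f i * g j * ?x i a * cnj (?x j b)) * (cnj (?x i c) * ?x j c))"
    by (subst sum.swap, subst (2) sum.swap, rule refl)
  also have "\<dots> = (\<Sum>i<?k. \<Sum>j<?k. (f i * g j * ?x i a * cnj (?x j b)) * (if i = j then 1 else 0))"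
    by (intro sum.cong refl, subst sum_distrib_left[symmetric], subst ortho_sum[OF o], auto)
  also have "\<dots> = (\<Sum>i<?k. f i * g i * ?x i a * cnj (?x i b))"
    by (intro sum.cong refl, simp add: if_distrib sum.delta cong: if_cong)
  also have "\<dots> = fc n vs (\<lambda>i. f i * g i) $$ (a,b)" using a b by (simp add: fc_index)
  finally show "(fc n vs f * fc n vs g) $$ (a,b) = fc n vs (\<lambda>i. f i * g i) $$ (a,b)" .
qed auto

lemma fc_adj: "mat_adjoint (fc n vs f) = fc n vs (\<lambda>i. cnj (f i))"
  by (rule eq_matI, auto simp: fc_index cnj_sum ac_simps)

lemma fc_mult_vec: assumes o: "orthonormal n vs" and w: "w \<in> carrier_vec n" and a: "a < n"
  shows "(fc n vs f *\<^sub>v w) $ a = (\<Sum>i<length vs. f i * vs ! i $ a * (conjugate (vs ! i) \<bullet> w))"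
proof -
  let ?k = "length vs"
  have "(fc n vs f *\<^sub>v w) $ a = (\<Sum>c<n. (\<Sum>i<?k. f i * (vs ! i $ a) * cnj (vs ! i $ c)) * w $ c)"
    using a w by (subst mult_vec_sum[of _ n n], auto simp: fc_index intro!: sum.cong)
  also have "\<dots> = (\<Sum>i<?k. \<Sum>c<n. f i * (vs ! i $ a) * (cnj (vs ! i $ c) * w $ c))"
    unfolding sum_distrib_right by (subst sum.swap, intro sum.cong refl, simp add: ac_simps)
  also have "\<dots> = (\<Sum>i<length vs. f i * vs ! i $ a * (conjugate (vs ! i) \<bullet> w))"
    using o w by (intro sum.cong refl, subst sprod_sum[of _ n], auto simp: orthoD sum_distrib_left)
  finally show ?thesis .
qed

lemma fc_vec: assumes o: "orthonormal n vs" and j: "j < length vs"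
  shows "fc n vs f *\<^sub>v vs ! j = f j \<cdot>\<^sub>v vs ! j"
proof (rule eq_vecI)
  have vj: "vs ! j \<in> carrier_vec n" using orthoD(1)[OF o j] .
  fix a assume "a < dim_vec (f j \<cdot>\<^sub>v vs ! j)"
  then have a: "a < n" using vj by auto
  have "(fc n vs f *\<^sub>v vs ! j) $ a = (\<Sum>i<length vs. f i * vs ! i $ a * (if i = j then 1 else 0))"
    using fc_mult_vec[OF o vj a] orthoD(2)[OF o _ j] by (auto intro!: sum.cong)
  also have "\<dots> = f j * vs ! j $ a" using j by (simp add: if_distrib sum.delta cong: if_cong)
  finally show "(fc n vs f *\<^sub>v vs ! j) $ a = (f j \<cdot>\<^sub>v vs ! j) $ a" using a vj by simp
qed (insert orthoD(1)[OF o j], auto)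

lemma fc_vec_orth: assumes o: "orthonormal n vs" and w: "w \<in> carrier_vec n"
  and orth: "\<And>i. i < length vs \<Longrightarrow> conjugate (vs ! i) \<bullet> w = 0"
  shows "fc n vs f *\<^sub>v w = 0\<^sub>v n"
proof (rule eq_vecI)
  fix a assume "a < dim_vec (0\<^sub>v n :: complex vec)"
  then have a: "a < n" by simp
  show "(fc n vs f *\<^sub>v w) $ a = 0\<^sub>v n $ a" using fc_mult_vec[OF o w a] orth a by simp
qed simp

lemma mult_fc_eig: assumes B: "B \<in> carrier_mat n n" and o: "orthonormal n vs"
  and eig: "\<And>i. i < length vs \<Longrightarrow> B *\<^sub>v vs ! i = \<mu> i \<cdot>\<^sub>v vs ! i"
  shows "B * fc n vs f = fc n vs (\<lambda>i. \<mu> i * f i)"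
proof (rule eq_matI)
  fix a b assume ab: "a < dim_row (fc n vs (\<lambda>i. \<mu> i * f i))" "b < dim_col (fc n vs (\<lambda>i. \<mu> i * f i))"
  then have a: "a < n" and b: "b < n" by auto
  let ?k = "length vs"
  have e: "(\<Sum>c<n. B $$ (a,c) * vs ! i $ c) = \<mu> i * vs ! i $ a" if i: "i < ?k" for i
  proof -
    have vi: "vs ! i \<in> carrier_vec n" using orthoD(1)[OF o i] .
    have "(B *\<^sub>v vs ! i) $ a = (\<Sum>c<n. B $$ (a,c) * vs ! i $ c)" by (rule mult_vec_sum[OF B vi a])
    then show ?thesis using eig[OF i] a vi by simp
  qed
  have "(B * fc n vs f) $$ (a,b) = (\<Sum>c<n. B $$ (a,c) * (\<Sum>i<?k. f i * (vs ! i $ c) * cnj (vs ! i $ b)))"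
    using a b B by (subst mult_mat_sum[of _ n n _ n], auto simp: fc_index)
  also have "\<dots> = (\<Sum>i<?k. (\<Sum>c<n. B $$ (a,c) * vs ! i $ c) * (f i * cnj (vs ! i $ b)))"
    by (simp add: sum_distrib_left sum_distrib_right sum.swap[of _ "{..<n}"] ac_simps)
  also have "\<dots> = (\<Sum>i<?k. \<mu> i * f i * vs ! i $ a * cnj (vs ! i $ b))"
    by (intro sum.cong refl, simp add: e)
  also have "\<dots> = fc n vs (\<lambda>i. \<mu> i * f i) $$ (a,b)" using a b by (simp add: fc_index)
  finally show "(B * fc n vs f) $$ (a,b) = fc n vs (\<lambda>i. \<mu> i * f i) $$ (a,b)" .
qed (insert B, auto)

lemma complete: assumes o: "orthonormal n vs" and l: "length vs = n" and a: "a < n" and b: "b < n"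
  shows "(\<Sum>i<n. vs ! i $ a * cnj (vs ! i $ b)) = (if a = b then 1 else 0)"
proof -
  define U where "U = mat n n (\<lambda>(a,i). vs ! i $ a)"
  have U: "U \<in> carrier_mat n n" unfolding U_def by auto
  have aU: "mat_adjoint U \<in> carrier_mat n n" using U by simp
  have "mat_adjoint U * U = 1\<^sub>m n"
  proof (rule eq_matI)
    fix i j assume ij: "i < dim_row (1\<^sub>m n)" "j < dim_col (1\<^sub>m n)"
    then have i: "i < n" and j: "j < n" by auto
    have "(mat_adjoint U * U) $$ (i,j) = (\<Sum>c<n. mat_adjoint U $$ (i,c) * U $$ (c,j))"
      by (rule mult_mat_sum[OF aU U i j])
    also have "\<dots> = (\<Sum>c<n. cnj (vs ! i $ c) * vs ! j $ c)"
      using i j by (intro sum.cong refl, simp add: U_def)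
    also have "\<dots> = 1\<^sub>m n $$ (i,j)" using ortho_sum[OF o, of i j] i j l by simp
    finally show "(mat_adjoint U * U) $$ (i,j) = 1\<^sub>m n $$ (i,j)" .
  qed (insert U, auto)
  then have UU: "U * mat_adjoint U = 1\<^sub>m n" by (rule mat_mult_left_right_inverse[OF aU U])
  have "(U * mat_adjoint U) $$ (a,b) = (\<Sum>c<n. U $$ (a,c) * mat_adjoint U $$ (c,b))"
    by (rule mult_mat_sum[OF U aU a b])
  also have "\<dots> = (\<Sum>i<n. vs ! i $ a * cnj (vs ! i $ b))"
    using a b by (intro sum.cong refl, simp add: U_def)
  finally show ?thesis using UU a b by simp
qed

lemma fc_one: assumes o: "orthonormal n vs" and l: "length vs = n"
  shows "fc n vs (\<lambda>i. 1) = 1\<^sub>m n"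
  by (rule eq_matI, insert complete[OF o l], auto simp: fc_index l)

lemma fc_eig: assumes B: "B \<in> carrier_mat n n" and o: "orthonormal n vs" and l: "length vs = n"
  and eig: "\<And>i. i < n \<Longrightarrow> B *\<^sub>v vs ! i = \<mu> i \<cdot>\<^sub>v vs ! i"
  shows "B = fc n vs \<mu>"
proof -
  have "B = B * fc n vs (\<lambda>i. 1)" using fc_one[OF o l] B by simp
  also have "\<dots> = fc n vs (\<lambda>i. \<mu> i * 1)" by (rule mult_fc_eig[OF B o], insert eig l, auto)
  finally show ?thesis by simp
qed

lemma qf_fc: assumes o: "orthonormal n vs" and x: "x \<in> carrier_vec n"
  shows "conjugate x \<bullet> (fc n vs f *\<^sub>v x) = (\<Sum>i<length vs. f i * of_real ((cmod (conjugate (vs ! i) \<bullet> x))\<^sup>2))"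
proof -
  let ?k = "length vs"
  have fx: "fc n vs f *\<^sub>v x \<in> carrier_vec n" by (rule mult_vec_carrier'[OF fc_carrier])
  have "conjugate x \<bullet> (fc n vs f *\<^sub>v x) = (\<Sum>a<n. cnj (x $ a) * (\<Sum>i<?k. f i * vs ! i $ a * (conjugate (vs ! i) \<bullet> x)))"
    using sprod_sum[OF x fx] fc_mult_vec[OF o x] by simp
  also have "\<dots> = (\<Sum>i<?k. f i * (\<Sum>a<n. cnj (x $ a) * vs ! i $ a) * (conjugate (vs ! i) \<bullet> x))"
    by (simp add: sum_distrib_left sum_distrib_right sum.swap[of _ "{..<n}"] ac_simps)
  also have "\<dots> = (\<Sum>i<?k. f i * of_real ((cmod (conjugate (vs ! i) \<bullet> x))\<^sup>2))"
  proof (intro sum.cong refl)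
    fix i assume "i \<in> {..<?k}"
    then have vi: "vs ! i \<in> carrier_vec n" using orthoD(1)[OF o] by auto
    have "(\<Sum>a<n. cnj (x $ a) * vs ! i $ a) = cnj (conjugate (vs ! i) \<bullet> x)"
      using cnj_sprod[OF vi x] sprod_sum[OF x vi] by simp
    moreover have "cnj (conjugate (vs ! i) \<bullet> x) * (conjugate (vs ! i) \<bullet> x) = of_real ((cmod (conjugate (vs ! i) \<bullet> x))\<^sup>2)"
      by (metis complex_norm_square mult.commute)
    ultimately show "f i * (\<Sum>a<n. cnj (x $ a) * vs ! i $ a) * (conjugate (vs ! i) \<bullet> x) = f i * of_real ((cmod (conjugate (vs ! i) \<bullet> x))\<^sup>2)"
      by (simp only: mult.assoc)
  qed
  finally show ?thesis .
qed

lemma fc_psd: assumes o: "orthonormal n vs" and f: "\<And>i. i < length vs \<Longrightarrow> f i = complex_of_real (g i) \<and> 0 \<le> g i"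
  shows "psd_mat (fc n vs f)"
proof (rule psdI)
  show "fc n vs f \<in> carrier_mat n n" by simp
  show "mat_adjoint (fc n vs f) = fc n vs f"
    unfolding fc_adj by (rule eq_matI, auto simp: fc_index f intro!: sum.cong)
  fix v :: "complex vec" assume v: "v \<in> carrier_vec n"
  show "0 \<le> Re (conjugate v \<bullet> (fc n vs f *\<^sub>v v))"
    unfolding qf_fc[OF o v] Re_sum using f by (auto intro!: sum_nonneg)
qed


lemma poly_prod_root: "(e :: complex) \<in> set es \<Longrightarrow> poly (\<Prod>a\<leftarrow>es. [:- a, 1:]) e = 0"
  by (induct es) (auto simp: algebra_simps)

lemma herm_nonzero_eig:
  assumes B: "(B :: complex mat) \<in> carrier_mat n n" and h: "mat_adjoint B = B" and nz: "B \<noteq> 0\<^sub>m n n"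
  shows "\<exists>e v. e \<noteq> 0 \<and> v \<in> carrier_vec n \<and> v \<noteq> 0\<^sub>v n \<and> B *\<^sub>v v = e \<cdot>\<^sub>v v"
proof (rule ccontr)
  assume no: "\<not> ?thesis"
  obtain es where cp: "char_poly B = (\<Prod>a\<leftarrow>es. [:- a, 1:])" using char_poly_factorized[OF B] by blast
  obtain T P Q where sd: "schur_decomposition B es = (T,P,Q)" by (cases "schur_decomposition B es") auto
  from schur_decomposition[OF B cp sd] have sim: "similar_mat_wit B T P Q" and ut: "upper_triangular T"
    and dg: "diag_mat T = es" by auto
  from sim B have T: "T \<in> carrier_mat n n" and P: "P \<in> carrier_mat n n" and Q: "Q \<in> carrier_mat n n"
    and QP: "Q * P = 1\<^sub>m n" and BPTQ: "B = P * T * Q"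
    unfolding similar_mat_wit_def Let_def by auto
  have es0: "e = 0" if e: "e \<in> set es" for e
  proof -
    have "eigenvalue B e" using eigenvalue_root_char_poly[OF B] cp poly_prod_root[OF e] by simp
    then obtain v where "eigenvector B v e" unfolding eigenvalue_def by auto
    then show "e = 0" using no B unfolding eigenvector_def by auto
  qed
  have Tii: "T $$ (i,i) = 0" if i: "i < n" for i
  proof -
    have "T $$ (i,i) \<in> set es" unfolding dg[symmetric] diag_mat_def using i T by auto
    then show ?thesis by (rule es0)
  qed
  have trT: "trace_mat (T * T) = 0"
  proof -
    have "trace_mat (T * T) = (\<Sum>i<n. (T * T) $$ (i,i))" by (rule trace_mat_alt, insert T, auto)
    also have "\<dots> = (\<Sum>i<n. \<Sum>k<n. T $$ (i,k) * T $$ (k,i))"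
      by (intro sum.cong refl, rule mult_mat_sum[OF T T], auto)
    also have "\<dots> = 0"
    proof (intro sum.neutral ballI)
      fix i k assume i: "i \<in> {..<n}" and k: "k \<in> {..<n}"
      show "T $$ (i,k) * T $$ (k,i) = 0"
      proof (cases k i rule: linorder_cases)
        case less then show ?thesis using ut T i by (auto simp: upper_triangular_def)
      next
        case equal then show ?thesis using Tii i by simp
      next
        case greater then show ?thesis using ut T k by (auto simp: upper_triangular_def)
      qed
    qed
    finally show ?thesis .
  qed
  have TT: "T * T \<in> carrier_mat n n" using T by simp
  have BB: "B * B = P * ((T * T) * Q)"
  proof -
    have "B * B = (P * T) * Q * ((P * T) * Q)" using BPTQ by simp
    also have "\<dots> = (P * T) * (Q * ((P * T) * Q))"
      by (rule assoc_mult_mat[of _ n n _ n _ n], insert P T Q, auto)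
    also have "Q * ((P * T) * Q) = (Q * (P * T)) * Q"
      by (rule assoc_mult_mat[symmetric, of _ n n _ n _ n], insert P T Q, auto)
    also have "Q * (P * T) = (Q * P) * T"
      by (rule assoc_mult_mat[symmetric, of _ n n _ n _ n], insert P T Q, auto)
    also have "(Q * P) * T = T" using QP T by simp
    also have "(P * T) * (T * Q) = P * (T * (T * Q))"
      by (rule assoc_mult_mat[of _ n n _ n _ n], insert P T Q, auto)
    also have "T * (T * Q) = (T * T) * Q"
      by (rule assoc_mult_mat[symmetric, of _ n n _ n _ n], insert P T Q, auto)
    finally show ?thesis .
  qed
  have "trace_mat (B * B) = trace_mat (((T * T) * Q) * P)"
    unfolding BB by (rule trace_comm[of _ n n], insert P TT Q, auto)
  also have "((T * T) * Q) * P = (T * T) * (Q * P)"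
    by (rule assoc_mult_mat[of _ n n _ n _ n], insert TT P Q, auto)
  also have "\<dots> = T * T" using QP right_mult_one_mat[OF TT] by simp
  finally have trB: "trace_mat (B * B) = 0" using trT by simp
  have "trace_mat (B * B) = (\<Sum>i<n. \<Sum>k<n. B $$ (i,k) * B $$ (k,i))"
    unfolding trace_mat_alt[OF mult_carrier_mat[OF B B]]
    by (intro sum.cong refl, rule mult_mat_sum[OF B B], auto)
  also have "\<dots> = (\<Sum>i<n. \<Sum>k<n. of_real ((cmod (B $$ (i,k)))\<^sup>2))"
  proof (intro sum.cong refl)
    fix i k assume i: "i \<in> {..<n}" and k: "k \<in> {..<n}"
    have "B $$ (k,i) = cnj (B $$ (i,k))" using h B i k by (metis adj_index carrier_matD(1) carrier_matD(2) lessThan_iff)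
    then show "B $$ (i,k) * B $$ (k,i) = of_real ((cmod (B $$ (i,k)))\<^sup>2)"
      by (metis complex_norm_square)
  qed
  also have "\<dots> = of_real (\<Sum>i<n. \<Sum>k<n. (cmod (B $$ (i,k)))\<^sup>2)" by (simp only: of_real_sum)
  finally have X: "trace_mat (B * B) = complex_of_real (\<Sum>i<n. \<Sum>k<n. (cmod (B $$ (i,k)))\<^sup>2)" .
  have "(\<Sum>i<n. \<Sum>k<n. (cmod (B $$ (i,k)))\<^sup>2) = 0" using X trB by (metis of_real_eq_0_iff)
  then have "\<forall>i\<in>{..<n}. (\<Sum>k<n. (cmod (B $$ (i,k)))\<^sup>2) = 0"
    by (subst (asm) sum_nonneg_eq_0_iff) (auto intro: sum_nonneg)
  then have "\<forall>i\<in>{..<n}. \<forall>k\<in>{..<n}. (cmod (B $$ (i,k)))\<^sup>2 = 0"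
    by (subst (asm) sum_nonneg_eq_0_iff) auto
  then have "B = 0\<^sub>m n n" using B by (intro eq_matI) auto
  with nz show False by simp
qed

lemma normalize_vec: assumes w: "(w :: complex vec) \<in> carrier_vec n" and w0: "w \<noteq> 0\<^sub>v n"
  shows "\<exists>c. c \<noteq> 0 \<and> conjugate (c \<cdot>\<^sub>v w) \<bullet> (c \<cdot>\<^sub>v w) = 1"
proof -
  define s where "s = (\<Sum>i<n. (cmod (w $ i))\<^sup>2)"
  have ws: "conjugate w \<bullet> w = of_real s" unfolding s_def by (rule vnorm[OF w])
  have "s \<noteq> 0" using vnorm_zero[OF w] w0 ws by auto
  then have s0: "s > 0" unfolding s_def by (metis less_eq_real_def sum_nonneg zero_le_power2)
  define c where "c = complex_of_real (1 / sqrt s)"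
  have c0: "c \<noteq> 0" using s0 unfolding c_def by simp
  have "conjugate (c \<cdot>\<^sub>v w) \<bullet> (c \<cdot>\<^sub>v w) = (cnj c * c) * (conjugate w \<bullet> w)"
    using w by (simp add: conjugate_smult_vec ac_simps)
  also have "\<dots> = 1"
  proof -
    have "cnj c * c = complex_of_real (1 / sqrt s * (1 / sqrt s))" unfolding c_def
      by (simp only: complex_cnj_complex_of_real of_real_mult)
    also have "1 / sqrt s * (1 / sqrt s) = 1 / s"
    proof -
      have sq: "sqrt s * sqrt s = s" using s0 real_sqrt_mult_self[of s] by simp
      show ?thesis by (simp only: times_divide_times_eq sq mult_1)
    qed
    finally show ?thesis unfolding ws using s0 by (simp flip: of_real_mult)
  qed
  finally show ?thesis using c0 by blast
qed

lemma spectral_step: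
  assumes A: "(A :: complex mat) \<in> carrier_mat n n" and h: "mat_adjoint A = A"
  and o: "orthonormal n vs" and k: "length vs < n"
  and eig: "\<And>i. i < length vs \<Longrightarrow> A *\<^sub>v vs ! i = complex_of_real (lam i) \<cdot>\<^sub>v vs ! i"
  shows "\<exists>w e. w \<in> carrier_vec n \<and> conjugate w \<bullet> w = 1 \<and> (\<forall>i<length vs. conjugate (vs ! i) \<bullet> w = 0)
     \<and> A *\<^sub>v w = complex_of_real e \<cdot>\<^sub>v w"
proof -
  let ?k = "length vs"
  define L where "L = fc n vs (\<lambda>i. complex_of_real (lam i))"
  have L: "L \<in> carrier_mat n n" unfolding L_def by simp
  define B where "B = A - L"
  have Bc: "B \<in> carrier_mat n n" unfolding B_def using L by (rule minus_carrier_mat)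
  have hL: "mat_adjoint L = L" unfolding L_def fc_adj by simp
  have hB: "mat_adjoint B = B" unfolding B_def using adj_minus[OF A L] h hL by simp
  have Lv: "L *\<^sub>v vs ! j = complex_of_real (lam j) \<cdot>\<^sub>v vs ! j" if j: "j < ?k" for j
    unfolding L_def by (rule fc_vec[OF o j])
  have Bv: "B *\<^sub>v vs ! j = 0\<^sub>v n" if j: "j < ?k" for j
  proof -
    have vj: "vs ! j \<in> carrier_vec n" using orthoD(1)[OF o j] .
    have "B *\<^sub>v vs ! j = A *\<^sub>v vs ! j - L *\<^sub>v vs ! j" unfolding B_def
      by (rule minus_mult_distrib_mat_vec[OF A L vj])
    then show ?thesis using eig[OF j] Lv[OF j] vj by simp
  qed
  obtain w0 e0 where w0: "w0 \<in> carrier_vec n" and w00: "w0 \<noteq> 0\<^sub>v n"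
    and orth0: "\<And>i. i < ?k \<Longrightarrow> conjugate (vs ! i) \<bullet> w0 = 0" and e0: "A *\<^sub>v w0 = e0 \<cdot>\<^sub>v w0"
  proof (cases "B = 0\<^sub>m n n")
    case False
    from herm_nonzero_eig[OF Bc hB False] obtain e w where e: "e \<noteq> 0" and w: "w \<in> carrier_vec n"
      and w0: "w \<noteq> 0\<^sub>v n" and Bw: "B *\<^sub>v w = e \<cdot>\<^sub>v w" by auto
    have orth: "conjugate (vs ! i) \<bullet> w = 0" if i: "i < ?k" for i
    proof -
      have vi: "vs ! i \<in> carrier_vec n" using orthoD(1)[OF o i] .
      have "conjugate (vs ! i) \<bullet> (B *\<^sub>v w) = conjugate (mat_adjoint B *\<^sub>v vs ! i) \<bullet> w"
        by (rule sprod_adj[OF Bc vi w])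
      also have "\<dots> = 0" unfolding hB Bv[OF i] using w by simp
      finally have "e * (conjugate (vs ! i) \<bullet> w) = 0" using Bw w vi by simp
      then show ?thesis using e by simp
    qed
    have Lw: "L *\<^sub>v w = 0\<^sub>v n" unfolding L_def by (rule fc_vec_orth[OF o w orth])
    have "B *\<^sub>v w = A *\<^sub>v w - L *\<^sub>v w" unfolding B_def by (rule minus_mult_distrib_mat_vec[OF A L w])
    then have "A *\<^sub>v w = e \<cdot>\<^sub>v w" using Bw Lw w A by simp
    then show ?thesis using that[OF w w0 orth] by blast
  next
    case True
    have AL: "A = L"
    proof (rule eq_matI)
      fix i j assume "i < dim_row L" "j < dim_col L"
      then have i: "i < n" and j: "j < n" using L by auto
      have "B $$ (i,j) = 0" using True i j by simp
      then show "A $$ (i,j) = L $$ (i,j)" unfolding B_def using A L i j by simp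
    qed (insert A L, auto)
    define s where "s = (\<lambda>j. \<Sum>i<?k. (cmod (vs ! i $ j))\<^sup>2)"
    have s1: "(\<Sum>j<n. (cmod (vs ! i $ j))\<^sup>2) = 1" if i: "i < ?k" for i
    proof -
      have vi: "vs ! i \<in> carrier_vec n" using orthoD(1)[OF o i] .
      have "complex_of_real (\<Sum>j<n. (cmod (vs ! i $ j))\<^sup>2) = 1"
        using vnorm[OF vi] orthoD(2)[OF o i i] by simp
      then show ?thesis by (metis of_real_eq_1_iff)
    qed
    have "(\<Sum>j<n. s j) = (\<Sum>i<?k. \<Sum>j<n. (cmod (vs ! i $ j))\<^sup>2)" unfolding s_def by (rule sum.swap)
    also have "\<dots> = real ?k" using s1 by simp
    finally have ssum: "(\<Sum>j<n. s j) = real ?k" .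
    obtain j where j: "j < n" and sj: "s j \<noteq> 1"
    proof (rule ccontr)
      assume "\<not> thesis"
      then have "\<forall>j<n. s j = 1" using that by blast
      then have "(\<Sum>j<n. s j) = real n" by simp
      then show False using ssum k by simp
    qed
    define w where "w = vec n (\<lambda>a. (if a = j then 1 else 0) - (\<Sum>i<?k. vs ! i $ a * cnj (vs ! i $ j)))"
    have w: "w \<in> carrier_vec n" unfolding w_def by simp
    have "(\<Sum>i<?k. vs ! i $ j * cnj (vs ! i $ j)) = complex_of_real (s j)"
      unfolding s_def of_real_sum by (intro sum.cong refl) (metis complex_norm_square)
    then have wj: "w $ j = 1 - complex_of_real (s j)" unfolding w_def using j by simp
    have w0: "w \<noteq> 0\<^sub>v n"
    proof
      assume "w = 0\<^sub>v n"
      then have "w $ j = 0" using j by simp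
      then have "complex_of_real (s j) = 1" using wj by simp
      then show False using sj by (metis of_real_eq_1_iff)
    qed
    have orth: "conjugate (vs ! l) \<bullet> w = 0" if l: "l < ?k" for l
    proof -
      have vl: "vs ! l \<in> carrier_vec n" using orthoD(1)[OF o l] .
      have "conjugate (vs ! l) \<bullet> w = (\<Sum>a<n. cnj (vs ! l $ a) * ((if a = j then 1 else 0) - (\<Sum>i<?k. vs ! i $ a * cnj (vs ! i $ j))))"
        unfolding sprod_sum[OF vl w] unfolding w_def by (intro sum.cong refl, simp)
      also have "\<dots> = (\<Sum>a<n. cnj (vs ! l $ a) * (if a = j then 1 else 0)) - (\<Sum>a<n. cnj (vs ! l $ a) * (\<Sum>i<?k. vs ! i $ a * cnj (vs ! i $ j)))"
        by (simp only: right_diff_distrib sum_subtractf)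
      also have "(\<Sum>a<n. cnj (vs ! l $ a) * (if a = j then 1 else 0)) = cnj (vs ! l $ j)"
        using j by (simp add: if_distrib sum.delta cong: if_cong)
      also have "(\<Sum>a<n. cnj (vs ! l $ a) * (\<Sum>i<?k. vs ! i $ a * cnj (vs ! i $ j)))
          = (\<Sum>i<?k. (\<Sum>a<n. cnj (vs ! l $ a) * vs ! i $ a) * cnj (vs ! i $ j))"
        unfolding sum_distrib_left sum_distrib_right by (subst sum.swap, simp add: ac_simps)
      also have "(\<Sum>i<?k. (\<Sum>a<n. cnj (vs ! l $ a) * vs ! i $ a) * cnj (vs ! i $ j))
          = (\<Sum>i<?k. (if l = i then 1 else 0) * cnj (vs ! i $ j))"
        by (intro sum.cong refl) (simp add: ortho_sum[OF o l])
      also have "(\<Sum>i<?k. (if l = i then 1 else 0) * cnj (vs ! i $ j)) = (\<Sum>i<?k. (if l = i then cnj (vs ! i $ j) else 0))"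
        by (intro sum.cong refl) simp
      also have "\<dots> = cnj (vs ! l $ j)"
        using l by (subst sum.delta') simp_all
      finally show ?thesis by simp
    qed
    have "A *\<^sub>v w = 0\<^sub>v n" unfolding AL L_def by (rule fc_vec_orth[OF o w orth])
    then have "A *\<^sub>v w = 0 \<cdot>\<^sub>v w" using w by auto
    then show ?thesis using that[OF w w0 orth] by blast
  qed
  have e0r: "cnj e0 = e0" by (rule eig_real[OF A h w0 w00 e0])
  obtain c where c0: "c \<noteq> 0" and cn: "conjugate (c \<cdot>\<^sub>v w0) \<bullet> (c \<cdot>\<^sub>v w0) = 1"
    using normalize_vec[OF w0 w00] by blast
  let ?w = "c \<cdot>\<^sub>v w0"
  have wc: "?w \<in> carrier_vec n" using w0 by simp
  have orth: "\<forall>i<?k. conjugate (vs ! i) \<bullet> ?w = 0"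
    using orth0 w0 orthoD(1)[OF o] by simp
  have "A *\<^sub>v ?w = c \<cdot>\<^sub>v (A *\<^sub>v w0)" by (rule mult_mat_vec[OF A w0])
  also have "\<dots> = e0 \<cdot>\<^sub>v ?w" unfolding e0 by (rule eq_vecI, insert w0, auto)
  also have "e0 = complex_of_real (Re e0)" using e0r by (metis complex_cnj_cancel_iff complex_is_Real_iff Reals_cnj_iff of_real_Re)
  finally have "A *\<^sub>v ?w = complex_of_real (Re e0) \<cdot>\<^sub>v ?w" .
  then show ?thesis using wc cn orth by blast
qed

lemma spectral_k:
  assumes A: "(A :: complex mat) \<in> carrier_mat n n" and h: "mat_adjoint A = A"
  shows "k \<le> n \<Longrightarrow> \<exists>vs lam. orthonormal n vs \<and> length vs = k \<and>
     (\<forall>i<k. A *\<^sub>v vs ! i = complex_of_real (lam i) \<cdot>\<^sub>v vs ! i)"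
proof (induct k)
  case 0
  show ?case by (rule exI[of _ "[]"], auto simp: orthonormal_def)
next
  case (Suc k)
  then obtain vs lam where o: "orthonormal n vs" and l: "length vs = k"
    and eig: "\<forall>i<k. A *\<^sub>v vs ! i = complex_of_real (lam i) \<cdot>\<^sub>v vs ! i" by auto
  have "\<exists>w e. w \<in> carrier_vec n \<and> conjugate w \<bullet> w = 1 \<and> (\<forall>i<length vs. conjugate (vs ! i) \<bullet> w = 0)
     \<and> A *\<^sub>v w = complex_of_real e \<cdot>\<^sub>v w"
    by (rule spectral_step[OF A h o, of lam], insert Suc(2) l eig, auto)
  then obtain w e where w: "w \<in> carrier_vec n"
    and wn: "conjugate w \<bullet> w = 1" and orth: "\<forall>i<k. conjugate (vs ! i) \<bullet> w = 0"
    and ew: "A *\<^sub>v w = complex_of_real e \<cdot>\<^sub>v w" using l by auto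
  let ?vs = "vs @ [w]"
  let ?lam = "lam(k := e)"
  have nth: "?vs ! i = (if i < k then vs ! i else w)" if "i < Suc k" for i
    using that l by (auto simp: nth_append)
  have o2: "orthonormal n ?vs"
    unfolding orthonormal_def
  proof (intro conjI allI impI)
    fix i assume "i < length ?vs"
    then show "?vs ! i \<in> carrier_vec n" using nth[of i] l w orthoD(1)[OF o, of i] by auto
  next
    fix i j assume i: "i < length ?vs" and j: "j < length ?vs"
    have wi: "conjugate w \<bullet> vs ! i = 0" if "i < k" for i
      using cnj_sprod[OF orthoD(1)[OF o] w, of i] orth that l by simp
    show "conjugate (?vs ! i) \<bullet> (?vs ! j) = (if i = j then 1 else 0)"
      using i j l nth[of i] nth[of j] orthoD(2)[OF o, of i j] orth wi wn by auto
  qed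
  have eig2: "\<forall>i<Suc k. A *\<^sub>v ?vs ! i = complex_of_real (?lam i) \<cdot>\<^sub>v ?vs ! i"
    using eig ew nth by auto
  show ?case using o2 eig2 l by (intro exI[of _ ?vs] exI[of _ ?lam]) auto
qed

lemma spectral:
  assumes A: "(A :: complex mat) \<in> carrier_mat n n" and h: "mat_adjoint A = A"
  shows "\<exists>vs lam. orthonormal n vs \<and> length vs = n \<and>
     (\<forall>i<n. A *\<^sub>v vs ! i = complex_of_real (lam i) \<cdot>\<^sub>v vs ! i)"
  using spectral_k[OF A h, of n] by simp


lemma smult_smult_mat: "a \<cdot>\<^sub>m (b \<cdot>\<^sub>m A) = (a * b) \<cdot>\<^sub>m (A :: complex mat)"
  by (rule eq_matI, auto)

lemma fc_cong: "(\<And>i. i < length vs \<Longrightarrow> f i = g i) \<Longrightarrow> fc n vs f = fc n vs g"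
  unfolding fc_def by (intro eq_matI, auto intro!: sum.cong)

lemma sqrt_eig:
  assumes C: "C \<in> carrier_mat n n" "psd_mat C" and v: "v \<in> carrier_vec n" and mu: "0 \<le> \<mu>"
  and e: "C *\<^sub>v (C *\<^sub>v v) = complex_of_real (\<mu>^2) \<cdot>\<^sub>v v"
  shows "C *\<^sub>v v = complex_of_real \<mu> \<cdot>\<^sub>v v"
proof -
  have h: "mat_adjoint C = C" using C(2) by (simp add: psd_herm hermD)
  let ?m = "complex_of_real \<mu>"
  have mm: "complex_of_real (\<mu>^2) = ?m * ?m" by (simp add: power2_eq_square)
  define u where "u = C *\<^sub>v v - ?m \<cdot>\<^sub>v v"
  have Cv: "C *\<^sub>v v \<in> carrier_vec n" using C(1) by (rule mult_vec_carrier')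
  have u: "u \<in> carrier_vec n" unfolding u_def using Cv v by simp
  have Cu: "C *\<^sub>v u = (- ?m) \<cdot>\<^sub>v u"
  proof -
    have mv: "?m \<cdot>\<^sub>v v \<in> carrier_vec n" using v by simp
    have "C *\<^sub>v u = C *\<^sub>v (C *\<^sub>v v) - C *\<^sub>v (?m \<cdot>\<^sub>v v)" unfolding u_def
      by (rule mult_minus_distrib_mat_vec[OF C(1) Cv mv])
    also have "C *\<^sub>v (?m \<cdot>\<^sub>v v) = ?m \<cdot>\<^sub>v (C *\<^sub>v v)" by (rule mult_mat_vec[OF C(1) v])
    finally have X: "C *\<^sub>v u = (?m * ?m) \<cdot>\<^sub>v v - ?m \<cdot>\<^sub>v (C *\<^sub>v v)" unfolding e mm .
    have Y: "(?m * ?m) \<cdot>\<^sub>v v - ?m \<cdot>\<^sub>v (C *\<^sub>v v) = (- ?m) \<cdot>\<^sub>v (C *\<^sub>v v - ?m \<cdot>\<^sub>v v)"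
      using v Cv carrier_matD[OF C(1)] by (intro eq_vecI) (auto simp: algebra_simps)
    show ?thesis by (rule trans[OF X], unfold u_def, rule Y)
  qed
  show ?thesis
  proof (cases "\<mu> = 0")
    case True
    have "conjugate v \<bullet> (C *\<^sub>v (C *\<^sub>v v)) = conjugate (mat_adjoint C *\<^sub>v v) \<bullet> (C *\<^sub>v v)"
      by (rule sprod_adj[OF C(1) v Cv])
    then have "conjugate (C *\<^sub>v v) \<bullet> (C *\<^sub>v v) = 0" unfolding h e using True v by simp
    then have "C *\<^sub>v v = 0\<^sub>v n" using vnorm_zero[OF Cv] by simp
    then show ?thesis using True v by auto
  next
    case False
    then have mu0: "\<mu> > 0" using mu by simp
    obtain s where s: "conjugate u \<bullet> u = complex_of_real s" and s0: "0 \<le> s"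
      using vnorm[OF u] by (metis sum_nonneg zero_le_power2)
    have "conjugate u \<bullet> (C *\<^sub>v u) = - ?m * (conjugate u \<bullet> u)" unfolding Cu using u by simp
    then have "0 \<le> Re (- ?m * complex_of_real s)" using psdD[OF C(2) C(1) u] s by simp
    then have "\<mu> * s \<le> 0" by simp
    then have "s = 0" using mu0 s0 by (simp add: mult_le_0_iff)
    then have u0: "u = 0\<^sub>v n" using s vnorm_zero[OF u] by simp
    show ?thesis
    proof (rule eq_vecI)
      fix i assume i: "i < dim_vec (?m \<cdot>\<^sub>v v)"
      then have i: "i < n" using v by simp
      have "(C *\<^sub>v v - ?m \<cdot>\<^sub>v v) $ i = 0" using u0 i unfolding u_def by simp
      then show "(C *\<^sub>v v) $ i = (?m \<cdot>\<^sub>v v) $ i" using i v Cv by simp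
    qed (insert Cv v C(1), simp)
  qed
qed

lemma psd_spec:
  assumes A: "A \<in> carrier_mat n n" "psd_mat A"
  shows "\<exists>vs lam. orthonormal n vs \<and> length vs = n \<and> (\<forall>i<n. 0 \<le> lam i) \<and>
    (\<forall>i<n. A *\<^sub>v vs ! i = complex_of_real (lam i) \<cdot>\<^sub>v vs ! i)"
proof -
  have h: "mat_adjoint A = A" using A(2) by (simp add: psd_herm hermD)
  obtain vs lam where o: "orthonormal n vs" and l: "length vs = n"
    and eig: "\<forall>i<n. A *\<^sub>v vs ! i = complex_of_real (lam i) \<cdot>\<^sub>v vs ! i"
    using spectral[OF A(1) h] by blast
  have "0 \<le> lam i" if i: "i < n" for i
  proof -
    have vi: "vs ! i \<in> carrier_vec n" using orthoD(1)[OF o] i l by auto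
    have "vs ! i \<noteq> 0\<^sub>v n"
    proof
      assume "vs ! i = 0\<^sub>v n"
      then have "conjugate (vs ! i) \<bullet> vs ! i = 0" by simp
      then show False using orthoD(2)[OF o, of i i] i l by simp
    qed
    from psd_eig[OF A(2) A(1) vi this eig[rule_format, OF i]] show ?thesis by simp
  qed
  then show ?thesis using o l eig by blast
qed

lemma sqrt_unique_fc:
  assumes A: "A \<in> carrier_mat n n" and o: "orthonormal n vs" and l: "length vs = n"
  and lam: "\<And>i. i < n \<Longrightarrow> 0 \<le> lam i"
  and eig: "\<And>i. i < n \<Longrightarrow> A *\<^sub>v vs ! i = complex_of_real (lam i) \<cdot>\<^sub>v vs ! i"
  and B: "B \<in> carrier_mat n n" "psd_mat B" "B * B = A"
  shows "B = fc n vs (\<lambda>i. complex_of_real (sqrt (lam i)))"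
proof (rule fc_eig[OF B(1) o l])
  fix i assume i: "i < n"
  have vi: "vs ! i \<in> carrier_vec n" using orthoD(1)[OF o] i l by auto
  have "B *\<^sub>v (B *\<^sub>v vs ! i) = (B * B) *\<^sub>v vs ! i" using B(1) vi by simp
  also have "\<dots> = complex_of_real ((sqrt (lam i))^2) \<cdot>\<^sub>v vs ! i" using B(3) eig[OF i] lam[OF i] by simp
  finally show "B *\<^sub>v vs ! i = complex_of_real (sqrt (lam i)) \<cdot>\<^sub>v vs ! i"
    by (rule sqrt_eig[OF B(1) B(2) vi real_sqrt_ge_zero[OF lam[OF i]]])
qed

lemma psd_sqrt_props:
  assumes A: "A \<in> carrier_mat n n" "psd_mat A"
  shows "psd_sqrt A \<in> carrier_mat n n \<and> psd_mat (psd_sqrt A) \<and> psd_sqrt A * psd_sqrt A = A \<and>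
    (\<forall>B. B \<in> carrier_mat n n \<and> psd_mat B \<and> B * B = A \<longrightarrow> B = psd_sqrt A)"
proof -
  obtain vs lam where o: "orthonormal n vs" and l: "length vs = n" and lam: "\<forall>i<n. 0 \<le> lam i"
    and eig: "\<forall>i<n. A *\<^sub>v vs ! i = complex_of_real (lam i) \<cdot>\<^sub>v vs ! i"
    using psd_spec[OF A] by blast
  define S where "S = fc n vs (\<lambda>i. complex_of_real (sqrt (lam i)))"
  have Sc: "S \<in> carrier_mat n n" unfolding S_def by simp
  have Sp: "psd_mat S" unfolding S_def by (rule fc_psd[OF o], insert lam l, auto)
  have SS: "S * S = A"
  proof -
    have "S * S = fc n vs (\<lambda>i. complex_of_real (sqrt (lam i)) * complex_of_real (sqrt (lam i)))"
      unfolding S_def by (rule fc_mult[OF o])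
    also have "\<dots> = fc n vs (\<lambda>i. complex_of_real (lam i))"
      by (rule fc_cong, insert lam l, simp flip: of_real_mult)
    also have "\<dots> = A" by (rule fc_eig[OF A(1) o l, symmetric], insert eig, auto)
    finally show ?thesis .
  qed
  have uniq: "B = S" if "B \<in> carrier_mat n n" "psd_mat B" "B * B = A" for B
    unfolding S_def by (rule sqrt_unique_fc[OF A(1) o l _ _ that], insert lam eig, auto)
  have dr: "dim_row A = n" using A by simp
  have "psd_sqrt A = S" unfolding psd_sqrt_def dr
  proof (rule the_equality)
    show "S \<in> carrier_mat n n \<and> psd_mat S \<and> S * S = A" using Sc Sp SS by simp
  next
    fix B assume "B \<in> carrier_mat n n \<and> psd_mat B \<and> B * B = A"
    then show "B = S" using uniq by blast
  qed
  then show ?thesis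
  proof (simp only:, intro conjI allI impI)
    fix B assume "B \<in> carrier_mat n n \<and> psd_mat B \<and> B * B = A"
    then show "B = S" using uniq by blast
  qed (rule Sc Sp SS)+
qed

lemma mat_inv_eq: assumes S: "S \<in> carrier_mat n n" and T: "T \<in> carrier_mat n n"
  and ST: "S * T = 1\<^sub>m n" and TS: "T * S = 1\<^sub>m n"
  shows "mat_inv S = T"
proof -
  have dr: "dim_row S = n" using S by simp
  have uniq: "B = T" if B: "B \<in> carrier_mat n n" "S * B = 1\<^sub>m n" "B * S = 1\<^sub>m n" for B
  proof -
    have "B = B * (S * T)" using ST B by simp
    also have "\<dots> = (B * S) * T" using assoc_mult_mat[OF B(1) S T] by simp
    also have "\<dots> = T" using B T by simp
    finally show ?thesis .
  qed
  show ?thesis unfolding mat_inv_def dr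
  proof (rule the_equality)
    show "T \<in> carrier_mat n n \<and> S * T = 1\<^sub>m n \<and> T * S = 1\<^sub>m n" using T ST TS by simp
  next
    fix B assume "B \<in> carrier_mat n n \<and> S * B = 1\<^sub>m n \<and> B * S = 1\<^sub>m n"
    then show "B = T" using uniq by blast
  qed
qed

lemma pd_inv_sqrt:
  assumes A: "A \<in> carrier_mat n n" "psd_mat A"
  and inj: "\<And>v. v \<in> carrier_vec n \<Longrightarrow> A *\<^sub>v v = 0\<^sub>v n \<Longrightarrow> v = 0\<^sub>v n"
  shows "inv_sqrt A \<in> carrier_mat n n \<and> psd_mat (inv_sqrt A) \<and>
    inv_sqrt A * psd_sqrt A = 1\<^sub>m n \<and> psd_sqrt A * inv_sqrt A = 1\<^sub>m n"
proof -
  obtain vs lam where o: "orthonormal n vs" and l: "length vs = n" and lam: "\<forall>i<n. 0 \<le> lam i"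
    and eig: "\<forall>i<n. A *\<^sub>v vs ! i = complex_of_real (lam i) \<cdot>\<^sub>v vs ! i"
    using psd_spec[OF A] by blast
  have lampos: "0 < lam i" if i: "i < n" for i
  proof (rule ccontr)
    assume "\<not> 0 < lam i"
    then have "lam i = 0" using lam i by (metis less_eq_real_def)
    then have "A *\<^sub>v vs ! i = 0\<^sub>v n" using eig i orthoD(1)[OF o, of i] l by auto
    then have "vs ! i = 0\<^sub>v n" using inj orthoD(1)[OF o, of i] i l by auto
    then have "conjugate (vs ! i) \<bullet> vs ! i = 0" by simp
    then show False using orthoD(2)[OF o, of i i] i l by simp
  qed
  have lamnz: "sqrt (lam i) \<noteq> 0" if "i < n" for i using lampos[OF that] by simp
  define S where "S = fc n vs (\<lambda>i. complex_of_real (sqrt (lam i)))"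
  define T where "T = fc n vs (\<lambda>i. complex_of_real (1 / sqrt (lam i)))"
  have Sc: "S \<in> carrier_mat n n" unfolding S_def by simp
  have Tc: "T \<in> carrier_mat n n" unfolding T_def by simp
  have Tp: "psd_mat T" unfolding T_def by (rule fc_psd[OF o, of _ "\<lambda>i. 1 / sqrt (lam i)"], insert lam l, auto)
  have SS: "psd_sqrt A = S"
  proof -
    have "S * S = fc n vs (\<lambda>i. complex_of_real (sqrt (lam i)) * complex_of_real (sqrt (lam i)))"
      unfolding S_def by (rule fc_mult[OF o])
    also have "\<dots> = fc n vs (\<lambda>i. complex_of_real (lam i))"
      by (rule fc_cong, insert lam l, simp flip: of_real_mult)
    also have "\<dots> = A" by (rule fc_eig[OF A(1) o l, symmetric], insert eig, auto)
    finally have "S * S = A" .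
    moreover have "psd_mat S" unfolding S_def by (rule fc_psd[OF o], insert lam l, auto)
    ultimately show ?thesis using psd_sqrt_props[OF A] Sc by metis
  qed
  have ST: "S * T = 1\<^sub>m n"
  proof -
    have "S * T = fc n vs (\<lambda>i. complex_of_real (sqrt (lam i)) * complex_of_real (1 / sqrt (lam i)))"
      unfolding S_def T_def by (rule fc_mult[OF o])
    also have "\<dots> = fc n vs (\<lambda>i. 1)"
      by (rule fc_cong, insert lamnz l, simp flip: of_real_mult)
    also have "\<dots> = 1\<^sub>m n" by (rule fc_one[OF o l])
    finally show ?thesis .
  qed
  have TS: "T * S = 1\<^sub>m n"
  proof -
    have "T * S = fc n vs (\<lambda>i. complex_of_real (1 / sqrt (lam i)) * complex_of_real (sqrt (lam i)))"
      unfolding S_def T_def by (rule fc_mult[OF o])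
    also have "\<dots> = fc n vs (\<lambda>i. 1)"
      by (rule fc_cong, insert lamnz l, simp flip: of_real_mult)
    also have "\<dots> = 1\<^sub>m n" by (rule fc_one[OF o l])
    finally show ?thesis .
  qed
  have "inv_sqrt A = T" unfolding inv_sqrt_def SS by (rule mat_inv_eq[OF Sc Tc ST TS])
  then show ?thesis using Tc Tp ST TS SS by simp
qed

lemma psd_sqrt_smult:
  assumes A: "A \<in> carrier_mat n n" "psd_mat A" and c: "0 \<le> c"
  shows "psd_sqrt (complex_of_real c \<cdot>\<^sub>m A) = complex_of_real (sqrt c) \<cdot>\<^sub>m psd_sqrt A"
proof -
  obtain Sc Sp SS where S: "psd_sqrt A \<in> carrier_mat n n" "psd_mat (psd_sqrt A)" "psd_sqrt A * psd_sqrt A = A"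
    using psd_sqrt_props[OF A] by blast
  have cA: "complex_of_real c \<cdot>\<^sub>m A \<in> carrier_mat n n" "psd_mat (complex_of_real c \<cdot>\<^sub>m A)"
    using A psd_scale[OF A(2) A(1) c] by auto
  let ?B = "complex_of_real (sqrt c) \<cdot>\<^sub>m psd_sqrt A"
  have Bc: "?B \<in> carrier_mat n n" using S by simp
  have Bp: "psd_mat ?B" by (rule psd_scale[OF S(2) S(1)], simp add: c)
  have "?B * ?B = complex_of_real (sqrt c) \<cdot>\<^sub>m (complex_of_real (sqrt c) \<cdot>\<^sub>m (psd_sqrt A * psd_sqrt A))"
    using S by (simp add: mult_smult_assoc_mat[of _ n n _ n] mult_smult_distrib[of _ n n _ n])
  also have "\<dots> = complex_of_real c \<cdot>\<^sub>m A" unfolding S(3) smult_smult_mat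
    using c by (simp flip: of_real_mult)
  finally have "?B * ?B = complex_of_real c \<cdot>\<^sub>m A" .
  then show ?thesis using psd_sqrt_props[OF cA] Bc Bp by metis
qed

lemma psd_sqrt_conj:
  assumes A: "A \<in> carrier_mat n n" "psd_mat A" and U: "U \<in> carrier_mat n n"
  and UU: "mat_adjoint U * U = 1\<^sub>m n" and UA: "U * A * mat_adjoint U = A"
  shows "U * psd_sqrt A * mat_adjoint U = psd_sqrt A"
proof -
  obtain S: "psd_sqrt A \<in> carrier_mat n n" "psd_mat (psd_sqrt A)" "psd_sqrt A * psd_sqrt A = A"
    using psd_sqrt_props[OF A] by blast
  let ?S = "psd_sqrt A"
  let ?B = "U * ?S * mat_adjoint U"
  have aU: "mat_adjoint U \<in> carrier_mat n n" using U by simp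
  have Bc: "?B \<in> carrier_mat n n" using mult_carrier_mat[OF mult_carrier_mat[OF U S(1)] aU] .
  have Bp: "psd_mat ?B" by (rule psd_conj[OF S(2) S(1) U])
  have mc: "\<And>X Y. X \<in> carrier_mat n n \<Longrightarrow> Y \<in> carrier_mat n n \<Longrightarrow> X * Y \<in> carrier_mat n n" by simp
  have UUX: "mat_adjoint U * (U * X) = X" if X: "X \<in> carrier_mat n n" for X
    using assoc_mult_mat[OF aU U X] UU X by simp
  have SSX: "?S * (?S * X) = A * X" if X: "X \<in> carrier_mat n n" for X
    using assoc_mult_mat[OF S(1) S(1) X] S(3) by simp
  have "?B * ?B = U * (A * mat_adjoint U)"
    using U S aU by (simp add: assoc_mult_mat[of _ n n _ n _ n] mc UUX SSX)
  also have "\<dots> = U * A * mat_adjoint U" using assoc_mult_mat[OF U A(1) aU] by simp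
  also have "\<dots> = A" by (rule UA)
  finally show ?thesis using psd_sqrt_props[OF A] Bc Bp by metis
qed


lemma sum_split_add: "(\<Sum>k<a+(b::nat). g k) = (\<Sum>k<a. g k) + (\<Sum>k<b. g (a+k))"
  by (induct b) (simp_all add: add.assoc)

lemma block_cols_prod:
  assumes "\<forall>A\<in>set As. dim_row A = n"
  shows "dim_row (block_cols n As) = n \<and>
    block_cols n As * mat_adjoint (block_cols n As) = smat n (\<lambda>k. As ! k * mat_adjoint (As ! k)) {..<length As}"
  using assms
proof (induct As)
  case Nil
  show ?case unfolding block_cols_def by (auto intro!: eq_matI simp: scalar_prod_def)
next
  case (Cons A As)
  let ?B = "block_cols n As"
  let ?M = "four_block_mat A ?B (0\<^sub>m 0 (dim_col A)) (0\<^sub>m 0 (dim_col ?B))"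
  have IH: "dim_row ?B = n" "?B * mat_adjoint ?B = smat n (\<lambda>k. As ! k * mat_adjoint (As ! k)) {..<length As}"
    using Cons by auto
  have An: "dim_row A = n" using Cons(2) by simp
  have M: "block_cols n (A # As) = ?M" unfolding block_cols_def by simp
  let ?ca = "dim_col A" and ?cb = "dim_col ?B"
  have Mc: "?M \<in> carrier_mat n (?ca + ?cb)" using An by (intro carrier_matI) auto
  have aMc: "mat_adjoint ?M \<in> carrier_mat (?ca + ?cb) n" using Mc by simp
  have Md: "dim_row ?M = n" "dim_col ?M = ?ca + ?cb" using Mc by auto
  have Mi: "?M $$ (i,k) = (if k < ?ca then A $$ (i,k) else ?B $$ (i, k - ?ca))" if "i < n" "k < ?ca + ?cb" for i k
    using that An by simp
  have "?M * mat_adjoint ?M = smat n (\<lambda>k. (A # As) ! k * mat_adjoint ((A # As) ! k)) {..<length (A # As)}"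
  proof (rule eq_matI)
    fix i j assume "i < dim_row (smat n (\<lambda>k. (A # As) ! k * mat_adjoint ((A # As) ! k)) {..<length (A # As)})"
      "j < dim_col (smat n (\<lambda>k. (A # As) ! k * mat_adjoint ((A # As) ! k)) {..<length (A # As)})"
    then have i: "i < n" and j: "j < n" by auto
    have "(?M * mat_adjoint ?M) $$ (i,j) = (\<Sum>k<?ca + ?cb. ?M $$ (i,k) * cnj (?M $$ (j,k)))"
      unfolding mult_mat_sum[OF Mc aMc i j] using Md i j by (intro sum.cong refl) simp
    also have "\<dots> = (\<Sum>k<?ca. A $$ (i,k) * cnj (A $$ (j,k))) + (\<Sum>k<?cb. ?B $$ (i,k) * cnj (?B $$ (j,k)))"
      unfolding sum_split_add using i j by (simp add: Mi)
    also have "(\<Sum>k<?ca. A $$ (i,k) * cnj (A $$ (j,k))) = (A * mat_adjoint A) $$ (i,j)"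
      using An i j by (subst mult_mat_sum[of _ n ?ca _ n]) (auto intro!: carrier_matI)
    also have "(\<Sum>k<?cb. ?B $$ (i,k) * cnj (?B $$ (j,k))) = (?B * mat_adjoint ?B) $$ (i,j)"
      using IH i j by (subst mult_mat_sum[of _ n ?cb _ n]) (auto intro!: carrier_matI)
    also have "(A * mat_adjoint A) $$ (i,j) + (?B * mat_adjoint ?B) $$ (i,j) =
       smat n (\<lambda>k. (A # As) ! k * mat_adjoint ((A # As) ! k)) {..<length (A # As)} $$ (i,j)"
      unfolding IH(2) using i j An by (simp del: sum.lessThan_Suc add: sum.lessThan_Suc_shift)
    finally show "(?M * mat_adjoint ?M) $$ (i,j) = smat n (\<lambda>k. (A # As) ! k * mat_adjoint ((A # As) ! k)) {..<length (A # As)} $$ (i,j)" .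
  qed (insert Mc, auto)
  then show ?case unfolding M using An by simp
qed

locale gu_setup =
  fixes n m r :: nat and Us :: "complex mat list" and phi :: "complex mat"
  assumes len: "length Us = m" and m_pos: "0 < m"
    and dist: "distinct Us"
    and unit: "\<forall>U \<in> set Us. unitary_mat n U"
    and first: "Us ! 0 = 1\<^sub>m n"
    and mult_closed: "\<forall>U \<in> set Us. \<forall>V \<in> set Us. U * V \<in> set Us"
    and inv_closed: "\<forall>U \<in> set Us. mat_adjoint U \<in> set Us"
    and phi_dim: "phi \<in> carrier_mat n r"
begin

abbreviation "rho \<equiv> phi * mat_adjoint phi"
abbreviation "G \<equiv> smat n (\<lambda>V. V * rho * mat_adjoint V) (set Us)"

lemma U_carrier: "U \<in> set Us \<Longrightarrow> U \<in> carrier_mat n n"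
  using unit unfolding unitary_mat_def by auto

lemma aU_carrier: "U \<in> set Us \<Longrightarrow> mat_adjoint U \<in> carrier_mat n n"
  using U_carrier by simp

lemma UaU: "U \<in> set Us \<Longrightarrow> mat_adjoint U * U = 1\<^sub>m n"
  using unit unfolding unitary_mat_def by auto

lemma UUa: "U \<in> set Us \<Longrightarrow> U * mat_adjoint U = 1\<^sub>m n"
  using mat_mult_left_right_inverse[OF aU_carrier U_carrier UaU] by simp

lemma nth_in: "k < m \<Longrightarrow> Us ! k \<in> set Us"
  using len by simp

lemma rho_carrier: "rho \<in> carrier_mat n n" using phi_dim by simp

lemma rho_psd: "psd_mat rho" by (rule psd_gram[OF phi_dim])

lemma mc: "X \<in> carrier_mat n n \<Longrightarrow> Y \<in> carrier_mat n n \<Longrightarrow> X * Y \<in> carrier_mat n n" by simp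

lemma set_nth: "set Us = (\<lambda>k. Us ! k) ` {..<m}"
  using len by (auto simp: set_conv_nth)

lemma inj_nth: "inj_on (\<lambda>k. Us ! k) {..<m}"
  using inj_on_nth[OF dist] len by auto

lemma smat_Us: "smat n (\<lambda>k. F (Us ! k)) {..<m} = smat n F (set Us)"
  unfolding set_nth by (subst smat_reindex[OF inj_nth]) simp

lemma sum_Us: "(\<Sum>k<m. f (Us ! k)) = (\<Sum>V\<in>set Us. f V)"
  unfolding set_nth by (subst sum.reindex[OF inj_nth]) simp

lemma bij_right: assumes W: "W \<in> set Us" shows "bij_betw (\<lambda>V. V * W) (set Us) (set Us)"
proof -
  have inj: "inj_on (\<lambda>V. V * W) (set Us)"
  proof (rule inj_onI)
    fix V1 V2 assume V1: "V1 \<in> set Us" and V2: "V2 \<in> set Us" and eq: "V1 * W = V2 * W"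
    have "V1 = V1 * W * mat_adjoint W" using assoc_mult_mat[OF U_carrier[OF V1] U_carrier[OF W] aU_carrier[OF W]]
      UUa[OF W] U_carrier[OF V1] by simp
    also have "\<dots> = V2 * W * mat_adjoint W" using eq by simp
    also have "\<dots> = V2" using assoc_mult_mat[OF U_carrier[OF V2] U_carrier[OF W] aU_carrier[OF W]]
      UUa[OF W] U_carrier[OF V2] by simp
    finally show "V1 = V2" .
  qed
  have sub: "(\<lambda>V. V * W) ` set Us \<subseteq> set Us" using mult_closed W by auto
  show ?thesis unfolding bij_betw_def using inj endo_inj_surj[OF finite_set sub inj] by simp
qed

lemma bij_left: assumes W: "W \<in> set Us" shows "bij_betw (\<lambda>V. W * V) (set Us) (set Us)"
proof -
  have inj: "inj_on (\<lambda>V. W * V) (set Us)"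
  proof (rule inj_onI)
    fix V1 V2 assume V1: "V1 \<in> set Us" and V2: "V2 \<in> set Us" and eq: "W * V1 = W * V2"
    have "V1 = mat_adjoint W * (W * V1)" using assoc_mult_mat[OF aU_carrier[OF W] U_carrier[OF W] U_carrier[OF V1]]
      UaU[OF W] U_carrier[OF V1] by simp
    also have "\<dots> = mat_adjoint W * (W * V2)" using eq by simp
    also have "\<dots> = V2" using assoc_mult_mat[OF aU_carrier[OF W] U_carrier[OF W] U_carrier[OF V2]]
      UaU[OF W] U_carrier[OF V2] by simp
    finally show "V1 = V2" .
  qed
  have sub: "(\<lambda>V. W * V) ` set Us \<subseteq> set Us" using mult_closed W by auto
  show ?thesis unfolding bij_betw_def using inj endo_inj_surj[OF finite_set sub inj] by simp
qed

lemma smat_shift_right: assumes W: "W \<in> set Us" shows "smat n (\<lambda>V. F (V * W)) (set Us) = smat n F (set Us)"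
proof -
  have inj: "inj_on (\<lambda>V. V * W) (set Us)" and im: "(\<lambda>V. V * W) ` set Us = set Us"
    using bij_right[OF W] unfolding bij_betw_def by auto
  have "smat n F (set Us) = smat n F ((\<lambda>V. V * W) ` set Us)" using im by simp
  also have "\<dots> = smat n (\<lambda>V. F (V * W)) (set Us)" by (rule smat_reindex[OF inj])
  finally show ?thesis by simp
qed

lemma smat_shift_left: assumes W: "W \<in> set Us" shows "smat n (\<lambda>V. F (W * V)) (set Us) = smat n F (set Us)"
proof -
  have inj: "inj_on (\<lambda>V. W * V) (set Us)" and im: "(\<lambda>V. W * V) ` set Us = set Us"
    using bij_left[OF W] unfolding bij_betw_def by auto
  have "smat n F (set Us) = smat n F ((\<lambda>V. W * V) ` set Us)" using im by simp
  also have "\<dots> = smat n (\<lambda>V. F (W * V)) (set Us)" by (rule smat_reindex[OF inj])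
  finally show ?thesis by simp
qed

lemma sum_shift_right: assumes W: "W \<in> set Us" shows "(\<Sum>V\<in>set Us. f (V * W)) = (\<Sum>V\<in>set Us. f V)"
proof -
  have inj: "inj_on (\<lambda>V. V * W) (set Us)" and im: "(\<lambda>V. V * W) ` set Us = set Us"
    using bij_right[OF W] unfolding bij_betw_def by auto
  have "(\<Sum>V\<in>set Us. f V) = (\<Sum>V\<in>(\<lambda>V. V * W) ` set Us. f V)" using im by simp
  also have "\<dots> = (\<Sum>V\<in>set Us. f (V * W))" by (subst sum.reindex[OF inj]) simp
  finally show ?thesis by simp
qed

lemma adj_prod: "(U :: complex mat) \<in> carrier_mat n n \<Longrightarrow> V \<in> carrier_mat n n \<Longrightarrow> mat_adjoint (U * V) = mat_adjoint V * mat_adjoint U"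
  by (rule adj_mult[of _ n n _ n])

lemma G_carrier: "G \<in> carrier_mat n n" by simp

lemma conj_carrier: "V \<in> carrier_mat n n \<Longrightarrow> A \<in> carrier_mat n n \<Longrightarrow> V * A * mat_adjoint V \<in> carrier_mat n n"
  by (meson adj_carrier mc)

lemma G_psd: "psd_mat G"
proof (rule psd_smat)
  fix V assume V: "V \<in> set Us"
  show "V * rho * mat_adjoint V \<in> carrier_mat n n \<and> psd_mat (V * rho * mat_adjoint V)"
    using conj_carrier[OF U_carrier[OF V] rho_carrier] psd_conj[OF rho_psd rho_carrier U_carrier[OF V]] by simp
qed simp

lemma G_conj: assumes W: "W \<in> set Us" shows "W * G * mat_adjoint W = G"
proof -
  have Wc: "W \<in> carrier_mat n n" and aW: "mat_adjoint W \<in> carrier_mat n n" using U_carrier[OF W] by auto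
  have Fc: "\<And>V. V \<in> set Us \<Longrightarrow> V * rho * mat_adjoint V \<in> carrier_mat n n"
    using U_carrier rho_carrier conj_carrier by blast
  have "W * G = smat n (\<lambda>V. W * (V * rho * mat_adjoint V)) (set Us)"
    by (rule smat_mult_left[OF Wc Fc finite_set])
  then have "W * G * mat_adjoint W = smat n (\<lambda>V. W * (V * rho * mat_adjoint V)) (set Us) * mat_adjoint W" by simp
  also have "\<dots> = smat n (\<lambda>V. W * (V * rho * mat_adjoint V) * mat_adjoint W) (set Us)"
    by (rule smat_mult_right[OF aW _ finite_set], rule mc[OF Wc Fc])
  also have "\<dots> = smat n (\<lambda>V. (W * V) * rho * mat_adjoint (W * V)) (set Us)"
  proof (rule smat_cong)
    fix V assume V: "V \<in> set Us"
    note c = U_carrier[OF V] aU_carrier[OF V] Wc aW rho_carrier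
    show "W * (V * rho * mat_adjoint V) * mat_adjoint W = (W * V) * rho * mat_adjoint (W * V)"
      using c by (simp add: adj_prod assoc_mult_mat[of _ n n _ n _ n] mc)
  qed
  also have "\<dots> = G" by (rule smat_shift_left[OF W])
  finally show ?thesis .
qed

end


lemma orth_span:
  assumes x: "(x :: complex vec) \<in> carrier_vec n" and Sc: "S \<subseteq> carrier_vec n"
  and orth: "\<And>e. e \<in> S \<Longrightarrow> conjugate x \<bullet> e = 0"
  and y: "y \<in> vspan n S"
  shows "conjugate x \<bullet> y = 0"
proof -
  interpret vec_space "TYPE(complex)" n .
  from y obtain a A where yA: "y = lincomb a A" and fin: "finite A" and AS: "A \<subseteq> S"
    unfolding vspan_def span_def by blast
  have Ac: "A \<subseteq> carrier_vec n" using AS Sc by auto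
  have yc: "y \<in> carrier_vec n" unfolding yA using lincomb_dim[OF fin Ac] by (intro carrier_vecI) simp
  have "conjugate x \<bullet> y = (\<Sum>i<n. cnj (x $ i) * (\<Sum>v\<in>A. a v * v $ i))"
    unfolding sprod_sum[OF x yc] unfolding yA by (intro sum.cong refl) (simp add: lincomb_index[OF _ Ac])
  also have "\<dots> = (\<Sum>v\<in>A. a v * (\<Sum>i<n. cnj (x $ i) * v $ i))"
    by (simp add: sum_distrib_left sum.swap[of _ A] ac_simps)
  also have "\<dots> = (\<Sum>v\<in>A. a v * (conjugate x \<bullet> v))"
    using Ac x by (intro sum.cong refl) (simp add: sprod_sum subsetD)
  also have "\<dots> = 0" using AS orth by (intro sum.neutral) auto
  finally show ?thesis .
qed

locale gu_full = gu_setup +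
  assumes tr: "trace_mat (phi * mat_adjoint phi) = 1"
    and spans: "vspan n (\<Union>i<m. eigvecs_nz n (map (\<lambda>U. U * (phi * mat_adjoint phi) * mat_adjoint U) Us ! i)) = carrier_vec n"
begin

abbreviation "rhos \<equiv> map (\<lambda>U. U * rho * mat_adjoint U) Us"
abbreviation "phis \<equiv> map (\<lambda>U. U * phi) Us"
abbreviation "Phi \<equiv> block_cols n phis"
abbreviation "S \<equiv> psd_sqrt G"
abbreviation "T \<equiv> inv_sqrt G"

lemma Ub_rho: assumes U: "U \<in> carrier_mat n n"
  shows "(U * phi) * mat_adjoint (U * phi) = U * rho * mat_adjoint U"
proof -
  have aphi: "mat_adjoint phi \<in> carrier_mat r n" using phi_dim by simp
  have "(U * phi) * mat_adjoint (U * phi) = (U * phi) * (mat_adjoint phi * mat_adjoint U)"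
    using adj_mult[OF U phi_dim] by simp
  also have "\<dots> = U * (phi * (mat_adjoint phi * mat_adjoint U))"
    using assoc_mult_mat[OF U phi_dim, of "mat_adjoint phi * mat_adjoint U" n] aphi U by simp
  also have "phi * (mat_adjoint phi * mat_adjoint U) = rho * mat_adjoint U"
    using assoc_mult_mat[OF phi_dim aphi, of "mat_adjoint U" n] U by simp
  also have "U * (rho * mat_adjoint U) = U * rho * mat_adjoint U"
    using assoc_mult_mat[OF U rho_carrier, of "mat_adjoint U" n] U by simp
  finally show ?thesis .
qed

lemma PhiPhi: "Phi * mat_adjoint Phi = G"
proof -
  have "\<forall>A\<in>set phis. dim_row A = n" using U_carrier by auto
  from block_cols_prod[OF this]
  have "Phi * mat_adjoint Phi = smat n (\<lambda>k. phis ! k * mat_adjoint (phis ! k)) {..<length phis}" by simp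
  also have "\<dots> = smat n (\<lambda>k. Us ! k * rho * mat_adjoint (Us ! k)) {..<m}"
  proof -
    have l: "length phis = m" using len by simp
    show ?thesis unfolding l
    proof (rule smat_cong)
      fix k assume "k \<in> {..<m}"
      then have k: "k < m" by simp
      show "phis ! k * mat_adjoint (phis ! k) = Us ! k * rho * mat_adjoint (Us ! k)"
        using k len Ub_rho[OF U_carrier[OF nth_in[OF k]]] by simp
    qed
  qed
  also have "\<dots> = G" by (rule smat_Us)
  finally show ?thesis .
qed

lemma qf_conj_rho: assumes U: "U \<in> carrier_mat n n" and x: "x \<in> carrier_vec n"
  shows "conjugate x \<bullet> ((U * rho * mat_adjoint U) *\<^sub>v x) =
    conjugate (mat_adjoint (U * phi) *\<^sub>v x) \<bullet> (mat_adjoint (U * phi) *\<^sub>v x)"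
proof -
  have Up: "U * phi \<in> carrier_mat n r" using U phi_dim by simp
  have c: "mat_adjoint (U * phi) *\<^sub>v x \<in> carrier_vec r" using Up by (rule adj_mult_vec_carrier)
  have "(U * rho * mat_adjoint U) *\<^sub>v x = (U * phi) *\<^sub>v (mat_adjoint (U * phi) *\<^sub>v x)"
    unfolding Ub_rho[OF U, symmetric] using Up x by (simp add: assoc_mult_mat_vec[of _ n r _ n])
  then show ?thesis using sprod_adj[OF Up x c] by simp
qed

lemma G_inj: assumes x: "x \<in> carrier_vec n" and Gx: "G *\<^sub>v x = 0\<^sub>v n" shows "x = 0\<^sub>v n"
proof -
  let ?f = "\<lambda>V. conjugate (mat_adjoint (V * phi) *\<^sub>v x) \<bullet> (mat_adjoint (V * phi) *\<^sub>v x)"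
  have cf: "\<And>V. V \<in> set Us \<Longrightarrow> mat_adjoint (V * phi) *\<^sub>v x \<in> carrier_vec r"
    using U_carrier phi_dim by (meson adj_mult_vec_carrier mult_carrier_mat)
  have "conjugate x \<bullet> (G *\<^sub>v x) = (\<Sum>V\<in>set Us. conjugate x \<bullet> ((V * rho * mat_adjoint V) *\<^sub>v x))"
    by (rule smat_vec[OF _ x finite_set], rule conj_carrier[OF U_carrier rho_carrier])
  also have "\<dots> = (\<Sum>V\<in>set Us. ?f V)" using U_carrier x by (intro sum.cong refl) (simp add: qf_conj_rho)
  also have "\<dots> = (\<Sum>V\<in>set Us. complex_of_real (\<Sum>i<r. (cmod ((mat_adjoint (V * phi) *\<^sub>v x) $ i))\<^sup>2))"
  proof (intro sum.cong refl)
    fix V assume "V \<in> set Us"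
    then show "?f V = complex_of_real (\<Sum>i<r. (cmod ((mat_adjoint (V * phi) *\<^sub>v x) $ i))\<^sup>2)"
      by (rule vnorm[OF cf])
  qed
  finally have "(\<Sum>V\<in>set Us. complex_of_real (\<Sum>i<r. (cmod ((mat_adjoint (V * phi) *\<^sub>v x) $ i))\<^sup>2)) = 0"
    using Gx x by simp
  then have "complex_of_real (\<Sum>V\<in>set Us. \<Sum>i<r. (cmod ((mat_adjoint (V * phi) *\<^sub>v x) $ i))\<^sup>2) = 0"
    by (simp only: of_real_sum)
  then have "(\<Sum>V\<in>set Us. \<Sum>i<r. (cmod ((mat_adjoint (V * phi) *\<^sub>v x) $ i))\<^sup>2) = 0"
    by (simp only: of_real_eq_0_iff)
  then have z: "\<forall>V\<in>set Us. (\<Sum>i<r. (cmod ((mat_adjoint (V * phi) *\<^sub>v x) $ i))\<^sup>2) = 0"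
    by (subst (asm) sum_nonneg_eq_0_iff) (auto intro: sum_nonneg)
  have rx: "(V * rho * mat_adjoint V) *\<^sub>v x = 0\<^sub>v n" if V: "V \<in> set Us" for V
  proof -
    have "?f V = 0" using z V vnorm[OF cf[OF V]] by simp
    then have a0: "mat_adjoint (V * phi) *\<^sub>v x = 0\<^sub>v r" using vnorm_zero[OF cf[OF V]] by simp
    have Up: "V * phi \<in> carrier_mat n r" using U_carrier[OF V] phi_dim by simp
    have "(V * rho * mat_adjoint V) *\<^sub>v x = (V * phi) *\<^sub>v (mat_adjoint (V * phi) *\<^sub>v x)"
      unfolding Ub_rho[OF U_carrier[OF V], symmetric] using Up x by (simp add: assoc_mult_mat_vec[of _ n r _ n])
    moreover have "(V * phi) *\<^sub>v 0\<^sub>v r = 0\<^sub>v n" using Up by (intro eq_vecI) (auto simp: scalar_prod_def)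
    ultimately show ?thesis unfolding a0 by simp
  qed
  let ?E = "\<Union>i<m. eigvecs_nz n (rhos ! i)"
  have Ec: "?E \<subseteq> carrier_vec n" unfolding eigvecs_nz_def by auto
  have orth: "conjugate x \<bullet> e = 0" if e: "e \<in> ?E" for e
  proof -
    from e obtain i where i: "i < m" and ei: "e \<in> eigvecs_nz n (rhos ! i)" by auto
    let ?V = "Us ! i"
    have V: "?V \<in> set Us" using nth_in[OF i] .
    have ri: "rhos ! i = ?V * rho * mat_adjoint ?V" using i len by simp
    from ei obtain l where ec: "e \<in> carrier_vec n" and l0: "l \<noteq> 0" and el: "rhos ! i *\<^sub>v e = l \<cdot>\<^sub>v e"
      unfolding eigvecs_nz_def by auto
    have Rc: "?V * rho * mat_adjoint ?V \<in> carrier_mat n n" by (rule conj_carrier[OF U_carrier[OF V] rho_carrier])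
    have Rh: "mat_adjoint (?V * rho * mat_adjoint ?V) = ?V * rho * mat_adjoint ?V"
      using psd_conj[OF rho_psd rho_carrier U_carrier[OF V]] by (simp add: psd_herm hermD)
    have "l * (conjugate x \<bullet> e) = conjugate x \<bullet> (rhos ! i *\<^sub>v e)" using el ec x by simp
    also have "\<dots> = conjugate (mat_adjoint (?V * rho * mat_adjoint ?V) *\<^sub>v x) \<bullet> e"
      unfolding ri by (rule sprod_adj[OF Rc x ec])
    also have "\<dots> = 0" unfolding Rh rx[OF V] using ec by simp
    finally show ?thesis using l0 by simp
  qed
  have xs: "x \<in> vspan n ?E" using spans x by simp
  have "conjugate x \<bullet> x = 0"
    by (rule orth_span[OF x Ec orth xs])
  then show ?thesis using vnorm_zero[OF x] by simp
qed

end


lemma one_smult_cmat[simp]: "(1::complex) \<cdot>\<^sub>m A = A"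
  by (rule eq_matI) auto

context gu_full
begin

lemma ST_facts: "S \<in> carrier_mat n n \<and> psd_mat S \<and> S * S = G \<and>
  T \<in> carrier_mat n n \<and> psd_mat T \<and> T * S = 1\<^sub>m n \<and> S * T = 1\<^sub>m n"
  using psd_sqrt_props[OF G_carrier G_psd] pd_inv_sqrt[OF G_carrier G_psd G_inj] by blast

lemma S_carrier: "S \<in> carrier_mat n n" and S_psd: "psd_mat S" and SS: "S * S = G"
  and T_carrier: "T \<in> carrier_mat n n" and T_psd: "psd_mat T" and TS: "T * S = 1\<^sub>m n" and ST: "S * T = 1\<^sub>m n"
  using ST_facts by auto

lemma S_herm: "mat_adjoint S = S" using S_psd by (simp add: psd_herm hermD)
lemma T_herm: "mat_adjoint T = T" using T_psd by (simp add: psd_herm hermD)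

lemma conj_mult: assumes U: "U \<in> set Us" and X: "X \<in> carrier_mat n n" and Y: "Y \<in> carrier_mat n n"
  shows "U * X * mat_adjoint U * (U * Y * mat_adjoint U) = U * (X * Y) * mat_adjoint U"
proof -
  note c = U_carrier[OF U] aU_carrier[OF U] X Y
  have "U * X * mat_adjoint U * (U * Y * mat_adjoint U) = U * X * (mat_adjoint U * U) * Y * mat_adjoint U"
    using c by (simp add: assoc_mult_mat[of _ n n _ n _ n] mc)
  also have "\<dots> = U * (X * Y) * mat_adjoint U" unfolding UaU[OF U]
    using c by (simp add: assoc_mult_mat[of _ n n _ n _ n] mc)
  finally show ?thesis .
qed

lemma S_conj: "U \<in> set Us \<Longrightarrow> U * S * mat_adjoint U = S"
  by (rule psd_sqrt_conj[OF G_carrier G_psd U_carrier UaU G_conj])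

lemma T_conj: assumes U: "U \<in> set Us" shows "U * T * mat_adjoint U = T"
proof -
  have c1: "U * S * mat_adjoint U \<in> carrier_mat n n" by (rule conj_carrier[OF U_carrier[OF U] S_carrier])
  have c2: "U * T * mat_adjoint U \<in> carrier_mat n n" by (rule conj_carrier[OF U_carrier[OF U] T_carrier])
  have "mat_inv (U * S * mat_adjoint U) = U * T * mat_adjoint U"
  proof (rule mat_inv_eq[OF c1 c2])
    show "U * S * mat_adjoint U * (U * T * mat_adjoint U) = 1\<^sub>m n"
      unfolding conj_mult[OF U S_carrier T_carrier] ST using UUa[OF U] U_carrier[OF U] by simp
    show "U * T * mat_adjoint U * (U * S * mat_adjoint U) = 1\<^sub>m n"
      unfolding conj_mult[OF U T_carrier S_carrier] TS using UUa[OF U] U_carrier[OF U] by simp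
  qed
  then show ?thesis unfolding S_conj[OF U] inv_sqrt_def[symmetric] by simp
qed

lemma T_comm: assumes U: "U \<in> set Us" shows "U * T = T * U"
proof -
  note c = U_carrier[OF U] aU_carrier[OF U] T_carrier
  have "U * T = U * T * (mat_adjoint U * U)" using c UaU[OF U] by simp
  also have "\<dots> = (U * T * mat_adjoint U) * U" using c by (simp add: assoc_mult_mat[of _ n n _ n _ n] mc)
  also have "\<dots> = T * U" unfolding T_conj[OF U] ..
  finally show ?thesis .
qed

lemma TG: "T * G = S"
proof -
  have "T * G = T * (S * S)" using SS by simp
  also have "\<dots> = (T * S) * S" using assoc_mult_mat[OF T_carrier S_carrier S_carrier] by simp
  finally show ?thesis unfolding TS using S_carrier by simp
qed

lemma TGT: "T * G * T = 1\<^sub>m n"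
  unfolding TG by (rule ST)

definition "cm = complex_of_real (sqrt (1 / real m))"

lemma psis_eq: "map2 (\<lambda>p phi. complex_of_real (sqrt p) \<cdot>\<^sub>m phi) (equal_priors m) phis = map (\<lambda>U. cm \<cdot>\<^sub>m (U * phi)) Us"
  unfolding equal_priors_def cm_def using len by (simp add: zip_replicate1)

lemma cm_sq: "cm * cnj cm = complex_of_real (1 / real m)"
  unfolding cm_def using m_pos by (simp flip: of_real_mult)

lemma PsiPsi: "block_cols n (map (\<lambda>U. cm \<cdot>\<^sub>m (U * phi)) Us) * mat_adjoint (block_cols n (map (\<lambda>U. cm \<cdot>\<^sub>m (U * phi)) Us))
  = complex_of_real (1 / real m) \<cdot>\<^sub>m G"
proof -
  let ?As = "map (\<lambda>U. cm \<cdot>\<^sub>m (U * phi)) Us"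
  have "\<forall>A\<in>set ?As. dim_row A = n" using U_carrier by auto
  from block_cols_prod[OF this]
  have "block_cols n ?As * mat_adjoint (block_cols n ?As) = smat n (\<lambda>k. ?As ! k * mat_adjoint (?As ! k)) {..<length ?As}" by simp
  also have "\<dots> = smat n (\<lambda>k. complex_of_real (1 / real m) \<cdot>\<^sub>m (Us ! k * rho * mat_adjoint (Us ! k))) {..<m}"
  proof -
    have l: "length ?As = m" using len by simp
    show ?thesis unfolding l
    proof (rule smat_cong)
      fix k assume "k \<in> {..<m}"
      then have k: "k < m" by simp
      have U: "Us ! k \<in> carrier_mat n n" by (rule U_carrier[OF nth_in[OF k]])
      have Up: "Us ! k * phi \<in> carrier_mat n r" using U phi_dim by simp
      have "(cm \<cdot>\<^sub>m (Us ! k * phi)) * mat_adjoint (cm \<cdot>\<^sub>m (Us ! k * phi)) = (cm * cnj cm) \<cdot>\<^sub>m ((Us ! k * phi) * mat_adjoint (Us ! k * phi))"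
        using Up by (simp add: mult_smult_assoc_mat[of _ n r _ n] mult_smult_distrib[of _ n r _ n] smult_smult_mat ac_simps)
      then show "?As ! k * mat_adjoint (?As ! k) = complex_of_real (1 / real m) \<cdot>\<^sub>m (Us ! k * rho * mat_adjoint (Us ! k))"
        using k len Ub_rho[OF U] cm_sq by simp
    qed
  qed
  also have "\<dots> = complex_of_real (1 / real m) \<cdot>\<^sub>m smat n (\<lambda>k. Us ! k * rho * mat_adjoint (Us ! k)) {..<m}"
    by (rule smat_smult[symmetric], rule conj_carrier[OF U_carrier[OF nth_in] rho_carrier], simp)
  also have "smat n (\<lambda>k. Us ! k * rho * mat_adjoint (Us ! k)) {..<m} = G" by (rule smat_Us)
  finally show ?thesis .
qed

lemma inv_sqrt_scaled: "inv_sqrt (complex_of_real (1 / real m) \<cdot>\<^sub>m G) = complex_of_real (sqrt (real m)) \<cdot>\<^sub>m T"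
proof -
  have ps: "psd_sqrt (complex_of_real (1 / real m) \<cdot>\<^sub>m G) = complex_of_real (sqrt (1 / real m)) \<cdot>\<^sub>m S"
    by (rule psd_sqrt_smult[OF G_carrier G_psd], simp)
  have one: "complex_of_real (sqrt (1 / real m)) * complex_of_real (sqrt (real m)) = 1"
    using m_pos by (simp flip: of_real_mult add: real_sqrt_mult[symmetric])
  have one': "complex_of_real (sqrt (real m)) * complex_of_real (sqrt (1 / real m)) = 1"
    using one by (simp add: mult.commute)
  show ?thesis unfolding inv_sqrt_def[of "complex_of_real (1 / real m) \<cdot>\<^sub>m G"] ps
  proof (rule mat_inv_eq)
    show "complex_of_real (sqrt (1 / real m)) \<cdot>\<^sub>m S * (complex_of_real (sqrt (real m)) \<cdot>\<^sub>m T) = 1\<^sub>m n"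
      using S_carrier T_carrier ST one one'
      by (simp add: mult_smult_assoc_mat[of _ n n _ n] mult_smult_distrib[of _ n n _ n] smult_smult_mat)
    show "complex_of_real (sqrt (real m)) \<cdot>\<^sub>m T * (complex_of_real (sqrt (1 / real m)) \<cdot>\<^sub>m S) = 1\<^sub>m n"
      using S_carrier T_carrier TS one one'
      by (simp add: mult_smult_assoc_mat[of _ n n _ n] mult_smult_distrib[of _ n n _ n] smult_smult_mat)
  qed (insert S_carrier T_carrier, auto)
qed

abbreviation "Sig \<equiv> lsm n (equal_priors m) phis"

lemma Sig_len: "length Sig = m"
  unfolding lsm_def Let_def using len by (simp add: equal_priors_def)

lemma Sig_nth: assumes k: "k < m"
  shows "Sig ! k = (Us ! k * (T * phi)) * mat_adjoint (Us ! k * (T * phi))"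
proof -
  let ?U = "Us ! k"
  have U: "?U \<in> set Us" by (rule nth_in[OF k])
  have Uc: "?U \<in> carrier_mat n n" by (rule U_carrier[OF U])
  have Sd: "inv_sqrt (block_cols n (map (\<lambda>U. cm \<cdot>\<^sub>m (U * phi)) Us) * mat_adjoint (block_cols n (map (\<lambda>U. cm \<cdot>\<^sub>m (U * phi)) Us)))
     = complex_of_real (sqrt (real m)) \<cdot>\<^sub>m T" unfolding PsiPsi by (rule inv_sqrt_scaled)
  have one: "complex_of_real (sqrt (real m)) * cm = 1"
    unfolding cm_def using m_pos by (simp flip: of_real_mult add: real_sqrt_mult[symmetric])
  have one': "cm * complex_of_real (sqrt (real m)) = 1" using one by (simp add: mult.commute)
  have Up: "?U * phi \<in> carrier_mat n r" using Uc phi_dim by simp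
  have "(complex_of_real (sqrt (real m)) \<cdot>\<^sub>m T) * (cm \<cdot>\<^sub>m (?U * phi)) = T * (?U * phi)"
    using T_carrier Up one one' by (simp add: mult_smult_assoc_mat[of _ n n _ r] mult_smult_distrib[of _ n n _ r] smult_smult_mat)
  also have "\<dots> = (T * ?U) * phi" using assoc_mult_mat[OF T_carrier Uc phi_dim] by simp
  also have "\<dots> = (?U * T) * phi" unfolding T_comm[OF U] ..
  also have "\<dots> = ?U * (T * phi)" using assoc_mult_mat[OF Uc T_carrier phi_dim] by simp
  finally have e: "(complex_of_real (sqrt (real m)) \<cdot>\<^sub>m T) * (cm \<cdot>\<^sub>m (?U * phi)) = ?U * (T * phi)" .
  show ?thesis unfolding lsm_def Let_def psis_eq Sd using k len e by simp
qed

abbreviation "mu \<equiv> T * phi"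
abbreviation "M0 \<equiv> mu * mat_adjoint mu"

lemma mu_carrier: "mu \<in> carrier_mat n r" using T_carrier phi_dim by simp
lemma M0_carrier: "M0 \<in> carrier_mat n n" using mu_carrier by simp

lemma Sig_conj: assumes k: "k < m" shows "Sig ! k = Us ! k * M0 * mat_adjoint (Us ! k)"
proof -
  have Uc: "Us ! k \<in> carrier_mat n n" by (rule U_carrier[OF nth_in[OF k]])
  have amu: "mat_adjoint mu \<in> carrier_mat r n" using mu_carrier by simp
  have "(Us ! k * mu) * (mat_adjoint mu * mat_adjoint (Us ! k)) = Us ! k * (mu * (mat_adjoint mu * mat_adjoint (Us ! k)))"
    using assoc_mult_mat[OF Uc mu_carrier, of "mat_adjoint mu * mat_adjoint (Us ! k)" n] amu Uc by simp
  also have "mu * (mat_adjoint mu * mat_adjoint (Us ! k)) = M0 * mat_adjoint (Us ! k)"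
    using assoc_mult_mat[OF mu_carrier amu, of "mat_adjoint (Us ! k)" n] Uc by simp
  also have "Us ! k * (M0 * mat_adjoint (Us ! k)) = Us ! k * M0 * mat_adjoint (Us ! k)"
    using assoc_mult_mat[OF Uc M0_carrier, of "mat_adjoint (Us ! k)" n] Uc by simp
  finally show ?thesis unfolding Sig_nth[OF k] adj_mult[OF Uc mu_carrier] .
qed

lemma Sig0: "Sig ! 0 = M0"
  using Sig_conj[OF m_pos] first left_mult_one_mat[OF M0_carrier] right_mult_one_mat[OF M0_carrier] by simp

lemma trace_const: assumes k: "k < m"
  shows "trace_mat (rhos ! k * Sig ! k) = trace_mat (rho * M0)"
proof -
  let ?U = "Us ! k"
  have U: "?U \<in> set Us" by (rule nth_in[OF k])
  note c = U_carrier[OF U] aU_carrier[OF U] rho_carrier M0_carrier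
  have "rhos ! k * Sig ! k = ?U * rho * mat_adjoint ?U * (?U * M0 * mat_adjoint ?U)"
    unfolding Sig_conj[OF k] using k len by simp
  also have "\<dots> = ?U * (rho * M0) * mat_adjoint ?U" by (rule conj_mult[OF U rho_carrier M0_carrier])
  finally have "trace_mat (rhos ! k * Sig ! k) = trace_mat ((?U * (rho * M0)) * mat_adjoint ?U)" by simp
  also have "\<dots> = trace_mat (mat_adjoint ?U * (?U * (rho * M0)))"
    by (rule trace_comm[of _ n n], insert c, auto)
  also have "mat_adjoint ?U * (?U * (rho * M0)) = rho * M0"
    using assoc_mult_mat[of "mat_adjoint ?U" n n ?U n "rho * M0" n] c UaU[OF U]
      left_mult_one_mat[OF mc[OF rho_carrier M0_carrier]] by simp
  finally show ?thesis .
qed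

end


lemma qf_diff: assumes A: "A \<in> carrier_mat n n" and v: "v \<in> carrier_vec n" and w: "w \<in> carrier_vec n"
  shows "conjugate (v - c \<cdot>\<^sub>v w) \<bullet> (A *\<^sub>v (v - c \<cdot>\<^sub>v w)) =
    conjugate v \<bullet> (A *\<^sub>v v) - c * (conjugate v \<bullet> (A *\<^sub>v w)) - cnj c * (conjugate w \<bullet> (A *\<^sub>v v))
    + cnj c * c * (conjugate w \<bullet> (A *\<^sub>v (w :: complex vec)))"
proof -
  have z: "v - c \<cdot>\<^sub>v w \<in> carrier_vec n" using v w by simp
  have Az: "A *\<^sub>v (v - c \<cdot>\<^sub>v w) \<in> carrier_vec n" using A by (rule mult_vec_carrier')
  have Av: "A *\<^sub>v v \<in> carrier_vec n" using A by (rule mult_vec_carrier')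
  have Aw: "A *\<^sub>v w \<in> carrier_vec n" using A by (rule mult_vec_carrier')
  have e1: "(A *\<^sub>v (v - c \<cdot>\<^sub>v w)) $ i = (A *\<^sub>v v) $ i - c * (A *\<^sub>v w) $ i" if i: "i < n" for i
    unfolding mult_vec_sum[OF A z i] mult_vec_sum[OF A v i] mult_vec_sum[OF A w i]
    using v w by (simp add: sum_subtractf sum_distrib_left algebra_simps)
  have "conjugate (v - c \<cdot>\<^sub>v w) \<bullet> (A *\<^sub>v (v - c \<cdot>\<^sub>v w)) =
     (\<Sum>i<n. (cnj (v $ i) - cnj c * cnj (w $ i)) * ((A *\<^sub>v v) $ i - c * (A *\<^sub>v w) $ i))"
    unfolding sprod_sum[OF z Az] using v w e1 by (intro sum.cong refl) simp
  also have "\<dots> = (\<Sum>i<n. cnj (v $ i) * (A *\<^sub>v v) $ i) - c * (\<Sum>i<n. cnj (v $ i) * (A *\<^sub>v w) $ i)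
     - cnj c * (\<Sum>i<n. cnj (w $ i) * (A *\<^sub>v v) $ i) + cnj c * c * (\<Sum>i<n. cnj (w $ i) * (A *\<^sub>v w) $ i)"
    by (simp add: algebra_simps sum.distrib sum_subtractf sum_distrib_left)
  also have "\<dots> = conjugate v \<bullet> (A *\<^sub>v v) - c * (conjugate v \<bullet> (A *\<^sub>v w)) - cnj c * (conjugate w \<bullet> (A *\<^sub>v v))
    + cnj c * c * (conjugate w \<bullet> (A *\<^sub>v w))"
    unfolding sprod_sum[OF v Av] sprod_sum[OF v Aw] sprod_sum[OF w Av] sprod_sum[OF w Aw] ..
  finally show ?thesis .
qed

lemma quad_ineq: fixes a av b :: real
  assumes h: "\<And>t. 0 \<le> av - 2 * t * b + t^2 * a * b" and a: "0 \<le> a" and b: "0 \<le> b"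
  shows "b \<le> a * av"
proof (cases "a = 0")
  case True
  show ?thesis
  proof (rule ccontr)
    assume "\<not> b \<le> a * av"
    then have b0: "b > 0" using True by simp
    have "0 \<le> av - 2 * ((av + 1) / (2 * b)) * b" using h[of "(av + 1) / (2 * b)"] True by simp
    also have "\<dots> = -1" using b0 by (simp add: field_simps)
    finally show False by simp
  qed
next
  case False
  then have a0: "a > 0" using a by simp
  have "0 \<le> av - 2 * (1 / a) * b + (1 / a)^2 * a * b" by (rule h)
  also have "\<dots> = av - b / a" using a0 by (simp add: field_simps power2_eq_square)
  finally have "b / a \<le> av" by simp
  then show ?thesis using a0 by (simp add: field_simps)
qed

lemma tr_psd: assumes P: "P \<in> carrier_mat n n" "psd_mat P" and Q: "Q \<in> carrier_mat n n" "psd_mat Q"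
  shows "0 \<le> Re (trace_mat (P * Q))"
proof -
  obtain R where R: "R \<in> carrier_mat n n" "psd_mat R" "R * R = Q"
    using psd_sqrt_props[OF Q] by blast
  have Rh: "mat_adjoint R = R" using R(2) by (simp add: psd_herm hermD)
  have "trace_mat (P * Q) = trace_mat (P * R * R)"
    unfolding R(3)[symmetric] using assoc_mult_mat[OF P(1) R(1) R(1)] by simp
  also have "\<dots> = trace_mat (R * (P * R))" by (rule trace_comm[of _ n n], insert P R, auto)
  also have "\<dots> = (\<Sum>i<n. conjugate (col R i) \<bullet> (P *\<^sub>v col R i))"
  proof -
    have "trace_mat (R * (P * R)) = (\<Sum>i<n. (R * (P * R)) $$ (i,i))"
      by (rule trace_mat_alt, insert P R, auto)
    also have "\<dots> = (\<Sum>i<n. conjugate (col R i) \<bullet> (P *\<^sub>v col R i))"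
    proof (intro sum.cong refl)
      fix i assume "i \<in> {..<n}"
      then have i: "i < n" by simp
      have c: "col R i \<in> carrier_vec n" using R(1) i by simp
      have Pc: "P *\<^sub>v col R i \<in> carrier_vec n" using P(1) by (rule mult_vec_carrier')
      have "(R * (P * R)) $$ (i,i) = (\<Sum>a<n. R $$ (i,a) * (P * R) $$ (a,i))"
        by (rule mult_mat_sum[OF R(1) _ i i], insert P R, auto)
      also have "\<dots> = (\<Sum>a<n. cnj (col R i $ a) * (P *\<^sub>v col R i) $ a)"
      proof (intro sum.cong refl)
        fix a assume "a \<in> {..<n}"
        then have a: "a < n" by simp
        have "R $$ (i,a) = cnj (R $$ (a,i))" using Rh R(1) i a by (metis adj_index carrier_matD(1) carrier_matD(2))
        moreover have "(P * R) $$ (a,i) = (P *\<^sub>v col R i) $ a"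
          using P(1) R(1) a i by simp
        ultimately show "R $$ (i,a) * (P * R) $$ (a,i) = cnj (col R i $ a) * (P *\<^sub>v col R i) $ a"
          using R(1) a i by simp
      qed
      also have "\<dots> = conjugate (col R i) \<bullet> (P *\<^sub>v col R i)" by (rule sprod_sum[OF c Pc, symmetric])
      finally show "(R * (P * R)) $$ (i,i) = conjugate (col R i) \<bullet> (P *\<^sub>v col R i)" .
    qed
    finally show ?thesis .
  qed
  finally have X: "trace_mat (P * Q) = (\<Sum>i<n. conjugate (col R i) \<bullet> (P *\<^sub>v col R i))" .
  show ?thesis unfolding X Re_sum
  proof (rule sum_nonneg)
    fix i assume "i \<in> {..<n}"
    have c: "col R i \<in> carrier_vec n" using R(1) by (intro carrier_vecI) simp
    show "0 \<le> Re (conjugate (col R i) \<bullet> (P *\<^sub>v col R i))" by (rule psdD[OF P(2) P(1) c])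
  qed
qed

lemma msum_meas: "is_measurement n Qs \<Longrightarrow> smat n (\<lambda>k. Qs ! k) {..<length Qs} = 1\<^sub>m n"
  unfolding is_measurement_def using msum_smat[of Qs n] by auto

lemma meas_nth: "is_measurement n Qs \<Longrightarrow> k < length Qs \<Longrightarrow> Qs ! k \<in> carrier_mat n n \<and> psd_mat (Qs ! k)"
  unfolding is_measurement_def by auto

lemma detect_prob_eq: "length rhos = m \<Longrightarrow>
  detect_prob (equal_priors m) rhos Qs = (\<Sum>i<m. Re (trace_mat (rhos ! i * Qs ! i)) / real m)"
  unfolding detect_prob_def equal_priors_def by (intro sum.cong refl) auto


lemma qf_lin: assumes A: "A \<in> carrier_mat n n" and B: "B \<in> carrier_mat n n" and x: "x \<in> carrier_vec n"
  shows "conjugate x \<bullet> ((c \<cdot>\<^sub>m A - B) *\<^sub>v x) = c * (conjugate x \<bullet> (A *\<^sub>v x)) - conjugate x \<bullet> (B *\<^sub>v (x :: complex vec))"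
proof -
  have C: "c \<cdot>\<^sub>m A - B \<in> carrier_mat n n" using B by (rule minus_carrier_mat)
  have c1: "(c \<cdot>\<^sub>m A - B) *\<^sub>v x \<in> carrier_vec n" using C by (rule mult_vec_carrier')
  have c2: "A *\<^sub>v x \<in> carrier_vec n" using A by (rule mult_vec_carrier')
  have c3: "B *\<^sub>v x \<in> carrier_vec n" using B by (rule mult_vec_carrier')
  have e: "((c \<cdot>\<^sub>m A - B) *\<^sub>v x) $ i = c * (A *\<^sub>v x) $ i - (B *\<^sub>v x) $ i" if i: "i < n" for i
    unfolding mult_vec_sum[OF C x i] mult_vec_sum[OF A x i] mult_vec_sum[OF B x i]
    using A B i by (simp add: sum_subtractf sum_distrib_left algebra_simps)
  show ?thesis unfolding sprod_sum[OF x c1] sprod_sum[OF x c2] sprod_sum[OF x c3]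
    by (simp add: e sum_subtractf sum_distrib_left algebra_simps)
qed

lemma qf_conj: assumes U: "U \<in> carrier_mat n n" and A: "A \<in> carrier_mat n n" and x: "x \<in> carrier_vec n"
  shows "conjugate x \<bullet> ((U * A * mat_adjoint U) *\<^sub>v x) = conjugate (mat_adjoint U *\<^sub>v x) \<bullet> (A *\<^sub>v (mat_adjoint U *\<^sub>v (x :: complex vec)))"
proof -
  have aU: "mat_adjoint U \<in> carrier_mat n n" using U by simp
  have c: "mat_adjoint U *\<^sub>v x \<in> carrier_vec n" using U by (rule adj_mult_vec_carrier)
  have c2: "A *\<^sub>v (mat_adjoint U *\<^sub>v x) \<in> carrier_vec n" using A by (rule mult_vec_carrier')
  have "(U * A * mat_adjoint U) *\<^sub>v x = U *\<^sub>v (A *\<^sub>v (mat_adjoint U *\<^sub>v x))"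
    using assoc_mult_mat_vec[OF mult_carrier_mat[OF U A] aU x] assoc_mult_mat_vec[OF U A c] by simp
  then show ?thesis using sprod_adj[OF U x c2] by simp
qed

lemma trace_lin: assumes A: "A \<in> carrier_mat n n" and B: "B \<in> carrier_mat n n" and Q: "Q \<in> carrier_mat n n"
  shows "trace_mat ((c \<cdot>\<^sub>m A - B) * Q) = c * trace_mat (A * Q) - trace_mat (B * (Q :: complex mat))"
proof -
  have C: "c \<cdot>\<^sub>m A - B \<in> carrier_mat n n" using B by (rule minus_carrier_mat)
  have "trace_mat ((c \<cdot>\<^sub>m A - B) * Q) = (\<Sum>i<n. \<Sum>k<n. (c * A $$ (i,k) - B $$ (i,k)) * Q $$ (k,i))"
    unfolding trace_mat_alt[OF mult_carrier_mat[OF C Q]]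
    by (intro sum.cong refl, subst mult_mat_sum[OF C Q], insert A B, auto)
  also have "\<dots> = c * (\<Sum>i<n. \<Sum>k<n. A $$ (i,k) * Q $$ (k,i)) - (\<Sum>i<n. \<Sum>k<n. B $$ (i,k) * Q $$ (k,i))"
    by (simp add: sum_subtractf sum_distrib_left algebra_simps)
  also have "\<dots> = c * trace_mat (A * Q) - trace_mat (B * Q)"
    unfolding trace_mat_alt[OF mult_carrier_mat[OF A Q]] trace_mat_alt[OF mult_carrier_mat[OF B Q]]
    by (simp add: mult_mat_sum[OF A Q] mult_mat_sum[OF B Q])
  finally show ?thesis .
qed

lemma smult_mat_vec: assumes A: "A \<in> carrier_mat a b" and v: "v \<in> carrier_vec b"
  shows "(c \<cdot>\<^sub>m A) *\<^sub>v v = c \<cdot>\<^sub>v (A *\<^sub>v (v :: complex vec))"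
  by (rule eq_vecI, insert A v, auto simp: scalar_prod_def sum_distrib_left ac_simps)

lemma smult_one_vec: assumes v: "v \<in> carrier_vec b"
  shows "(c \<cdot>\<^sub>m 1\<^sub>m b) *\<^sub>v v = c \<cdot>\<^sub>v (v :: complex vec)"
  using smult_mat_vec[OF one_carrier_mat v] v by simp

context gu_full
begin

lemma r_pos: "0 < r"
proof (rule ccontr)
  assume "\<not> 0 < r"
  then have r0: "r = 0" by simp
  have "rho = 0\<^sub>m n n"
  proof (rule eq_matI)
    fix i j assume "i < dim_row (0\<^sub>m n n :: complex mat)" "j < dim_col (0\<^sub>m n n :: complex mat)"
    then have i: "i < n" and j: "j < n" by auto
    show "rho $$ (i,j) = 0\<^sub>m n n $$ (i,j)"
      using mult_mat_sum[OF phi_dim adj_carrier[OF phi_dim] i j] r0 i j by simp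
  qed (insert phi_dim, auto)
  then have "trace_mat rho = 0" unfolding trace_mat_def by simp
  then show False using tr by simp
qed

lemma adj_mu: "mat_adjoint mu = mat_adjoint phi * T"
  using adj_mult[OF T_carrier phi_dim] T_herm by simp

abbreviation "K \<equiv> mat_adjoint phi * (T * phi)"

lemma K_carrier: "K \<in> carrier_mat r r"
  using mult_carrier_mat[OF adj_carrier[OF phi_dim] mult_carrier_mat[OF T_carrier phi_dim]] .

lemma adj_mu_phi: "mat_adjoint mu * phi = K"
  unfolding adj_mu using assoc_mult_mat[of "mat_adjoint phi" r n T n phi r] phi_dim T_carrier by simp

lemma M0_eq: "M0 = T * rho * T"
proof -
  have ap: "mat_adjoint phi \<in> carrier_mat r n" using phi_dim by simp
  have "M0 = (T * phi) * (mat_adjoint phi * T)" unfolding adj_mu ..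
  also have "\<dots> = T * (phi * (mat_adjoint phi * T))"
    using assoc_mult_mat[OF T_carrier phi_dim, of "mat_adjoint phi * T" n] ap T_carrier by simp
  also have "phi * (mat_adjoint phi * T) = rho * T"
    using assoc_mult_mat[OF phi_dim ap T_carrier] by simp
  also have "T * (rho * T) = T * rho * T"
    using assoc_mult_mat[OF T_carrier rho_carrier T_carrier] by simp
  finally show ?thesis .
qed

lemma Sig_meas: "is_measurement n Sig"
proof -
  have mem: "Sig ! k \<in> carrier_mat n n \<and> psd_mat (Sig ! k)" if k: "k < m" for k
  proof -
    have Uc: "Us ! k * mu \<in> carrier_mat n r" using U_carrier[OF nth_in[OF k]] mu_carrier by simp
    show ?thesis unfolding Sig_nth[OF k] using Uc psd_gram[OF Uc] by simp
  qed
  have all: "\<forall>P\<in>set Sig. P \<in> carrier_mat n n \<and> psd_mat P"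
    using mem Sig_len by (auto simp: in_set_conv_nth)
  have "msum n Sig = smat n (\<lambda>k. Sig ! k) {..<m}"
    using msum_smat[of Sig n] all Sig_len by simp
  also have "\<dots> = smat n (\<lambda>k. Us ! k * M0 * mat_adjoint (Us ! k)) {..<m}"
    by (rule smat_cong, simp add: Sig_conj)
  also have "\<dots> = smat n (\<lambda>V. V * M0 * mat_adjoint V) (set Us)" by (rule smat_Us)
  also have "\<dots> = smat n (\<lambda>V. T * (V * rho * mat_adjoint V) * T) (set Us)"
  proof (rule smat_cong)
    fix V assume V: "V \<in> set Us"
    have aV: "mat_adjoint V \<in> set Us" using inv_closed V by simp
    note c = U_carrier[OF V] aU_carrier[OF V] T_carrier rho_carrier
    have "V * M0 * mat_adjoint V = (V * T) * rho * (T * mat_adjoint V)"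
      unfolding M0_eq using c by (simp add: assoc_mult_mat[of _ n n _ n _ n] mc)
    also have "\<dots> = (T * V) * rho * (mat_adjoint V * T)" unfolding T_comm[OF V] T_comm[OF aV] ..
    also have "\<dots> = T * (V * rho * mat_adjoint V) * T"
      using c by (simp add: assoc_mult_mat[of _ n n _ n _ n] mc)
    finally show "V * M0 * mat_adjoint V = T * (V * rho * mat_adjoint V) * T" .
  qed
  also have "\<dots> = T * G * T"
  proof -
    have Fc: "\<And>V. V \<in> set Us \<Longrightarrow> V * rho * mat_adjoint V \<in> carrier_mat n n"
      using U_carrier rho_carrier conj_carrier by blast
    have "T * G = smat n (\<lambda>V. T * (V * rho * mat_adjoint V)) (set Us)"
      by (rule smat_mult_left[OF T_carrier Fc finite_set])
    moreover have "smat n (\<lambda>V. T * (V * rho * mat_adjoint V)) (set Us) * T = smat n (\<lambda>V. T * (V * rho * mat_adjoint V) * T) (set Us)"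
      by (rule smat_mult_right[OF T_carrier _ finite_set], rule mc[OF T_carrier Fc])
    ultimately show ?thesis by simp
  qed
  also have "\<dots> = 1\<^sub>m n" by (rule TGT)
  finally show ?thesis unfolding is_measurement_def using all by simp
qed

lemma alpha_real: assumes K: "K = \<alpha> \<cdot>\<^sub>m 1\<^sub>m r"
  shows "\<alpha> = complex_of_real (Re \<alpha>) \<and> 0 \<le> Re \<alpha>"
proof -
  let ?e = "unit_vec r 0 :: complex vec"
  have e: "?e \<in> carrier_vec r" by simp
  have ce: "conjugate ?e = ?e" by (rule eq_vecI) auto
  have ee: "conjugate ?e \<bullet> ?e = 1" unfolding ce using r_pos e by simp
  have ap: "mat_adjoint phi \<in> carrier_mat r n" using phi_dim by simp
  let ?c = "phi *\<^sub>v ?e"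
  have c: "?c \<in> carrier_vec n" using phi_dim by (rule mult_vec_carrier')
  have Tc: "T *\<^sub>v ?c \<in> carrier_vec n" using T_carrier by (rule mult_vec_carrier')
  have "conjugate ?c \<bullet> (T *\<^sub>v ?c) = conjugate ?e \<bullet> (mat_adjoint phi *\<^sub>v (T *\<^sub>v ?c))"
    using sprod_adj[OF ap e Tc] by simp
  also have "mat_adjoint phi *\<^sub>v (T *\<^sub>v ?c) = K *\<^sub>v ?e"
    using assoc_mult_mat_vec[OF ap mult_carrier_mat[OF T_carrier phi_dim] e]
      assoc_mult_mat_vec[OF T_carrier phi_dim e] by simp
  also have "\<dots> = \<alpha> \<cdot>\<^sub>v ?e" unfolding K by (rule smult_one_vec[OF e])
  also have "conjugate ?e \<bullet> (\<alpha> \<cdot>\<^sub>v ?e) = \<alpha>" using ee e by simp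
  finally have q: "conjugate ?c \<bullet> (T *\<^sub>v ?c) = \<alpha>" .
  have "cnj \<alpha> = \<alpha>" using qf_real[OF T_carrier T_herm c] q by simp
  then have "\<alpha> = complex_of_real (Re \<alpha>)" by (metis complex_cnj_cancel_iff complex_is_Real_iff Reals_cnj_iff of_real_Re)
  moreover have "0 \<le> Re \<alpha>" using psdD[OF T_psd T_carrier c] q by simp
  ultimately show ?thesis by simp
qed

lemma rho_le: assumes K: "K = complex_of_real a \<cdot>\<^sub>m 1\<^sub>m r" and a: "0 \<le> a" and x: "x \<in> carrier_vec n"
  shows "Re (conjugate x \<bullet> (rho *\<^sub>v x)) \<le> a * Re (conjugate x \<bullet> (S *\<^sub>v x))"
proof -
  have ap: "mat_adjoint phi \<in> carrier_mat r n" using phi_dim by simp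
  define v where "v = S *\<^sub>v x"
  define y where "y = mat_adjoint phi *\<^sub>v x"
  define w where "w = phi *\<^sub>v y"
  have v: "v \<in> carrier_vec n" unfolding v_def using S_carrier by (rule mult_vec_carrier')
  have y: "y \<in> carrier_vec r" unfolding y_def using phi_dim by (rule adj_mult_vec_carrier)
  have w: "w \<in> carrier_vec n" unfolding w_def using phi_dim by (rule mult_vec_carrier')
  have Tv: "T *\<^sub>v v = x" unfolding v_def using assoc_mult_mat_vec[OF T_carrier S_carrier x] TS x by simp
  define bb where "bb = conjugate y \<bullet> y"
  define b where "b = (\<Sum>i<r. (cmod (y $ i))\<^sup>2)"
  have bb: "bb = complex_of_real b" unfolding bb_def b_def by (rule vnorm[OF y])
  have b0: "0 \<le> b" unfolding b_def by (simp add: sum_nonneg)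
  have i1: "conjugate v \<bullet> (T *\<^sub>v w) = bb"
  proof -
    have "conjugate v \<bullet> (T *\<^sub>v w) = conjugate (T *\<^sub>v v) \<bullet> w" using sprod_adj[OF T_carrier v w] T_herm by simp
    also have "\<dots> = conjugate x \<bullet> (phi *\<^sub>v y)" unfolding Tv w_def ..
    also have "\<dots> = bb" unfolding bb_def using sprod_adj[OF phi_dim x y] y_def by simp
    finally show ?thesis .
  qed
  have i2: "conjugate w \<bullet> (T *\<^sub>v v) = bb"
  proof -
    have "conjugate w \<bullet> (T *\<^sub>v v) = cnj (conjugate v \<bullet> (T *\<^sub>v w))"
      using cnj_sprod[OF mult_vec_carrier'[OF T_carrier] w, of v] sprod_adj[OF T_carrier v w] T_herm
      by (simp add: Tv cnj_sprod[OF x w])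
    also have "\<dots> = bb" unfolding i1 bb by simp
    finally show ?thesis .
  qed
  have i3: "conjugate w \<bullet> (T *\<^sub>v w) = complex_of_real a * bb"
  proof -
    have Tw: "T *\<^sub>v w \<in> carrier_vec n" using T_carrier by (rule mult_vec_carrier')
    have "conjugate w \<bullet> (T *\<^sub>v w) = conjugate y \<bullet> (mat_adjoint phi *\<^sub>v (T *\<^sub>v w))"
      unfolding w_def using sprod_adj[OF ap y Tw] unfolding w_def by simp
    also have "mat_adjoint phi *\<^sub>v (T *\<^sub>v w) = K *\<^sub>v y"
      unfolding w_def using assoc_mult_mat_vec[OF ap mult_carrier_mat[OF T_carrier phi_dim] y]
        assoc_mult_mat_vec[OF T_carrier phi_dim y] by simp
    also have "\<dots> = complex_of_real a \<cdot>\<^sub>v y" unfolding K by (rule smult_one_vec[OF y])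
    also have "conjugate y \<bullet> (complex_of_real a \<cdot>\<^sub>v y) = complex_of_real a * bb" unfolding bb_def using y by simp
    finally show ?thesis .
  qed
  have i0: "conjugate v \<bullet> (T *\<^sub>v v) = conjugate x \<bullet> (S *\<^sub>v x)"
  proof -
    have "conjugate v \<bullet> (T *\<^sub>v v) = cnj (conjugate x \<bullet> v)" unfolding Tv using cnj_sprod[OF x v] by simp
    also have "\<dots> = conjugate x \<bullet> v" unfolding v_def by (rule qf_real[OF S_carrier S_herm x])
    finally show ?thesis unfolding v_def .
  qed
  have qr: "conjugate x \<bullet> (rho *\<^sub>v x) = bb"
  proof -
    have "rho *\<^sub>v x = phi *\<^sub>v y" unfolding y_def using assoc_mult_mat_vec[OF phi_dim ap x] by simp
    then show ?thesis unfolding bb_def using sprod_adj[OF phi_dim x y] y_def by simp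
  qed
  have "0 \<le> Re (conjugate x \<bullet> (S *\<^sub>v x)) - 2 * t * b + t^2 * a * b" for t :: real
  proof -
    let ?c = "complex_of_real t"
    have z: "v - ?c \<cdot>\<^sub>v w \<in> carrier_vec n" using v w by simp
    have "0 \<le> Re (conjugate (v - ?c \<cdot>\<^sub>v w) \<bullet> (T *\<^sub>v (v - ?c \<cdot>\<^sub>v w)))" by (rule psdD[OF T_psd T_carrier z])
    also have "conjugate (v - ?c \<cdot>\<^sub>v w) \<bullet> (T *\<^sub>v (v - ?c \<cdot>\<^sub>v w)) =
       conjugate x \<bullet> (S *\<^sub>v x) - ?c * bb - ?c * bb + ?c * ?c * (complex_of_real a * bb)"
      unfolding qf_diff[OF T_carrier v w] i0 i1 i2 i3 by simp
    finally show ?thesis unfolding bb by (simp add: power2_eq_square algebra_simps)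
  qed
  then have "b \<le> a * Re (conjugate x \<bullet> (S *\<^sub>v x))" by (rule quad_ineq[OF _ a b0])
  then show ?thesis unfolding qr bb by simp
qed

end


context gu_full
begin

lemma rhos_k: "k < m \<Longrightarrow> rhos ! k = Us ! k * rho * mat_adjoint (Us ! k)"
  using len by simp

lemma rhos_carrier: "k < m \<Longrightarrow> rhos ! k \<in> carrier_mat n n"
  unfolding rhos_k by (rule conj_carrier[OF U_carrier[OF nth_in] rho_carrier])

lemma rhos_psd: "k < m \<Longrightarrow> psd_mat (rhos ! k)"
  unfolding rhos_k by (rule psd_conj[OF rho_psd rho_carrier U_carrier[OF nth_in]])

lemma D_psd: assumes K: "K = complex_of_real a \<cdot>\<^sub>m 1\<^sub>m r" and a: "0 \<le> a" and k: "k < m"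
  shows "psd_mat (complex_of_real a \<cdot>\<^sub>m S - rhos ! k)"
proof (rule psdI)
  let ?U = "Us ! k"
  have U: "?U \<in> set Us" by (rule nth_in[OF k])
  note Uc = U_carrier[OF U]
  have Sc: "complex_of_real a \<cdot>\<^sub>m S \<in> carrier_mat n n" using S_carrier by simp
  show "complex_of_real a \<cdot>\<^sub>m S - rhos ! k \<in> carrier_mat n n" using rhos_carrier[OF k] by (rule minus_carrier_mat)
  have rh: "mat_adjoint (rhos ! k) = rhos ! k" using rhos_psd[OF k] by (simp add: psd_herm hermD)
  show "mat_adjoint (complex_of_real a \<cdot>\<^sub>m S - rhos ! k) = complex_of_real a \<cdot>\<^sub>m S - rhos ! k"
    unfolding adj_minus[OF Sc rhos_carrier[OF k]] rh using S_herm by simp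
  fix x :: "complex vec" assume x: "x \<in> carrier_vec n"
  let ?y = "mat_adjoint ?U *\<^sub>v x"
  have y: "?y \<in> carrier_vec n" using Uc by (rule adj_mult_vec_carrier)
  have "conjugate x \<bullet> ((complex_of_real a \<cdot>\<^sub>m S - rhos ! k) *\<^sub>v x) =
     complex_of_real a * (conjugate x \<bullet> (S *\<^sub>v x)) - conjugate x \<bullet> (rhos ! k *\<^sub>v x)"
    by (rule qf_lin[OF S_carrier rhos_carrier[OF k] x])
  also have "conjugate x \<bullet> (S *\<^sub>v x) = conjugate ?y \<bullet> (S *\<^sub>v ?y)"
    using qf_conj[OF Uc S_carrier x] S_conj[OF U] by simp
  also have "conjugate x \<bullet> (rhos ! k *\<^sub>v x) = conjugate ?y \<bullet> (rho *\<^sub>v ?y)"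
    unfolding rhos_k[OF k] by (rule qf_conj[OF Uc rho_carrier x])
  finally show "0 \<le> Re (conjugate x \<bullet> ((complex_of_real a \<cdot>\<^sub>m S - rhos ! k) *\<^sub>v x))"
    using rho_le[OF K a y] by simp
qed

lemma opt_bound: assumes K: "K = complex_of_real a \<cdot>\<^sub>m 1\<^sub>m r" and a: "0 \<le> a"
  and Q: "is_measurement n Qs" and lQ: "length Qs = m"
  shows "detect_prob (equal_priors m) rhos Qs \<le> a * Re (trace_mat S) / real m"
proof -
  have Qk: "Qs ! k \<in> carrier_mat n n \<and> psd_mat (Qs ! k)" if "k < m" for k
    using meas_nth[OF Q] that lQ by simp
  have each: "Re (trace_mat (rhos ! k * Qs ! k)) \<le> a * Re (trace_mat (S * Qs ! k))" if k: "k < m" for k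
  proof -
    have Dc: "complex_of_real a \<cdot>\<^sub>m S - rhos ! k \<in> carrier_mat n n" using rhos_carrier[OF k] by (rule minus_carrier_mat)
    have "0 \<le> Re (trace_mat ((complex_of_real a \<cdot>\<^sub>m S - rhos ! k) * Qs ! k))"
      by (rule tr_psd[OF Dc D_psd[OF K a k]], insert Qk[OF k], auto)
    also have "trace_mat ((complex_of_real a \<cdot>\<^sub>m S - rhos ! k) * Qs ! k) =
      complex_of_real a * trace_mat (S * Qs ! k) - trace_mat (rhos ! k * Qs ! k)"
      by (rule trace_lin[OF S_carrier rhos_carrier[OF k]], insert Qk[OF k], auto)
    finally show ?thesis by simp
  qed
  have sumS: "(\<Sum>k<m. trace_mat (S * Qs ! k)) = trace_mat S"
  proof -
    have "S * smat n (\<lambda>k. Qs ! k) {..<m} = smat n (\<lambda>k. S * Qs ! k) {..<m}"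
      by (rule smat_mult_left[OF S_carrier], insert Qk, auto)
    moreover have "smat n (\<lambda>k. Qs ! k) {..<m} = 1\<^sub>m n" using msum_meas[OF Q] lQ by simp
    ultimately have "smat n (\<lambda>k. S * Qs ! k) {..<m} = S" using S_carrier by simp
    then have "trace_mat S = trace_mat (smat n (\<lambda>k. S * Qs ! k) {..<m})" by simp
    also have "\<dots> = (\<Sum>k<m. trace_mat (S * Qs ! k))"
      by (rule smat_trace, insert Qk S_carrier, auto)
    finally show ?thesis by simp
  qed
  have "detect_prob (equal_priors m) rhos Qs = (\<Sum>k<m. Re (trace_mat (rhos ! k * Qs ! k)) / real m)"
    by (rule detect_prob_eq, simp add: len)
  also have "\<dots> \<le> (\<Sum>k<m. a * Re (trace_mat (S * Qs ! k)) / real m)"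
    by (rule sum_mono, insert each m_pos, auto simp: divide_right_mono)
  also have "\<dots> = a * Re (\<Sum>k<m. trace_mat (S * Qs ! k)) / real m"
    by (simp add: Re_sum sum_divide_distrib[symmetric] sum_distrib_left)
  finally show ?thesis unfolding sumS .
qed

lemma trK_rho: "trace_mat (T * rho) = trace_mat K"
proof -
  have ap: "mat_adjoint phi \<in> carrier_mat r n" using phi_dim by simp
  have Tp: "T * phi \<in> carrier_mat n r" using T_carrier phi_dim by simp
  have "T * rho = (T * phi) * mat_adjoint phi" using assoc_mult_mat[OF T_carrier phi_dim ap] by simp
  then have "trace_mat (T * rho) = trace_mat ((T * phi) * mat_adjoint phi)" by simp
  also have "\<dots> = trace_mat (mat_adjoint phi * (T * phi))" by (rule trace_comm[OF Tp ap])
  finally show ?thesis .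
qed

lemma trS: "trace_mat S = of_nat m * trace_mat K"
proof -
  have Fc: "\<And>V. V \<in> set Us \<Longrightarrow> V * rho * mat_adjoint V \<in> carrier_mat n n"
    using U_carrier rho_carrier conj_carrier by blast
  have "trace_mat S = trace_mat (T * G)" unfolding TG ..
  also have "T * G = smat n (\<lambda>V. T * (V * rho * mat_adjoint V)) (set Us)"
    by (rule smat_mult_left[OF T_carrier Fc finite_set])
  also have "trace_mat \<dots> = (\<Sum>V\<in>set Us. trace_mat (T * (V * rho * mat_adjoint V)))"
    by (rule smat_trace, rule mc[OF T_carrier Fc])
  also have "\<dots> = (\<Sum>V\<in>set Us. trace_mat (T * rho))"
  proof (intro sum.cong refl)
    fix V assume V: "V \<in> set Us"
    note c = U_carrier[OF V] aU_carrier[OF V] T_carrier rho_carrier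
    have TR: "T * rho \<in> carrier_mat n n" using c by simp
    have "T * (V * rho * mat_adjoint V) = (T * V) * rho * mat_adjoint V"
      using c by (simp add: assoc_mult_mat[of _ n n _ n _ n] mc)
    also have "\<dots> = (V * T) * rho * mat_adjoint V" unfolding T_comm[OF V] ..
    also have "\<dots> = V * (T * rho) * mat_adjoint V" using c by (simp add: assoc_mult_mat[of _ n n _ n _ n] mc)
    finally have "trace_mat (T * (V * rho * mat_adjoint V)) = trace_mat ((V * (T * rho)) * mat_adjoint V)" by simp
    also have "\<dots> = trace_mat (mat_adjoint V * (V * (T * rho)))" by (rule trace_comm[of _ n n], insert c TR, auto)
    also have "mat_adjoint V * (V * (T * rho)) = T * rho"
      using assoc_mult_mat[OF aU_carrier[OF V] U_carrier[OF V] TR] UaU[OF V] left_mult_one_mat[OF TR] by simp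
    finally show "trace_mat (T * (V * rho * mat_adjoint V)) = trace_mat (T * rho)" .
  qed
  also have "\<dots> = of_nat m * trace_mat (T * rho)" using distinct_card[OF dist] len by simp
  finally show ?thesis unfolding trK_rho .
qed

lemma trRM: assumes K: "K = \<alpha> \<cdot>\<^sub>m 1\<^sub>m r"
  shows "trace_mat (rho * M0) = \<alpha> * trace_mat K"
proof -
  have ap: "mat_adjoint phi \<in> carrier_mat r n" using phi_dim by simp
  have am: "mat_adjoint mu \<in> carrier_mat r n" using mu_carrier by simp
  have "rho * M0 = phi * (mat_adjoint phi * M0)"
    using assoc_mult_mat[OF phi_dim ap M0_carrier] by simp
  also have "mat_adjoint phi * M0 = (mat_adjoint phi * mu) * mat_adjoint mu"
    using assoc_mult_mat[OF ap mu_carrier am] by simp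
  also have "mat_adjoint phi * mu = \<alpha> \<cdot>\<^sub>m 1\<^sub>m r" using K by simp
  also have "(\<alpha> \<cdot>\<^sub>m 1\<^sub>m r) * mat_adjoint mu = \<alpha> \<cdot>\<^sub>m mat_adjoint mu"
    using am by (simp add: mult_smult_assoc_mat[of _ r r _ n] left_mult_one_mat[OF am])
  also have "phi * (\<alpha> \<cdot>\<^sub>m mat_adjoint mu) = \<alpha> \<cdot>\<^sub>m (phi * mat_adjoint mu)"
    using am phi_dim by (simp add: mult_smult_distrib[of _ n r _ n])
  finally have "trace_mat (rho * M0) = \<alpha> * trace_mat (phi * mat_adjoint mu)"
    using trace_smult[of "phi * mat_adjoint mu" n] phi_dim am by simp
  also have "trace_mat (phi * mat_adjoint mu) = trace_mat (mat_adjoint mu * phi)" by (rule trace_comm[OF phi_dim am])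
  also have "\<dots> = trace_mat K" unfolding adj_mu_phi ..
  finally show ?thesis .
qed

lemma detect_Sig: "detect_prob (equal_priors m) rhos Sig = Re (trace_mat (rho * M0))"
proof -
  have "detect_prob (equal_priors m) rhos Sig = (\<Sum>k<m. Re (trace_mat (rhos ! k * Sig ! k)) / real m)"
    by (rule detect_prob_eq, simp add: len)
  also have "\<dots> = (\<Sum>k<m. Re (trace_mat (rho * M0)) / real m)"
    by (intro sum.cong refl) (simp add: trace_const)
  also have "\<dots> = Re (trace_mat (rho * M0))" using m_pos by simp
  finally show ?thesis .
qed

lemma opt_alpha: assumes K: "mat_adjoint mu * phi = \<alpha> \<cdot>\<^sub>m 1\<^sub>m r"
  shows "optimal_measurement n (equal_priors m) rhos Sig"
proof -
  have K': "K = \<alpha> \<cdot>\<^sub>m 1\<^sub>m r" using K adj_mu_phi by simp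
  obtain a where aa: "\<alpha> = complex_of_real a" and a: "0 \<le> a" using alpha_real[OF K'] by blast
  have K2: "K = complex_of_real a \<cdot>\<^sub>m 1\<^sub>m r" using K' aa by simp
  have trK: "trace_mat K = complex_of_real a * of_nat r"
    unfolding K2 trace_smult[OF one_carrier_mat] trace_one by simp
  have dS: "detect_prob (equal_priors m) rhos Sig = a * a * real r"
    unfolding detect_Sig trRM[OF K'] trK aa by simp
  show ?thesis unfolding optimal_measurement_def
  proof (intro conjI allI impI)
    show "length Sig = length rhos" using Sig_len len by simp
    show "is_measurement n Sig" by (rule Sig_meas)
    fix Qs assume "length Qs = length rhos \<and> is_measurement n Qs"
    then have lQ: "length Qs = m" and Q: "is_measurement n Qs" using len by auto
    have "detect_prob (equal_priors m) rhos Qs \<le> a * Re (trace_mat S) / real m"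
      by (rule opt_bound[OF K2 a Q lQ])
    also have "\<dots> = a * a * real r" unfolding trS trK using m_pos by simp
    finally show "detect_prob (equal_priors m) rhos Qs \<le> detect_prob (equal_priors m) rhos Sig" unfolding dS .
  qed
qed

lemma opt_r1: assumes r1: "r = 1"
  shows "optimal_measurement n (equal_priors m) rhos Sig"
proof -
  have c: "mat_adjoint mu * phi \<in> carrier_mat r r" using mult_carrier_mat[OF adj_carrier[OF mu_carrier] phi_dim] .
  have "mat_adjoint mu * phi = (mat_adjoint mu * phi) $$ (0,0) \<cdot>\<^sub>m 1\<^sub>m r"
    by (rule eq_matI, insert c r1, auto)
  then show ?thesis by (rule opt_alpha)
qed

end


lemma smat_swap: "smat n (\<lambda>i. smat n (\<lambda>j. H i j) J) I = smat n (\<lambda>j. smat n (\<lambda>i. H i j) I) J"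
  unfolding smat_def by (rule eq_matI) (auto simp: sum.swap[of _ I])

context gu_setup
begin

definition twirl :: "complex mat \<Rightarrow> complex mat" where
  "twirl X = smat n (\<lambda>V. V * X * mat_adjoint V) (set Us)"

lemma twirl_Us: "smat n (\<lambda>k. Us ! k * X * mat_adjoint (Us ! k)) {..<m} = twirl X"
  unfolding twirl_def by (rule smat_Us)

lemma twirl_smat: assumes F: "\<And>k. k \<in> K \<Longrightarrow> F k \<in> carrier_mat n n" and K: "finite K"
  shows "twirl (smat n F K) = smat n (\<lambda>k. twirl (F k)) K"
proof -
  have "twirl (smat n F K) = smat n (\<lambda>V. smat n (\<lambda>k. V * F k * mat_adjoint V) K) (set Us)"
    unfolding twirl_def
  proof (rule smat_cong)
    fix V assume V: "V \<in> set Us"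
    note c = U_carrier[OF V] aU_carrier[OF V]
    have "V * smat n F K = smat n (\<lambda>k. V * F k) K" by (rule smat_mult_left[OF c(1) F K])
    then have "V * smat n F K * mat_adjoint V = smat n (\<lambda>k. V * F k) K * mat_adjoint V" by simp
    also have "\<dots> = smat n (\<lambda>k. V * F k * mat_adjoint V) K"
      by (rule smat_mult_right[OF c(2) _ K], rule mc[OF c(1) F])
    finally show "V * smat n F K * mat_adjoint V = smat n (\<lambda>k. V * F k * mat_adjoint V) K" .
  qed
  also have "\<dots> = smat n (\<lambda>k. twirl (F k)) K" unfolding twirl_def by (rule smat_swap)
  finally show ?thesis .
qed

lemma twirl_conj: assumes W: "W \<in> set Us" and X: "X \<in> carrier_mat n n"
  shows "twirl (mat_adjoint W * X * W) = twirl X"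
proof -
  have aW: "mat_adjoint W \<in> set Us" using inv_closed W by simp
  have "twirl (mat_adjoint W * X * W) = smat n (\<lambda>V. (V * mat_adjoint W) * X * mat_adjoint (V * mat_adjoint W)) (set Us)"
    unfolding twirl_def
  proof (rule smat_cong)
    fix V assume V: "V \<in> set Us"
    note c = U_carrier[OF V] aU_carrier[OF V] U_carrier[OF W] aU_carrier[OF W] X
    have "mat_adjoint (V * mat_adjoint W) = W * mat_adjoint V"
      using adj_prod[OF c(1) c(4)] by simp
    then show "V * (mat_adjoint W * X * W) * mat_adjoint V = (V * mat_adjoint W) * X * mat_adjoint (V * mat_adjoint W)"
      using c by (simp add: assoc_mult_mat[of _ n n _ n _ n] mc)
  qed
  also have "\<dots> = twirl X" unfolding twirl_def by (rule smat_shift_right[OF aW, where F="\<lambda>V. V * X * mat_adjoint V"])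
  finally show ?thesis .
qed

lemma twirl_smult: assumes X: "X \<in> carrier_mat n n" shows "twirl (c \<cdot>\<^sub>m X) = c \<cdot>\<^sub>m twirl X"
  unfolding twirl_def
proof (subst smat_smult)
  show "\<And>V. V \<in> set Us \<Longrightarrow> V * X * mat_adjoint V \<in> carrier_mat n n" using U_carrier X conj_carrier by blast
  show "smat n (\<lambda>V. V * (c \<cdot>\<^sub>m X) * mat_adjoint V) (set Us) = smat n (\<lambda>k. c \<cdot>\<^sub>m (k * X * mat_adjoint k)) (set Us)"
  proof (rule smat_cong)
    fix V assume V: "V \<in> set Us"
    note cc = U_carrier[OF V] aU_carrier[OF V] X
    show "V * (c \<cdot>\<^sub>m X) * mat_adjoint V = c \<cdot>\<^sub>m (V * X * mat_adjoint V)"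
      using cc by (simp add: mult_smult_distrib[of _ n n _ n] mult_smult_assoc_mat[of _ n n _ n] mc)
  qed
qed

lemma twirl_one: "twirl (1\<^sub>m n) = of_nat m \<cdot>\<^sub>m 1\<^sub>m n"
proof -
  have "twirl (1\<^sub>m n) = smat n (\<lambda>V. 1\<^sub>m n) (set Us)"
    unfolding twirl_def
  proof (rule smat_cong)
    fix V assume V: "V \<in> set Us"
    show "V * 1\<^sub>m n * mat_adjoint V = 1\<^sub>m n" using right_mult_one_mat[OF U_carrier[OF V]] UUa[OF V] by simp
  qed
  also have "\<dots> = of_nat m \<cdot>\<^sub>m 1\<^sub>m n" using smat_const[OF one_carrier_mat, of n "set Us"] distinct_card[OF dist] len by simp
  finally show ?thesis .
qed

lemma twirl_carrier: "twirl X \<in> carrier_mat n n" unfolding twirl_def by simp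

end

context gu_full
begin

lemma GU_opt: assumes P: "GU_maximizer n Us rho P"
  shows "optimal_measurement n (equal_priors m) rhos (map (\<lambda>U. U * P * mat_adjoint U) Us)"
proof -
  have Pf: "GU_feasible n Us P" and Pmax: "\<And>Q. GU_feasible n Us Q \<Longrightarrow> Re (trace_mat (rho * Q)) \<le> Re (trace_mat (rho * P))"
    using P unfolding GU_maximizer_def by auto
  have Pc: "P \<in> carrier_mat n n" and Pp: "psd_mat P" and Psum: "msum n (map (\<lambda>U. U * P * mat_adjoint U) Us) = 1\<^sub>m n"
    using Pf unfolding GU_feasible_def by auto
  let ?Pi = "map (\<lambda>U. U * P * mat_adjoint U) Us"
  have Pimeas: "is_measurement n ?Pi" unfolding is_measurement_def
    using Psum conj_carrier[OF U_carrier Pc] psd_conj[OF Pp Pc U_carrier] by auto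
  have dPi: "detect_prob (equal_priors m) rhos ?Pi = Re (trace_mat (rho * P))"
  proof -
    have "detect_prob (equal_priors m) rhos ?Pi = (\<Sum>k<m. Re (trace_mat (rhos ! k * ?Pi ! k)) / real m)"
      by (rule detect_prob_eq, simp add: len)
    also have "\<dots> = (\<Sum>k<m. Re (trace_mat (rho * P)) / real m)"
    proof (intro sum.cong refl)
      fix k assume "k \<in> {..<m}"
      then have k: "k < m" by simp
      let ?U = "Us ! k"
      have U: "?U \<in> set Us" by (rule nth_in[OF k])
      note c = U_carrier[OF U] aU_carrier[OF U] rho_carrier Pc
      have RP: "rho * P \<in> carrier_mat n n" using c by simp
      have "rhos ! k * ?Pi ! k = ?U * (rho * P) * mat_adjoint ?U"
        using k len conj_mult[OF U rho_carrier Pc] by simp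
      then have "trace_mat (rhos ! k * ?Pi ! k) = trace_mat ((?U * (rho * P)) * mat_adjoint ?U)" by simp
      also have "\<dots> = trace_mat (mat_adjoint ?U * (?U * (rho * P)))" by (rule trace_comm[of _ n n], insert c RP, auto)
      also have "mat_adjoint ?U * (?U * (rho * P)) = rho * P"
        using assoc_mult_mat[OF c(2) c(1) RP] UaU[OF U] left_mult_one_mat[OF RP] by simp
      finally show "Re (trace_mat (rhos ! k * ?Pi ! k)) / real m = Re (trace_mat (rho * P)) / real m" by simp
    qed
    also have "\<dots> = Re (trace_mat (rho * P))" using m_pos by simp
    finally show ?thesis .
  qed
  show ?thesis unfolding optimal_measurement_def
  proof (intro conjI allI impI)
    show "length ?Pi = length rhos" by simp
    show "is_measurement n ?Pi" by (rule Pimeas)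
    fix Qs assume "length Qs = length rhos \<and> is_measurement n Qs"
    then have lQ: "length Qs = m" and Q: "is_measurement n Qs" using len by auto
    have Qk: "Qs ! k \<in> carrier_mat n n \<and> psd_mat (Qs ! k)" if "k < m" for k
      using meas_nth[OF Q] that lQ by simp
    define F where "F = (\<lambda>k. complex_of_real (1 / real m) \<cdot>\<^sub>m (mat_adjoint (Us ! k) * Qs ! k * Us ! k))"
    define PQ where "PQ = smat n F {..<m}"
    have Fc: "F k \<in> carrier_mat n n" if k: "k < m" for k
    proof -
      have "mat_adjoint (Us ! k) * Qs ! k * Us ! k \<in> carrier_mat n n"
        using conj_carrier[OF aU_carrier[OF nth_in[OF k]] conjunct1[OF Qk[OF k]]] by simp
      then show ?thesis unfolding F_def by simp
    qed
    have Fp: "psd_mat (F k)" if k: "k < m" for k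
    proof -
      have "psd_mat (mat_adjoint (Us ! k) * Qs ! k * mat_adjoint (mat_adjoint (Us ! k)))"
        by (rule psd_conj[OF conjunct2[OF Qk[OF k]] conjunct1[OF Qk[OF k]] aU_carrier[OF nth_in[OF k]]])
      then have "psd_mat (mat_adjoint (Us ! k) * Qs ! k * Us ! k)" by simp
      then show ?thesis unfolding F_def
        by (rule psd_scale, insert conj_carrier[OF aU_carrier[OF nth_in[OF k]] conjunct1[OF Qk[OF k]]], auto)
    qed
    have PQc: "PQ \<in> carrier_mat n n" unfolding PQ_def by simp
    have PQp: "psd_mat PQ" unfolding PQ_def by (rule psd_smat, insert Fc Fp, auto)
    have tw: "twirl PQ = 1\<^sub>m n"
    proof -
      have "twirl PQ = smat n (\<lambda>k. twirl (F k)) {..<m}" unfolding PQ_def by (rule twirl_smat, insert Fc, auto)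
      also have "\<dots> = smat n (\<lambda>k. complex_of_real (1 / real m) \<cdot>\<^sub>m twirl (Qs ! k)) {..<m}"
      proof (rule smat_cong)
        fix k assume "k \<in> {..<m}"
        then have k: "k < m" by simp
        have c1: "mat_adjoint (Us ! k) * Qs ! k * Us ! k \<in> carrier_mat n n"
          using conj_carrier[OF aU_carrier[OF nth_in[OF k]] conjunct1[OF Qk[OF k]]] by simp
        show "twirl (F k) = complex_of_real (1 / real m) \<cdot>\<^sub>m twirl (Qs ! k)"
          unfolding F_def twirl_smult[OF c1] twirl_conj[OF nth_in[OF k] conjunct1[OF Qk[OF k]]] ..
      qed
      also have "\<dots> = complex_of_real (1 / real m) \<cdot>\<^sub>m smat n (\<lambda>k. twirl (Qs ! k)) {..<m}"
        by (rule smat_smult[symmetric], rule twirl_carrier)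
      also have "smat n (\<lambda>k. twirl (Qs ! k)) {..<m} = twirl (smat n (\<lambda>k. Qs ! k) {..<m})"
        by (rule twirl_smat[symmetric], insert Qk, auto)
      also have "smat n (\<lambda>k. Qs ! k) {..<m} = 1\<^sub>m n" using msum_meas[OF Q] lQ by simp
      also have "complex_of_real (1 / real m) \<cdot>\<^sub>m twirl (1\<^sub>m n) = 1\<^sub>m n"
        unfolding twirl_one smult_smult_mat using m_pos by simp
      finally show ?thesis .
    qed
    have PQf: "GU_feasible n Us PQ" unfolding GU_feasible_def
    proof (intro conjI)
      show "PQ \<in> carrier_mat n n" by (rule PQc)
      show "hermitian_mat PQ" using PQp by (rule psd_herm)
      show "psd_mat PQ" by (rule PQp)
      have "msum n (map (\<lambda>U. U * PQ * mat_adjoint U) Us) = smat n (\<lambda>k. Us ! k * PQ * mat_adjoint (Us ! k)) {..<m}"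
        using msum_smat[of "map (\<lambda>U. U * PQ * mat_adjoint U) Us" n] conj_carrier[OF U_carrier PQc] len
        by (auto intro!: smat_cong)
      also have "\<dots> = twirl PQ" by (rule twirl_Us)
      finally show "msum n (map (\<lambda>U. U * PQ * mat_adjoint U) Us) = 1\<^sub>m n" unfolding tw .
    qed
    have dQ: "detect_prob (equal_priors m) rhos Qs = Re (trace_mat (rho * PQ))"
    proof -
      have "rho * PQ = smat n (\<lambda>k. rho * F k) {..<m}" unfolding PQ_def
        by (rule smat_mult_left[OF rho_carrier], insert Fc, auto)
      then have "trace_mat (rho * PQ) = (\<Sum>k<m. trace_mat (rho * F k))"
        using smat_trace[of "{..<m}" "\<lambda>k. rho * F k" n] Fc rho_carrier by simp
      also have "\<dots> = (\<Sum>k<m. complex_of_real (1 / real m) * trace_mat (rhos ! k * Qs ! k))"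
      proof (intro sum.cong refl)
        fix k assume "k \<in> {..<m}"
        then have k: "k < m" by simp
        let ?U = "Us ! k"
        have U: "?U \<in> set Us" by (rule nth_in[OF k])
        note c = U_carrier[OF U] aU_carrier[OF U] rho_carrier conjunct1[OF Qk[OF k]]
        have X: "mat_adjoint ?U * Qs ! k * ?U \<in> carrier_mat n n" using c by (simp add: conj_carrier mc)
        have e: "rho * F k = complex_of_real (1 / real m) \<cdot>\<^sub>m (rho * (mat_adjoint ?U * Qs ! k * ?U))"
          unfolding F_def by (rule mult_smult_distrib[OF rho_carrier X])
        have "trace_mat (rho * F k) = complex_of_real (1 / real m) * trace_mat (rho * (mat_adjoint ?U * Qs ! k * ?U))"
          unfolding e by (rule trace_smult[OF mc[OF rho_carrier X]])
        also have "rho * (mat_adjoint ?U * Qs ! k * ?U) = (rho * mat_adjoint ?U * Qs ! k) * ?U"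
          using c by (simp add: assoc_mult_mat[of _ n n _ n _ n] mc)
        also have "trace_mat \<dots> = trace_mat (?U * (rho * mat_adjoint ?U * Qs ! k))"
          by (rule trace_comm[OF mc[OF mc[OF c(3) c(2)] c(4)] c(1)])
        also have "?U * (rho * mat_adjoint ?U * Qs ! k) = rhos ! k * Qs ! k"
          using c k len by (simp add: assoc_mult_mat[of _ n n _ n _ n] mc)
        finally show "trace_mat (rho * F k) = complex_of_real (1 / real m) * trace_mat (rhos ! k * Qs ! k)" .
      qed
      finally have "Re (trace_mat (rho * PQ)) = (\<Sum>k<m. Re (trace_mat (rhos ! k * Qs ! k)) / real m)"
        by (simp add: Re_sum)
      moreover have "detect_prob (equal_priors m) rhos Qs = (\<Sum>k<m. Re (trace_mat (rhos ! k * Qs ! k)) / real m)"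
        by (rule detect_prob_eq, simp add: len)
      ultimately show ?thesis by simp
    qed
    show "detect_prob (equal_priors m) rhos Qs \<le> detect_prob (equal_priors m) rhos ?Pi"
      unfolding dQ dPi by (rule Pmax[OF PQf])
  qed
qed

end


lemma continuous_on_coord[continuous_intros]: "continuous_on S (\<lambda>x::'a \<Rightarrow> 'b::topological_space. x i)"
  by (rule continuous_on_subset[OF continuous_on_product_coordinates]) simp

lemma closed_imp_const: "closed {x. Q x} \<Longrightarrow> closed {x. c \<longrightarrow> Q x}"
  by (cases c) auto

lemma unit_sprod: "i < n \<Longrightarrow> w \<in> carrier_vec n \<Longrightarrow> conjugate (unit_vec n i) \<bullet> w = (w :: complex vec) $ i"
proof -
  assume i: "i < n" and w: "w \<in> carrier_vec n"
  have "conjugate (unit_vec n i :: complex vec) = unit_vec n i" by (rule eq_vecI) (auto simp: unit_vec_def)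
  then show ?thesis using i w by simp
qed

lemma mat_unit: "P \<in> carrier_mat n n \<Longrightarrow> i < n \<Longrightarrow> j < n \<Longrightarrow> (P *\<^sub>v unit_vec n j) $ i = (P :: complex mat) $$ (i,j)"
  by simp

context gu_setup
begin

lemma feas_qf_bound: assumes F: "GU_feasible n Us P" and v: "v \<in> carrier_vec n"
  shows "Re (conjugate v \<bullet> (P *\<^sub>v v)) \<le> Re (conjugate v \<bullet> v)"
proof -
  have Pc: "P \<in> carrier_mat n n" and Pp: "psd_mat P" and Ps: "msum n (map (\<lambda>U. U * P * mat_adjoint U) Us) = 1\<^sub>m n"
    using F unfolding GU_feasible_def by auto
  have Fc: "\<And>k. k \<in> {..<m} \<Longrightarrow> Us ! k * P * mat_adjoint (Us ! k) \<in> carrier_mat n n"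
    using conj_carrier[OF U_carrier[OF nth_in] Pc] by simp
  have "msum n (map (\<lambda>U. U * P * mat_adjoint U) Us) = smat n (\<lambda>k. Us ! k * P * mat_adjoint (Us ! k)) {..<m}"
    using msum_smat[of "map (\<lambda>U. U * P * mat_adjoint U) Us" n] conj_carrier[OF U_carrier Pc] len
    by (auto intro!: smat_cong)
  then have S1: "smat n (\<lambda>k. Us ! k * P * mat_adjoint (Us ! k)) {..<m} = 1\<^sub>m n" using Ps by simp
  have "conjugate v \<bullet> v = conjugate v \<bullet> (1\<^sub>m n *\<^sub>v v)" using v by simp
  also have "\<dots> = (\<Sum>k<m. conjugate v \<bullet> ((Us ! k * P * mat_adjoint (Us ! k)) *\<^sub>v v))"
    unfolding S1[symmetric] by (rule smat_vec[OF Fc v finite_lessThan])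
  finally have e: "Re (conjugate v \<bullet> v) = (\<Sum>k<m. Re (conjugate v \<bullet> ((Us ! k * P * mat_adjoint (Us ! k)) *\<^sub>v v)))"
    by (simp add: Re_sum)
  have "Re (conjugate v \<bullet> ((Us ! 0 * P * mat_adjoint (Us ! 0)) *\<^sub>v v)) \<le> (\<Sum>k<m. Re (conjugate v \<bullet> ((Us ! k * P * mat_adjoint (Us ! k)) *\<^sub>v v)))"
  proof (rule member_le_sum)
    show "0 \<in> {..<m}" using m_pos by simp
    fix k assume "k \<in> {..<m} - {0}"
    then have k: "k < m" by simp
    show "0 \<le> Re (conjugate v \<bullet> ((Us ! k * P * mat_adjoint (Us ! k)) *\<^sub>v v))"
      by (rule psdD[OF psd_conj[OF Pp Pc U_carrier[OF nth_in[OF k]]] Fc[of k] v], simp add: k)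
  qed simp
  moreover have "Us ! 0 * P * mat_adjoint (Us ! 0) = P"
    using first left_mult_one_mat[OF Pc] right_mult_one_mat[OF Pc] by simp
  ultimately show ?thesis unfolding e by simp
qed

lemma feas_entry_bound: assumes F: "GU_feasible n Us P" and i: "i < n" and j: "j < n"
  shows "cmod (P $$ (i,j)) \<le> 1"
proof -
  have Pc: "P \<in> carrier_mat n n" and Pp: "psd_mat P" using F unfolding GU_feasible_def by auto
  have Ph: "mat_adjoint P = P" using Pp by (simp add: psd_herm hermD)
  have Pji: "P $$ (j,i) = cnj (P $$ (i,j))" using Ph Pc i j by (metis adj_index carrier_matD(1) carrier_matD(2))
  let ?ei = "unit_vec n i :: complex vec" and ?ej = "unit_vec n j :: complex vec"
  have ei: "?ei \<in> carrier_vec n" and ej: "?ej \<in> carrier_vec n" by auto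
  have q: "conjugate (unit_vec n a) \<bullet> (P *\<^sub>v unit_vec n b) = P $$ (a,b)" if "a < n" "b < n" for a b
    using unit_sprod[OF that(1) mult_vec_carrier'[OF Pc]] that Pc by simp
  have qd: "Re (P $$ (a,a)) \<le> 1 \<and> 0 \<le> Re (P $$ (a,a))" if a: "a < n" for a
  proof -
    have ea: "unit_vec n a \<in> carrier_vec n" by simp
    have "Re (conjugate (unit_vec n a) \<bullet> (P *\<^sub>v unit_vec n a)) \<le> Re (conjugate (unit_vec n a) \<bullet> (unit_vec n a :: complex vec))"
      by (rule feas_qf_bound[OF F ea])
    moreover have "0 \<le> Re (conjugate (unit_vec n a) \<bullet> (P *\<^sub>v unit_vec n a))" by (rule psdD[OF Pp Pc ea])
    ultimately show ?thesis unfolding q[OF a a] using unit_sprod[OF a ea] a by simp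
  qed
  show ?thesis
  proof (cases "i = j")
    case True
    have "cnj (P $$ (i,i)) = P $$ (i,i)" using Pji True by simp
    then have "P $$ (i,i) = complex_of_real (Re (P $$ (i,i)))"
      by (metis complex_cnj_cancel_iff complex_is_Real_iff Reals_cnj_iff of_real_Re)
    then have "cmod (P $$ (i,i)) = \<bar>Re (P $$ (i,i))\<bar>" by (metis norm_of_real)
    then show ?thesis using qd[OF i] True by simp
  next
    case False
    show ?thesis
    proof (cases "P $$ (i,j) = 0")
      case True then show ?thesis by simp
    next
      case nz: False
      define c where "c = cnj (P $$ (i,j)) / complex_of_real (cmod (P $$ (i,j)))"
      have cn: "cmod (P $$ (i,j)) \<noteq> 0" using nz by simp
      have c1: "c * P $$ (i,j) = complex_of_real (cmod (P $$ (i,j)))"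
        unfolding c_def using cn by (simp add: field_simps complex_norm_square[symmetric] power2_eq_square mult.commute)
      have c2: "cnj c * P $$ (j,i) = complex_of_real (cmod (P $$ (i,j)))"
        unfolding Pji using arg_cong[OF c1, of cnj] by simp
      have cc: "cnj c * c = 1"
        unfolding c_def using cn by (simp add: field_simps complex_norm_square[symmetric] power2_eq_square)
      let ?v = "?ei - (- c) \<cdot>\<^sub>v ?ej"
      have v: "?v \<in> carrier_vec n" by simp
      have qP: "conjugate ?v \<bullet> (P *\<^sub>v ?v) = P $$ (i,i) + P $$ (j,j) + 2 * complex_of_real (cmod (P $$ (i,j)))"
        unfolding qf_diff[OF Pc ei ej] q[OF i i] q[OF i j] q[OF j i] q[OF j j]
        using c1 c2 cc by (simp add: algebra_simps)
      have "conjugate ?v \<bullet> (1\<^sub>m n *\<^sub>v ?v) = 1\<^sub>m n $$ (i,i) + 1\<^sub>m n $$ (j,j) + (- c) * (- 1\<^sub>m n $$ (i,j)) + (- cnj c) * (- 1\<^sub>m n $$ (j,i))"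
        unfolding qf_diff[OF one_carrier_mat ei ej] unit_sprod[OF i mult_vec_carrier'[OF one_carrier_mat]]
          unit_sprod[OF j mult_vec_carrier'[OF one_carrier_mat]] using i j cc by (simp add: algebra_simps)
      also have "\<dots> = 2" using i j False by simp
      finally have q1: "conjugate ?v \<bullet> ?v = 2" using v by simp
      have "Re (conjugate ?v \<bullet> (P *\<^sub>v ?v)) \<le> Re (conjugate ?v \<bullet> ?v)" by (rule feas_qf_bound[OF F v])
      then have "Re (P $$ (i,i)) + Re (P $$ (j,j)) + 2 * cmod (P $$ (i,j)) \<le> 2" unfolding qP q1 by simp
      then show ?thesis using qd[OF i] qd[OF j] by simp
    qed
  qed
qed

end


definition emb :: "nat \<Rightarrow> complex mat \<Rightarrow> nat \<times> nat \<Rightarrow> complex" where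
  "emb n P = (\<lambda>(i,j). if i < n \<and> j < n then P $$ (i,j) else 0)"

lemma mat_emb: "P \<in> carrier_mat n n \<Longrightarrow> mat n n (emb n P) = P"
  unfolding emb_def by (rule eq_matI) auto

lemma qf_mat: "v \<in> carrier_vec n \<Longrightarrow>
  conjugate v \<bullet> (mat n n x *\<^sub>v v) = (\<Sum>i<n. cnj (v $ i) * (\<Sum>j<n. x (i,j) * v $ j))"
proof -
  assume v: "v \<in> carrier_vec n"
  have M: "mat n n x \<in> carrier_mat n n" by simp
  have c: "mat n n x *\<^sub>v v \<in> carrier_vec n" using M by (rule mult_vec_carrier')
  show ?thesis unfolding sprod_sum[OF v c] using mult_vec_sum[OF M v] by (intro sum.cong refl) simp
qed

lemma herm_iff: "hermitian_mat (mat n n x) \<longleftrightarrow> (\<forall>i j. i < n \<longrightarrow> j < n \<longrightarrow> x (j,i) = cnj (x (i,j)))"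
proof
  assume h: "hermitian_mat (mat n n x)"
  then have a: "mat_adjoint (mat n n x) = mat n n x" by (rule hermD)
  show "\<forall>i j. i < n \<longrightarrow> j < n \<longrightarrow> x (j,i) = cnj (x (i,j))"
  proof (intro allI impI)
    fix i j assume i: "i < n" and j: "j < n"
    have "mat_adjoint (mat n n x) $$ (j,i) = mat n n x $$ (j,i)" using a by simp
    then show "x (j,i) = cnj (x (i,j))" using i j by simp
  qed
next
  assume h: "\<forall>i j. i < n \<longrightarrow> j < n \<longrightarrow> x (j,i) = cnj (x (i,j))"
  have "mat_adjoint (mat n n x) = mat n n x"
  proof (rule eq_matI)
    fix i j assume "i < dim_row (mat n n x)" "j < dim_col (mat n n x)"
    then have i: "i < n" and j: "j < n" by auto
    have "x (i,j) = cnj (x (j,i))" using h j i by blast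
    then show "mat_adjoint (mat n n x) $$ (i,j) = mat n n x $$ (i,j)" using i j by simp
  qed simp_all
  then show "hermitian_mat (mat n n x)" by (intro hermI[of _ n]) auto
qed

lemma psd_iff: "psd_mat (mat n n x) \<longleftrightarrow> hermitian_mat (mat n n x) \<and>
   (\<forall>v. v \<in> carrier_vec n \<longrightarrow> 0 \<le> Re (\<Sum>i<n. cnj (v $ i) * (\<Sum>j<n. x (i,j) * v $ j)))"
  unfolding psd_mat_def using qf_mat by auto

context gu_setup
begin

lemma conj_entry: assumes U: "U \<in> carrier_mat n n" and M: "M \<in> carrier_mat n n" and a: "a < n" and b: "b < n"
  shows "(U * M * mat_adjoint U) $$ (a,b) = (\<Sum>c<n. \<Sum>d<n. U $$ (a,c) * M $$ (c,d) * cnj (U $$ (b,d)))"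
proof -
  have UM: "U * M \<in> carrier_mat n n" using U M by simp
  have aU: "mat_adjoint U \<in> carrier_mat n n" using U by simp
  have "(U * M * mat_adjoint U) $$ (a,b) = (\<Sum>d<n. (U * M) $$ (a,d) * mat_adjoint U $$ (d,b))"
    by (rule mult_mat_sum[OF UM aU a b])
  also have "\<dots> = (\<Sum>d<n. (\<Sum>c<n. U $$ (a,c) * M $$ (c,d)) * cnj (U $$ (b,d)))"
    using U b by (intro sum.cong refl) (simp add: mult_mat_sum[OF U M a])
  also have "\<dots> = (\<Sum>c<n. \<Sum>d<n. U $$ (a,c) * M $$ (c,d) * cnj (U $$ (b,d)))"
    unfolding sum_distrib_right by (rule sum.swap)
  finally show ?thesis .
qed

lemma msum_conj: assumes M: "M \<in> carrier_mat n n"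
  shows "msum n (map (\<lambda>U. U * M * mat_adjoint U) Us) = smat n (\<lambda>k. Us ! k * M * mat_adjoint (Us ! k)) {..<m}"
  using msum_smat[of "map (\<lambda>U. U * M * mat_adjoint U) Us" n] conj_carrier[OF U_carrier M] len
  by (auto intro!: smat_cong)

abbreviation "SmC x \<equiv> (\<forall>a b. a < n \<longrightarrow> b < n \<longrightarrow>
   (\<Sum>k<m. \<Sum>c<n. \<Sum>d<n. Us ! k $$ (a,c) * x (c,d) * cnj (Us ! k $$ (b,d))) = (if a = b then 1 else 0))"

lemma sum_iff: "msum n (map (\<lambda>U. U * mat n n x * mat_adjoint U) Us) = 1\<^sub>m n \<longleftrightarrow> SmC x"
proof -
  have M: "mat n n x \<in> carrier_mat n n" by simp
  have e: "smat n (\<lambda>k. Us ! k * mat n n x * mat_adjoint (Us ! k)) {..<m} $$ (a,b) =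
     (\<Sum>k<m. \<Sum>c<n. \<Sum>d<n. Us ! k $$ (a,c) * x (c,d) * cnj (Us ! k $$ (b,d)))" if a: "a < n" and b: "b < n" for a b
  proof -
    have "smat n (\<lambda>k. Us ! k * mat n n x * mat_adjoint (Us ! k)) {..<m} $$ (a,b) =
       (\<Sum>k<m. (Us ! k * mat n n x * mat_adjoint (Us ! k)) $$ (a,b))" by (rule smat_index[OF a b])
    also have "\<dots> = (\<Sum>k<m. \<Sum>c<n. \<Sum>d<n. Us ! k $$ (a,c) * mat n n x $$ (c,d) * cnj (Us ! k $$ (b,d)))"
      by (intro sum.cong refl) (simp add: conj_entry[OF U_carrier[OF nth_in] M a b])
    also have "\<dots> = (\<Sum>k<m. \<Sum>c<n. \<Sum>d<n. Us ! k $$ (a,c) * x (c,d) * cnj (Us ! k $$ (b,d)))"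
      by (intro sum.cong refl) simp
    finally show ?thesis .
  qed
  show ?thesis unfolding msum_conj[OF M]
  proof
    assume h: "smat n (\<lambda>k. Us ! k * mat n n x * mat_adjoint (Us ! k)) {..<m} = 1\<^sub>m n"
    show "SmC x"
    proof (intro allI impI)
      fix a b assume a: "a < n" and b: "b < n"
      show "(\<Sum>k<m. \<Sum>c<n. \<Sum>d<n. Us ! k $$ (a,c) * x (c,d) * cnj (Us ! k $$ (b,d))) = (if a = b then 1 else 0)"
        using e[OF a b] h a b by simp
    qed
  next
    assume h: "SmC x"
    show "smat n (\<lambda>k. Us ! k * mat n n x * mat_adjoint (Us ! k)) {..<m} = 1\<^sub>m n"
      by (rule eq_matI, insert e h, auto)
  qed
qed

definition "feasX = {x :: nat \<times> nat \<Rightarrow> complex. (\<forall>i j. (n \<le> i \<or> n \<le> j) \<longrightarrow> x (i,j) = 0) \<and> GU_feasible n Us (mat n n x)}"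

lemma feasX_alt: "feasX = {x. \<forall>i j. (n \<le> i \<or> n \<le> j) \<longrightarrow> x (i,j) = 0} \<inter>
  {x. \<forall>i j. i < n \<longrightarrow> j < n \<longrightarrow> x (j,i) = cnj (x (i,j))} \<inter>
  {x. \<forall>v. v \<in> carrier_vec n \<longrightarrow> 0 \<le> Re (\<Sum>i<n. cnj (v $ i) * (\<Sum>j<n. x (i,j) * v $ j))} \<inter> {x. SmC x}"
  unfolding feasX_def GU_feasible_def psd_iff herm_iff sum_iff by auto

lemma feasX_closed: "closed feasX"
  unfolding feasX_alt
proof (intro closed_Int)
  show "closed {x :: nat \<times> nat \<Rightarrow> complex. \<forall>i j. (n \<le> i \<or> n \<le> j) \<longrightarrow> x (i,j) = 0}"
    by (intro closed_Collect_all closed_imp_const closed_Collect_eq continuous_intros)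
  show "closed {x :: nat \<times> nat \<Rightarrow> complex. \<forall>i j. i < n \<longrightarrow> j < n \<longrightarrow> x (j,i) = cnj (x (i,j))}"
    by (intro closed_Collect_all closed_imp_const closed_Collect_eq continuous_intros)
  show "closed {x :: nat \<times> nat \<Rightarrow> complex. \<forall>v. v \<in> carrier_vec n \<longrightarrow> 0 \<le> Re (\<Sum>i<n. cnj (v $ i) * (\<Sum>j<n. x (i,j) * v $ j))}"
    by (intro closed_Collect_all closed_imp_const closed_Collect_le continuous_intros)
  show "closed {x :: nat \<times> nat \<Rightarrow> complex. SmC x}"
    by (intro closed_Collect_all closed_imp_const closed_Collect_eq continuous_intros)
qed

definition "boxC = (\<lambda>p::real \<times> real. complex_of_real (fst p) + \<i> * complex_of_real (snd p)) ` ({-1..1} \<times> {-1..1})"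

lemma boxC_compact: "compact boxC"
  unfolding boxC_def
  by (intro compact_continuous_image compact_Times compact_Icc continuous_intros)

lemma boxC_mem: "cmod z \<le> 1 \<Longrightarrow> z \<in> boxC"
proof -
  assume z: "cmod z \<le> 1"
  have "\<bar>Re z\<bar> \<le> 1" using abs_Re_le_cmod[of z] z by simp
  moreover have "\<bar>Im z\<bar> \<le> 1" using abs_Im_le_cmod[of z] z by simp
  moreover have "z = complex_of_real (Re z) + \<i> * complex_of_real (Im z)" by (simp add: complex_eq_iff)
  ultimately show ?thesis unfolding boxC_def by (intro image_eqI[of _ _ "(Re z, Im z)"]) auto
qed

lemma feasX_bounded: "feasX \<subseteq> PiE UNIV (\<lambda>_. boxC)"
proof
  fix x assume x: "x \<in> feasX"
  then have z: "\<And>i j. (n \<le> i \<or> n \<le> j) \<Longrightarrow> x (i,j) = 0" and F: "GU_feasible n Us (mat n n x)"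
    unfolding feasX_def by auto
  have "x p \<in> boxC" for p
  proof (cases p)
    case (Pair i j)
    show ?thesis
    proof (cases "i < n \<and> j < n")
      case True
      then have "cmod (mat n n x $$ (i,j)) \<le> 1" by (intro feas_entry_bound[OF F]) auto
      then show ?thesis using True Pair by (simp add: boxC_mem)
    next
      case False
      then show ?thesis using z Pair boxC_mem[of 0] by auto
    qed
  qed
  then show "x \<in> PiE UNIV (\<lambda>_. boxC)" by auto
qed

lemma feasX_compact: "compact feasX"
proof -
  have "compactin (product_topology (\<lambda>_. euclidean) UNIV) (PiE UNIV (\<lambda>_::nat \<times> nat. boxC))"
    by (simp add: compactin_PiE boxC_compact)
  then have "compact (PiE UNIV (\<lambda>_::nat \<times> nat. boxC))"
    by (simp add: euclidean_product_topology compactin_euclidean_iff)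
  from compact_Int_closed[OF this feasX_closed] show ?thesis using feasX_bounded by (simp add: Int_absorb1)
qed

lemma one_psd: "psd_mat (1\<^sub>m n)"
  using psd_gram[OF one_carrier_mat[of n]] by simp

lemma feas_const: "GU_feasible n Us (complex_of_real (1 / real m) \<cdot>\<^sub>m 1\<^sub>m n)"
proof -
  let ?P = "complex_of_real (1 / real m) \<cdot>\<^sub>m 1\<^sub>m n"
  have Pc: "?P \<in> carrier_mat n n" by simp
  have Pp: "psd_mat ?P" by (rule psd_scale[OF one_psd one_carrier_mat], simp)
  have "msum n (map (\<lambda>U. U * ?P * mat_adjoint U) Us) = smat n (\<lambda>k. Us ! k * ?P * mat_adjoint (Us ! k)) {..<m}"
    by (rule msum_conj[OF Pc])
  also have "\<dots> = smat n (\<lambda>k. ?P) {..<m}"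
  proof (rule smat_cong)
    fix k assume "k \<in> {..<m}"
    then have U: "Us ! k \<in> set Us" using nth_in by simp
    note c = U_carrier[OF U] aU_carrier[OF U]
    have "Us ! k * ?P * mat_adjoint (Us ! k) = complex_of_real (1 / real m) \<cdot>\<^sub>m (Us ! k * mat_adjoint (Us ! k))"
      using c by (simp add: mult_smult_distrib[of _ n n _ n] mult_smult_assoc_mat[of _ n n _ n] right_mult_one_mat[OF c(1)])
    then show "Us ! k * ?P * mat_adjoint (Us ! k) = ?P" using UUa[OF U] by simp
  qed
  also have "\<dots> = 1\<^sub>m n" using smat_const[OF Pc, of "{..<m}"] m_pos by (simp add: smult_smult_mat)
  finally show ?thesis unfolding GU_feasible_def using Pc Pp psd_herm[OF Pp] by simp
qed

lemma emb_feasX: "GU_feasible n Us P \<Longrightarrow> emb n P \<in> feasX"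
  unfolding feasX_def using mat_emb[of P n] by (auto simp: GU_feasible_def emb_def)

lemma trace_emb: "trace_mat (rho * mat n n x) = (\<Sum>i<n. \<Sum>k<n. rho $$ (i,k) * x (k,i))"
proof -
  have M: "mat n n x \<in> carrier_mat n n" by simp
  show ?thesis unfolding trace_mat_alt[OF mult_carrier_mat[OF rho_carrier M]]
    by (intro sum.cong refl) (simp add: mult_mat_sum[OF rho_carrier M])
qed

lemma GU_max_exists: "\<exists>P. GU_maximizer n Us rho P"
proof -
  let ?f = "\<lambda>x. Re (\<Sum>i<n. \<Sum>k<n. rho $$ (i,k) * x (k,i))"
  have ne: "feasX \<noteq> {}" using emb_feasX[OF feas_const] by auto
  have cont: "continuous_on feasX ?f" by (intro continuous_intros)
  obtain x where x: "x \<in> feasX" and xm: "\<And>y. y \<in> feasX \<Longrightarrow> ?f y \<le> ?f x"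
    using continuous_attains_sup[OF feasX_compact ne cont] by blast
  let ?P = "mat n n x"
  have Pf: "GU_feasible n Us ?P" using x unfolding feasX_def by simp
  have "GU_maximizer n Us rho ?P" unfolding GU_maximizer_def
  proof (intro conjI allI impI)
    show "GU_feasible n Us ?P" by (rule Pf)
    fix Q assume Q: "GU_feasible n Us Q"
    have Qc: "Q \<in> carrier_mat n n" using Q unfolding GU_feasible_def by simp
    have "Re (trace_mat (rho * Q)) = ?f (emb n Q)"
      using trace_emb[of "emb n Q"] mat_emb[OF Qc] by simp
    also have "\<dots> \<le> ?f x" by (rule xm[OF emb_feasX[OF Q]])
    also have "\<dots> = Re (trace_mat (rho * ?P))" using trace_emb[of x] by simp
    finally show "Re (trace_mat (rho * Q)) \<le> Re (trace_mat (rho * ?P))" .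
  qed
  then show ?thesis by blast
qed

end


theorem theorem2:
  fixes n m r :: nat and Us :: "complex mat list" and phi :: "complex mat"
  defines "rho \<equiv> phi * mat_adjoint phi"
  defines "rhos \<equiv> map (\<lambda>U. U * rho * mat_adjoint U) Us"
  defines "phis \<equiv> map (\<lambda>U. U * phi) Us"
  defines "Phi \<equiv> block_cols n phis"
  defines "mu \<equiv> inv_sqrt (Phi * mat_adjoint Phi) * phi"
  defines "Sig \<equiv> lsm n (equal_priors m) phis"
  assumes len: "length Us = m" and m_pos: "0 < m"
    and dist: "distinct Us"
    and unit: "\<forall>U \<in> set Us. unitary_mat n U"
    and first: "Us ! 0 = 1\<^sub>m n"
    and mult_closed: "\<forall>U \<in> set Us. \<forall>V \<in> set Us. U * V \<in> set Us"
    and inv_closed: "\<forall>U \<in> set Us. mat_adjoint U \<in> set Us"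
    and phi_dim: "phi \<in> carrier_mat n r"
    and tr: "trace_mat rho = 1"
    and spans: "vspan n (\<Union>i<m. eigvecs_nz n (rhos ! i)) = carrier_vec n"
  shows
    "(length Sig = m \<and>
      (\<forall>i<m. Sig ! i = (Us ! i * mu) * mat_adjoint (Us ! i * mu))) \<and>
     (\<forall>i<m. Sig ! i = Us ! i * Sig ! 0 * mat_adjoint (Us ! i)) \<and>
     (\<forall>i<m. trace_mat (rhos ! i * Sig ! i) = trace_mat (rhos ! 0 * Sig ! 0)) \<and>
     ((\<exists>\<alpha>. mat_adjoint mu * phi = \<alpha> \<cdot>\<^sub>m 1\<^sub>m r) \<longrightarrow>
        optimal_measurement n (equal_priors m) rhos Sig) \<and>
     (r = 1 \<longrightarrow> optimal_measurement n (equal_priors m) rhos Sig) \<and>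
     ((\<exists>P. GU_maximizer n Us rho P) \<and>
      (\<forall>P. GU_maximizer n Us rho P \<longrightarrow>
           optimal_measurement n (equal_priors m) rhos (map (\<lambda>U. U * P * mat_adjoint U) Us)))"
proof -
  interpret gu_full n m r Us phi
    by (unfold_locales, insert len m_pos dist unit first mult_closed inv_closed phi_dim tr spans,
        simp_all add: rho_def rhos_def)
  have PP: "Phi * mat_adjoint Phi = G" unfolding Phi_def phis_def by (rule PhiPhi)
  have mu: "mu = T * phi" unfolding mu_def PP ..
  have Sig: "Sig = lsm n (equal_priors m) (map (\<lambda>U. U * phi) Us)" unfolding Sig_def phis_def ..
  have rhos: "rhos = map (\<lambda>U. U * (phi * mat_adjoint phi) * mat_adjoint U) Us" unfolding rhos_def rho_def ..
  have rho: "rho = phi * mat_adjoint phi" unfolding rho_def ..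
  show ?thesis unfolding mu Sig rhos rho
  proof (intro conjI allI impI)
    show "length (lsm n (equal_priors m) (map (\<lambda>U. U * phi) Us)) = m" by (rule Sig_len)
  next
    fix i assume i: "i < m"
    show "lsm n (equal_priors m) (map (\<lambda>U. U * phi) Us) ! i = Us ! i * (T * phi) * mat_adjoint (Us ! i * (T * phi))"
      by (rule Sig_nth[OF i])
  next
    fix i assume i: "i < m"
    show "lsm n (equal_priors m) (map (\<lambda>U. U * phi) Us) ! i =
      Us ! i * lsm n (equal_priors m) (map (\<lambda>U. U * phi) Us) ! 0 * mat_adjoint (Us ! i)"
      unfolding Sig0 by (rule Sig_conj[OF i])
  next
    fix i assume i: "i < m"
    show "trace_mat (map (\<lambda>U. U * (phi * mat_adjoint phi) * mat_adjoint U) Us ! i * lsm n (equal_priors m) (map (\<lambda>U. U * phi) Us) ! i) =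
      trace_mat (map (\<lambda>U. U * (phi * mat_adjoint phi) * mat_adjoint U) Us ! 0 * lsm n (equal_priors m) (map (\<lambda>U. U * phi) Us) ! 0)"
      using trace_const[OF i] trace_const[OF m_pos] by simp
  next
    assume "\<exists>\<alpha>. mat_adjoint (T * phi) * phi = \<alpha> \<cdot>\<^sub>m 1\<^sub>m r"
    then obtain \<alpha> where "mat_adjoint (T * phi) * phi = \<alpha> \<cdot>\<^sub>m 1\<^sub>m r" by blast
    then show "optimal_measurement n (equal_priors m) (map (\<lambda>U. U * (phi * mat_adjoint phi) * mat_adjoint U) Us)
      (lsm n (equal_priors m) (map (\<lambda>U. U * phi) Us))" by (rule opt_alpha)
  next
    assume "r = 1"
    then show "optimal_measurement n (equal_priors m) (map (\<lambda>U. U * (phi * mat_adjoint phi) * mat_adjoint U) Us)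
      (lsm n (equal_priors m) (map (\<lambda>U. U * phi) Us))" by (rule opt_r1)
  next
    show "\<exists>P. GU_maximizer n Us (phi * mat_adjoint phi) P" by (rule GU_max_exists)
  next
    fix P assume "GU_maximizer n Us (phi * mat_adjoint phi) P"
    then show "optimal_measurement n (equal_priors m) (map (\<lambda>U. U * (phi * mat_adjoint phi) * mat_adjoint U) Us)
      (map (\<lambda>U. U * P * mat_adjoint U) Us)" by (rule GU_opt)
  qed
qed


end
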